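(* (1) Each of the following assignments on the generators of $FVB_n$ extends to a representation of $FVB_n$ (all generators not listed are fixed): (a) for $m\in\mathbb{Z}$, $\theta_{1,m}:FVB_n\to{\rm Aut}(F_{2n})$, $\theta_{1,m}(\sigma_i):x_i\mapsto x_{i+1}y_{i+1}^m,\ x_{i+1}\mapsto x_iy_{i+1}^{-m}$; $\theta_{1,m}(\rho_i):x_i\leftrightarrow x_{i+1},\ y_i\leftrightarrow y_{i+1}$; (b) $\theta_2:FVB_n\to{\rm Aut}(F_{2n+1})$, $\theta_2(\sigma_i):x_i\mapsto x_{i+1}y_{i+1}^z,\ x_{i+1}\mapsto x_i(y_{i+1}^{-1})^z$; $\theta_2(\rho_i):x_i\leftrightarrow x_{i+1},\ y_i\leftrightarrow y_{i+1}$; (c) $\theta_3:FVB_n\to{\rm Aut}(K)$, $\theta_3(\sigma_i):x_i\mapsto x_{i+1}y_{i+1},\ x_{i+1}\mapsto x_iy_{i+1}^{-1}$; $\theta_3(\rho_i):x_i\mapsto x_{i+1}z,\ x_{i+1}\mapsto x_iz^{-1},\ y_i\leftrightarrow y_{i+1}$; (d) $\theta_4:FVB_n\to{\rm Aut}(K)$, $\theta_4(\sigma_i):x_i\mapsto x_{i+1}y_{i+1},\ x_{i+1}\mapsto x_iy_{i+1}^{-1}$; $\theta_4(\rho_i):x_i\mapsto x_{i+1}^z,\ x_{i+1}\mapsto x_i^{z^{-1}},\ y_i\leftrightarrow y_{i+1}$. (2) For $m\ne0$, $\ker(\theta_{1,m})=\ker(\theta_2)=\ker(\theta_3)=\ker(\theta_4)=\ker(\theta)$,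 where $\theta:FVB_n\to{\rm Aut}(F_{2n})$ is the representation with $\theta(\sigma_i):x_i\mapsto x_{i+1}y_{i+1},\ x_{i+1}\mapsto x_iy_{i+1}^{-1}$ and $\theta(\rho_i):x_i\leftrightarrow x_{i+1},\ y_i\leftrightarrow y_{i+1}$.
   Context: $FVB_n$ is the flat virtual braid group: generators $\sigma_1,\dots,\sigma_{n-1},\rho_1,\dots,\rho_{n-1}$, relations $\sigma_i\sigma_j=\sigma_j\sigma_i$, $\rho_i\rho_j=\rho_j\rho_i$, $\sigma_i\rho_j=\rho_j\sigma_i$ for $|i-j|\ge2$; $\sigma_i\sigma_{i+1}\sigma_i=\sigma_{i+1}\sigma_i\sigma_{i+1}$; $\rho_i\rho_{i+1}\rho_i=\rho_{i+1}\rho_i\rho_{i+1}$; $\rho_i\rho_{i+1}\sigma_i=\sigma_{i+1}\rho_i\rho_{i+1}$; $\rho_i^2=\sigma_i^2=1$. $F_{2n}$ is free on $x_1,\dots,x_n,y_1,\dots,y_n$; $F_{2n+1}$ is free on $x_1,\dots,x_n,y_1,\dots,y_n,z$; $K=F_n*(F_n\times\mathbb{Z})=\langle x_1,\dots,x_n,y_1,\dots,y_n,z\mid [y_i,z]=1,\ i=1,\dots,n\rangle$. The notation $a^b$ denotes the conjugate $b^{-1}ab$, and "$a\leftrightarrow b$" means $a\mapsto b$, $b\mapsto a$. Automorphisms compose on the right: $(fg)(x)=g(f(x))$. *)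

theory Defs
  imports "HOL-Algebra.Algebra" "HOL-Algebra.Bij"
begin

text \<open>A word is a list of letters; a letter (a, True) stands for the generator a,
  (a, False) for its inverse.\<close>
type_synonym 'a word = "('a \<times> bool) list"

definition inv_word :: "'a word \<Rightarrow> 'a word" where
  "inv_word w = rev (map (\<lambda>(a, b). (a, \<not> b)) w)"

definition rel_eq :: "'a word \<Rightarrow> 'a word \<Rightarrow> 'a word" where
  "rel_eq u v = u @ inv_word v"

inductive pres_rel :: "'a word set \<Rightarrow> 'a word \<Rightarrow> 'a word \<Rightarrow> bool" for R where
  refl: "pres_rel R w w"
| sym: "pres_rel R v w \<Longrightarrow> pres_rel R w v"
| trans: "pres_rel R u v \<Longrightarrow> pres_rel R v w \<Longrightarrow> pres_rel R u w"
| cancel: "pres_rel R (u @ [(a, b), (a, \<not> b)] @ v) (u @ v)"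
| relator: "r \<in> R \<Longrightarrow> pres_rel R (u @ r @ v) (u @ v)"

definition pres_class :: "'a word set \<Rightarrow> 'a word \<Rightarrow> 'a word set" where
  "pres_class R w = {v. pres_rel R w v}"

definition presented_group :: "'a set \<Rightarrow> 'a word set \<Rightarrow> 'a word set monoid" where
  "presented_group S R =
     \<lparr>carrier = {pres_class R w | w. set w \<subseteq> S \<times> UNIV},
      monoid.mult = (\<lambda>c d. pres_class R ((SOME w. w \<in> c) @ (SOME w. w \<in> d))),
      one = pres_class R []\<rparr>"

definition pgen :: "'a word set \<Rightarrow> 'a \<Rightarrow> 'a word set" where
  "pgen R a = pres_class R [(a, True)]"

section \<open>Automorphism group with right composition: (f g)(x) = g(f(x))\<close>

definition AutR :: "('a, 'b) monoid_scheme \<Rightarrow> ('a \<Rightarrow> 'a) monoid" where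
  "AutR G = \<lparr>carrier = auto G, monoid.mult = (\<lambda>f g. compose (carrier G) g f),
             one = (\<lambda>x\<in>carrier G. x)\<rparr>"

datatype fvb_gen = Sig nat | Rho nat

definition fvb_gens :: "nat \<Rightarrow> fvb_gen set" where
  "fvb_gens n = {Sig i | i. 1 \<le> i \<and> i < n} \<union> {Rho i | i. 1 \<le> i \<and> i < n}"

definition sg :: "nat \<Rightarrow> fvb_gen \<times> bool" where "sg i = (Sig i, True)"
definition rh :: "nat \<Rightarrow> fvb_gen \<times> bool" where "rh i = (Rho i, True)"

definition fvb_rels :: "nat \<Rightarrow> fvb_gen word set" where
  "fvb_rels n =
     {rel_eq [sg i, sg j] [sg j, sg i] | i j. 1 \<le> i \<and> i < n \<and> 1 \<le> j \<and> j < n \<and> (i + 2 \<le> j \<or> j + 2 \<le> i)}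
   \<union> {rel_eq [rh i, rh j] [rh j, rh i] | i j. 1 \<le> i \<and> i < n \<and> 1 \<le> j \<and> j < n \<and> (i + 2 \<le> j \<or> j + 2 \<le> i)}
   \<union> {rel_eq [sg i, rh j] [rh j, sg i] | i j. 1 \<le> i \<and> i < n \<and> 1 \<le> j \<and> j < n \<and> (i + 2 \<le> j \<or> j + 2 \<le> i)}
   \<union> {rel_eq [sg i, sg (i+1), sg i] [sg (i+1), sg i, sg (i+1)] | i. 1 \<le> i \<and> i + 1 < n}
   \<union> {rel_eq [rh i, rh (i+1), rh i] [rh (i+1), rh i, rh (i+1)] | i. 1 \<le> i \<and> i + 1 < n}
   \<union> {rel_eq [rh i, rh (i+1), sg i] [sg (i+1), rh i, rh (i+1)] | i. 1 \<le> i \<and> i + 1 < n}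
   \<union> {[rh i, rh i] | i. 1 \<le> i \<and> i < n}
   \<union> {[sg i, sg i] | i. 1 \<le> i \<and> i < n}"

definition FVB :: "nat \<Rightarrow> fvb_gen word set monoid" where
  "FVB n = presented_group (fvb_gens n) (fvb_rels n)"

datatype fgen = Xg nat | Yg nat | Zg

definition gens2n :: "nat \<Rightarrow> fgen set" where
  "gens2n n = {Xg i | i. 1 \<le> i \<and> i \<le> n} \<union> {Yg i | i. 1 \<le> i \<and> i \<le> n}"

definition gens2n1 :: "nat \<Rightarrow> fgen set" where
  "gens2n1 n = gens2n n \<union> {Zg}"

text \<open>Relators of K = F_n * (F_n x Z): [y_i, z] = 1.\<close>
definition K_rels :: "nat \<Rightarrow> fgen word set" where
  "K_rels n = {rel_eq [(Yg i, True), (Zg, True)] [(Zg, True), (Yg i, True)] | i. 1 \<le> i \<and> i \<le> n}"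

definition conjg :: "('a, 'b) monoid_scheme \<Rightarrow> 'a \<Rightarrow> 'a \<Rightarrow> 'a" where
  "conjg G a b = inv\<^bsub>G\<^esub> b \<otimes>\<^bsub>G\<^esub> a \<otimes>\<^bsub>G\<^esub> b"

definition is_rep :: "nat \<Rightarrow> 'a set \<Rightarrow> 'a word set \<Rightarrow> (nat \<Rightarrow> 'a \<Rightarrow> 'a word set)
     \<Rightarrow> (nat \<Rightarrow> 'a \<Rightarrow> 'a word set) \<Rightarrow> (fvb_gen word set \<Rightarrow> 'a word set \<Rightarrow> 'a word set) \<Rightarrow> bool" where
  "is_rep n S R sig rho h \<longleftrightarrow>
     h \<in> hom (FVB n) (AutR (presented_group S R)) \<and>
     (\<forall>i. 1 \<le> i \<and> i < n \<longrightarrow> (\<forall>a\<in>S.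
        h (pgen (fvb_rels n) (Sig i)) (pgen R a) = sig i a \<and>
        h (pgen (fvb_rels n) (Rho i)) (pgen R a) = rho i a))"

definition swap_xy :: "fgen word set \<Rightarrow> nat \<Rightarrow> fgen \<Rightarrow> fgen word set" where
  "swap_xy R i a =
     (if a = Xg i then pgen R (Xg (i+1)) else if a = Xg (i+1) then pgen R (Xg i)
      else if a = Yg i then pgen R (Yg (i+1)) else if a = Yg (i+1) then pgen R (Yg i)
      else pgen R a)"

abbreviation F2n :: "nat \<Rightarrow> fgen word set monoid" where
  "F2n n \<equiv> presented_group (gens2n n) {}"
abbreviation F2n1 :: "nat \<Rightarrow> fgen word set monoid" where
  "F2n1 n \<equiv> presented_group (gens2n1 n) {}"
abbreviation Kgrp :: "nat \<Rightarrow> fgen word set monoid" where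
  "Kgrp n \<equiv> presented_group (gens2n1 n) (K_rels n)"

definition theta_sig :: "nat \<Rightarrow> nat \<Rightarrow> fgen \<Rightarrow> fgen word set" where
  "theta_sig n i a = (let G = F2n n; x = (\<lambda>j. pgen {} (Xg j)); y = (\<lambda>j. pgen {} (Yg j)) in
     if a = Xg i then x (i+1) \<otimes>\<^bsub>G\<^esub> y (i+1)
     else if a = Xg (i+1) then x i \<otimes>\<^bsub>G\<^esub> inv\<^bsub>G\<^esub> (y (i+1))
     else pgen {} a)"

definition theta_rho :: "nat \<Rightarrow> nat \<Rightarrow> fgen \<Rightarrow> fgen word set" where
  "theta_rho n i a = swap_xy {} i a"

definition theta1_sig :: "nat \<Rightarrow> int \<Rightarrow> nat \<Rightarrow> fgen \<Rightarrow> fgen word set" where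
  "theta1_sig n m i a = (let G = F2n n; x = (\<lambda>j. pgen {} (Xg j)); y = (\<lambda>j. pgen {} (Yg j)) in
     if a = Xg i then x (i+1) \<otimes>\<^bsub>G\<^esub> (y (i+1) [^]\<^bsub>G\<^esub> m)
     else if a = Xg (i+1) then x i \<otimes>\<^bsub>G\<^esub> (y (i+1) [^]\<^bsub>G\<^esub> (- m))
     else pgen {} a)"

definition theta1_rho :: "nat \<Rightarrow> int \<Rightarrow> nat \<Rightarrow> fgen \<Rightarrow> fgen word set" where
  "theta1_rho n m i a = swap_xy {} i a"

definition theta2_sig :: "nat \<Rightarrow> nat \<Rightarrow> fgen \<Rightarrow> fgen word set" where
  "theta2_sig n i a = (let G = F2n1 n; x = (\<lambda>j. pgen {} (Xg j)); y = (\<lambda>j. pgen {} (Yg j)); z = pgen {} Zg in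
     if a = Xg i then x (i+1) \<otimes>\<^bsub>G\<^esub> conjg G (y (i+1)) z
     else if a = Xg (i+1) then x i \<otimes>\<^bsub>G\<^esub> conjg G (inv\<^bsub>G\<^esub> (y (i+1))) z
     else pgen {} a)"

definition theta2_rho :: "nat \<Rightarrow> nat \<Rightarrow> fgen \<Rightarrow> fgen word set" where
  "theta2_rho n i a = swap_xy {} i a"

definition theta3_sig :: "nat \<Rightarrow> nat \<Rightarrow> fgen \<Rightarrow> fgen word set" where
  "theta3_sig n i a = (let R = K_rels n; G = Kgrp n; x = (\<lambda>j. pgen R (Xg j)); y = (\<lambda>j. pgen R (Yg j)) in
     if a = Xg i then x (i+1) \<otimes>\<^bsub>G\<^esub> y (i+1)
     else if a = Xg (i+1) then x i \<otimes>\<^bsub>G\<^esub> inv\<^bsub>G\<^esub> (y (i+1))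
     else pgen R a)"

definition theta3_rho :: "nat \<Rightarrow> nat \<Rightarrow> fgen \<Rightarrow> fgen word set" where
  "theta3_rho n i a = (let R = K_rels n; G = Kgrp n; x = (\<lambda>j. pgen R (Xg j)); z = pgen R Zg in
     if a = Xg i then x (i+1) \<otimes>\<^bsub>G\<^esub> z
     else if a = Xg (i+1) then x i \<otimes>\<^bsub>G\<^esub> inv\<^bsub>G\<^esub> z
     else swap_xy R i a)"

definition theta4_sig :: "nat \<Rightarrow> nat \<Rightarrow> fgen \<Rightarrow> fgen word set" where
  "theta4_sig n i a = theta3_sig n i a"

definition theta4_rho :: "nat \<Rightarrow> nat \<Rightarrow> fgen \<Rightarrow> fgen word set" where
  "theta4_rho n i a = (let R = K_rels n; G = Kgrp n; x = (\<lambda>j. pgen R (Xg j)); z = pgen R Zg in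
     if a = Xg i then conjg G (x (i+1)) z
     else if a = Xg (i+1) then conjg G (x i) (inv\<^bsub>G\<^esub> z)
     else swap_xy R i a)"

end

theory Submission
  imports Defs "HOL-Algebra.Elementary_Groups"
begin

section \<open>Presented groups\<close>

lemma pres_rel_ctxt: "pres_rel R u v \<Longrightarrow> pres_rel R (p @ u @ q) (p @ v @ q)"
proof (induction rule: pres_rel.induct)
  case (refl w) then show ?case by (rule pres_rel.refl)
next
  case (sym v w) then show ?case by (blast intro: pres_rel.sym)
next
  case (trans u v w) then show ?case by (blast intro: pres_rel.trans)
next
  case (cancel u a b v)
  have "pres_rel R ((p @ u) @ [(a, b), (a, \<not> b)] @ (v @ q)) ((p @ u) @ (v @ q))"
    by (rule pres_rel.cancel)
  then show ?case by simp
next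
  case (relator r u v)
  have "pres_rel R ((p @ u) @ r @ (v @ q)) ((p @ u) @ (v @ q))"
    by (rule pres_rel.relator[OF relator])
  then show ?case by simp
qed

lemma pres_rel_app: "pres_rel R u u' \<Longrightarrow> pres_rel R v v' \<Longrightarrow> pres_rel R (u @ v) (u' @ v')"
proof -
  assume a: "pres_rel R u u'" "pres_rel R v v'"
  have "pres_rel R ([] @ u @ v) ([] @ u' @ v)" by (rule pres_rel_ctxt[OF a(1)])
  moreover have "pres_rel R (u' @ v @ []) (u' @ v' @ [])" by (rule pres_rel_ctxt[OF a(2)])
  ultimately show ?thesis by (auto intro: pres_rel.trans)
qed

lemma pres_class_eq: "pres_class R u = pres_class R v \<longleftrightarrow> pres_rel R u v"
proof
  assume "pres_class R u = pres_class R v"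
  then have "v \<in> pres_class R u" by (simp add: pres_class_def pres_rel.refl)
  then show "pres_rel R u v" by (simp add: pres_class_def)
next
  assume "pres_rel R u v"
  then show "pres_class R u = pres_class R v"
    unfolding pres_class_def by (auto intro: pres_rel.trans pres_rel.sym)
qed

lemma some_class: "pres_rel R u (SOME w. w \<in> pres_class R u)"
proof -
  have "u \<in> pres_class R u" by (simp add: pres_class_def pres_rel.refl)
  then have "(SOME w. w \<in> pres_class R u) \<in> pres_class R u" by (rule someI)
  then show ?thesis by (simp add: pres_class_def)
qed

lemma pg_mult: "pres_class R u \<otimes>\<^bsub>presented_group S R\<^esub> pres_class R v = pres_class R (u @ v)"
  unfolding presented_group_def using some_class[of R u] some_class[of R v]
  by (simp add: pres_class_eq pres_rel_app pres_rel.sym)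

lemma pg_one: "\<one>\<^bsub>presented_group S R\<^esub> = pres_class R []"
  by (simp add: presented_group_def)

lemma pg_carrier: "carrier (presented_group S R) = {pres_class R w | w. set w \<subseteq> S \<times> UNIV}"
  by (simp add: presented_group_def)

lemma inv_word_Cons: "inv_word (x # u) = inv_word u @ [(fst x, \<not> snd x)]"
  by (cases x) (simp add: inv_word_def)

lemma inv_word_Nil[simp]: "inv_word [] = []" by (simp add: inv_word_def)

lemma inv_word_append: "inv_word (u @ v) = inv_word v @ inv_word u"
  by (simp add: inv_word_def)

lemma inv_word_set: "set w \<subseteq> S \<times> UNIV \<Longrightarrow> set (inv_word w) \<subseteq> S \<times> UNIV"
  by (auto simp: inv_word_def)

lemma inv_word_cancel1: "pres_rel R (inv_word u @ u) []"
proof (induction u)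
  case Nil then show ?case by (simp add: pres_rel.refl)
next
  case (Cons x u)
  obtain a b where x: "x = (a, b)" by (cases x)
  have "pres_rel R (inv_word u @ [(a, \<not> b), (a, \<not> \<not> b)] @ u) (inv_word u @ u)"
    by (rule pres_rel.cancel)
  then have "pres_rel R (inv_word (x # u) @ x # u) (inv_word u @ u)"
    by (simp add: inv_word_Cons x)
  then show ?case using Cons by (blast intro: pres_rel.trans)
qed

lemma inv_word_inv_word[simp]: "inv_word (inv_word u) = u"
  by (simp add: inv_word_def rev_map comp_def case_prod_unfold)

lemma inv_word_cancel2: "pres_rel R (u @ inv_word u) []"
  using inv_word_cancel1[of R "inv_word u"] by simp

lemma group_pres: "group (presented_group S R)"
proof (rule groupI)
  fix x y
  assume "x \<in> carrier (presented_group S R)" "y \<in> carrier (presented_group S R)"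
  then obtain u v where "x = pres_class R u" "set u \<subseteq> S \<times> UNIV" "y = pres_class R v" "set v \<subseteq> S \<times> UNIV"
    by (auto simp: pg_carrier)
  then show "x \<otimes>\<^bsub>presented_group S R\<^esub> y \<in> carrier (presented_group S R)"
    by (auto simp: pg_mult pg_carrier intro!: exI[of _ "u @ v"])
next
  show "\<one>\<^bsub>presented_group S R\<^esub> \<in> carrier (presented_group S R)"
    by (auto simp: pg_one pg_carrier intro!: exI[of _ "[]"])
next
  fix x y z
  assume "x \<in> carrier (presented_group S R)" "y \<in> carrier (presented_group S R)"
    "z \<in> carrier (presented_group S R)"
  then show "x \<otimes>\<^bsub>presented_group S R\<^esub> y \<otimes>\<^bsub>presented_group S R\<^esub> z =
       x \<otimes>\<^bsub>presented_group S R\<^esub> (y \<otimes>\<^bsub>presented_group S R\<^esub> z)"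
    by (auto simp: pg_mult pg_carrier)
next
  fix x
  assume "x \<in> carrier (presented_group S R)"
  then show "\<one>\<^bsub>presented_group S R\<^esub> \<otimes>\<^bsub>presented_group S R\<^esub> x = x"
    by (auto simp: pg_mult pg_carrier pg_one)
next
  fix x
  assume "x \<in> carrier (presented_group S R)"
  then obtain u where u: "x = pres_class R u" "set u \<subseteq> S \<times> UNIV" by (auto simp: pg_carrier)
  show "\<exists>y\<in>carrier (presented_group S R). y \<otimes>\<^bsub>presented_group S R\<^esub> x = \<one>\<^bsub>presented_group S R\<^esub>"
  proof (rule bexI)
    show "pres_class R (inv_word u) \<otimes>\<^bsub>presented_group S R\<^esub> x = \<one>\<^bsub>presented_group S R\<^esub>"
      using u by (simp add: pg_mult pg_one pres_class_eq inv_word_cancel1)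
    show "pres_class R (inv_word u) \<in> carrier (presented_group S R)"
      using inv_word_set[OF u(2)] by (auto simp: pg_carrier)
  qed
qed

lemma class_in_carrier: "set w \<subseteq> S \<times> UNIV \<Longrightarrow> pres_class R w \<in> carrier (presented_group S R)"
  by (auto simp: pg_carrier)

lemma pgen_carrier: "a \<in> S \<Longrightarrow> pgen R a \<in> carrier (presented_group S R)"
  by (auto simp: pgen_def pg_carrier)

lemma pg_inv: "set w \<subseteq> S \<times> UNIV \<Longrightarrow>
   inv\<^bsub>presented_group S R\<^esub> (pres_class R w) = pres_class R (inv_word w)"
  by (rule group.inv_equality[OF group_pres])
     (auto simp: pg_mult pg_one pres_class_eq inv_word_cancel1 class_in_carrier inv_word_set)

lemma pgen_inv: "a \<in> S \<Longrightarrow> inv\<^bsub>presented_group S R\<^esub> (pgen R a) = pres_class R [(a, False)]"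
  unfolding pgen_def by (subst pg_inv) (auto simp: inv_word_def)

lemma class_Cons_True: "pres_class R ((a, True) # w) = pgen R a \<otimes>\<^bsub>presented_group S R\<^esub> pres_class R w"
  by (simp add: pgen_def pg_mult)

lemma class_Cons_False: "a \<in> S \<Longrightarrow>
  pres_class R ((a, False) # w) = inv\<^bsub>presented_group S R\<^esub> (pgen R a) \<otimes>\<^bsub>presented_group S R\<^esub> pres_class R w"
  by (simp add: pgen_inv pg_mult)

lemma relator_one: "r \<in> R \<Longrightarrow> pres_class R r = \<one>\<^bsub>presented_group S R\<^esub>"
  using pres_rel.relator[of r R "[]" "[]"] by (simp add: pg_one pres_class_eq)

lemma pg_induct:
  assumes "x \<in> carrier (presented_group S R)"
    and "P \<one>\<^bsub>presented_group S R\<^esub>"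
    and "\<And>a y. a \<in> S \<Longrightarrow> y \<in> carrier (presented_group S R) \<Longrightarrow> P y \<Longrightarrow>
            P (pgen R a \<otimes>\<^bsub>presented_group S R\<^esub> y)"
    and "\<And>a y. a \<in> S \<Longrightarrow> y \<in> carrier (presented_group S R) \<Longrightarrow> P y \<Longrightarrow>
            P (inv\<^bsub>presented_group S R\<^esub> (pgen R a) \<otimes>\<^bsub>presented_group S R\<^esub> y)"
  shows "P x"
proof -
  obtain w where w: "x = pres_class R w" "set w \<subseteq> S \<times> UNIV" using assms(1) by (auto simp: pg_carrier)
  have "P (pres_class R w)" using w(2)
  proof (induction w)
    case Nil then show ?case using assms(2) by (simp add: pg_one)
  next
    case (Cons l w)
    obtain a b where l: "l = (a, b)" by (cases l)
    have a: "a \<in> S" using Cons.prems l by auto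
    have c: "pres_class R w \<in> carrier (presented_group S R)" using Cons.prems by (auto intro: class_in_carrier)
    have "P (pres_class R w)" using Cons by auto
    then show ?case using assms(3)[OF a c] assms(4)[OF a c]
      by (cases b) (auto simp: l class_Cons_True[where S=S] class_Cons_False[where S=S] a)
  qed
  then show ?thesis using w by simp
qed

section \<open>Universal property\<close>

definition evw :: "('g, 'm) monoid_scheme \<Rightarrow> ('a \<Rightarrow> 'g) \<Rightarrow> 'a word \<Rightarrow> 'g" where
  "evw G f w = foldr (\<lambda>(a, b) acc. (if b then f a else inv\<^bsub>G\<^esub> (f a)) \<otimes>\<^bsub>G\<^esub> acc) w \<one>\<^bsub>G\<^esub>"

lemma evw_Nil[simp]: "evw G f [] = \<one>\<^bsub>G\<^esub>" by (simp add: evw_def)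
lemma evw_Cons[simp]: "evw G f ((a, b) # w) = (if b then f a else inv\<^bsub>G\<^esub> (f a)) \<otimes>\<^bsub>G\<^esub> evw G f w"
  by (simp add: evw_def)

context group
begin

lemma cancel_l1: "x \<in> carrier G \<Longrightarrow> e \<in> carrier G \<Longrightarrow> x \<otimes> (inv x \<otimes> e) = e"
  by (simp add: m_assoc[symmetric])
lemma cancel_l2: "x \<in> carrier G \<Longrightarrow> e \<in> carrier G \<Longrightarrow> inv x \<otimes> (x \<otimes> e) = e"
  by (simp add: m_assoc[symmetric])

lemma evw_closed: "f \<in> UNIV \<rightarrow> carrier G \<Longrightarrow> evw G f w \<in> carrier G"
  by (induction w) (auto simp: Pi_iff)

lemma evw_append: "f \<in> UNIV \<rightarrow> carrier G \<Longrightarrow> evw G f (u @ v) = evw G f u \<otimes> evw G f v"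
  by (induction u) (auto simp: evw_closed m_assoc Pi_iff)

lemma evw_inv_word: "f \<in> UNIV \<rightarrow> carrier G \<Longrightarrow> evw G f (inv_word u) = inv (evw G f u)"
proof (induction u)
  case Nil then show ?case by simp
next
  case (Cons l u)
  obtain a b where l: "l = (a, b)" by (cases l)
  have fa: "f a \<in> carrier G" using Cons.prems by auto
  show ?case using Cons fa
    by (auto simp: l inv_word_Cons evw_append evw_closed inv_mult_group)
qed

lemma evw_pres_rel:
  assumes f: "f \<in> UNIV \<rightarrow> carrier G" and R: "\<And>r. r \<in> R \<Longrightarrow> evw G f r = \<one>"
  shows "pres_rel R u v \<Longrightarrow> evw G f u = evw G f v"
proof (induction rule: pres_rel.induct)
  case (cancel u a b v)
  have fa: "f a \<in> carrier G" using f by auto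
  show ?case using fa by (auto simp: evw_append[OF f] evw_closed[OF f] cancel_l1 cancel_l2)
next
  case (relator r u v)
  show ?case using R[OF relator] by (simp add: evw_append[OF f] evw_closed[OF f])
qed auto

end

definition lift :: "('g, 'm) monoid_scheme \<Rightarrow> 'a word set \<Rightarrow> ('a \<Rightarrow> 'g) \<Rightarrow> 'a word set \<Rightarrow> 'g" where
  "lift G R f c = evw G f (SOME w. w \<in> c)"

lemma lift_class:
  assumes "group G" "f \<in> UNIV \<rightarrow> carrier G" "\<And>r. r \<in> R \<Longrightarrow> evw G f r = \<one>\<^bsub>G\<^esub>"
  shows "lift G R f (pres_class R w) = evw G f w"
  unfolding lift_def using group.evw_pres_rel[OF assms some_class[of R w]] by simp

lemma lift_hom:
  assumes "group G" "f \<in> UNIV \<rightarrow> carrier G" "\<And>r. r \<in> R \<Longrightarrow> evw G f r = \<one>\<^bsub>G\<^esub>"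
  shows "lift G R f \<in> hom (presented_group S R) G"
  by (rule homI) (auto simp: pg_carrier pg_mult lift_class[OF assms] group.evw_closed[OF assms(1,2)]
      group.evw_append[OF assms(1,2)])

lemma lift_pgen:
  assumes "group G" "f \<in> UNIV \<rightarrow> carrier G" "\<And>r. r \<in> R \<Longrightarrow> evw G f r = \<one>\<^bsub>G\<^esub>"
  shows "lift G R f (pgen R a) = f a"
  using assms by (simp add: pgen_def lift_class[OF assms] Pi_iff group.is_monoid)

lemma hom_unique:
  assumes G: "group G" and h1: "h1 \<in> hom (presented_group S R) G" and h2: "h2 \<in> hom (presented_group S R) G"
    and eq: "\<And>a. a \<in> S \<Longrightarrow> h1 (pgen R a) = h2 (pgen R a)"
    and x: "x \<in> carrier (presented_group S R)"
  shows "h1 x = h2 x"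
proof -
  interpret g1: group_hom "presented_group S R" G h1 using G h1 group_pres by (simp add: group_hom_def group_hom_axioms_def)
  interpret g2: group_hom "presented_group S R" G h2 using G h2 group_pres by (simp add: group_hom_def group_hom_axioms_def)
  show ?thesis
    by (rule pg_induct[OF x]) (auto simp: pgen_carrier eq)
qed


lemma compose_hom: "group G \<Longrightarrow> f \<in> hom G H \<Longrightarrow> g \<in> hom H I \<Longrightarrow> compose (carrier G) g f \<in> hom G I"
  unfolding hom_def compose_def by (auto simp: Pi_iff group.is_monoid monoid.m_closed)

lemma restrict_hom: "group G \<Longrightarrow> f \<in> hom G H \<Longrightarrow> restrict f (carrier G) \<in> hom G H"
  unfolding hom_def by (auto simp: Pi_iff group.is_monoid monoid.m_closed)

lemma auto_hom: "f \<in> auto G \<Longrightarrow> f \<in> hom G G" by (simp add: auto_def)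
lemma auto_ext: "f \<in> auto G \<Longrightarrow> f \<in> extensional (carrier G)" by (simp add: auto_def Bij_def)
lemma auto_closed: "f \<in> auto G \<Longrightarrow> x \<in> carrier G \<Longrightarrow> f x \<in> carrier G"
  by (auto simp: auto_def intro: hom_in_carrier)

lemma AutR_carrier[simp]: "carrier (AutR G) = auto G" by (simp add: AutR_def)
lemma AutR_one: "\<one>\<^bsub>AutR G\<^esub> = (\<lambda>x\<in>carrier G. x)" by (simp add: AutR_def)
lemma AutR_mult: "f \<otimes>\<^bsub>AutR G\<^esub> g = compose (carrier G) g f" by (simp add: AutR_def)
lemma AutR_mult_apply: "x \<in> carrier G \<Longrightarrow> (f \<otimes>\<^bsub>AutR G\<^esub> g) x = g (f x)"
  by (simp add: AutR_def compose_eq)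

lemma auto_eqI: "f \<in> auto G \<Longrightarrow> g \<in> auto G \<Longrightarrow> (\<And>x. x \<in> carrier G \<Longrightarrow> f x = g x) \<Longrightarrow> f = g"
  by (rule extensionalityI[OF auto_ext auto_ext])

lemma group_AutR:
  assumes G: "group G" shows "group (AutR G)"
proof (rule groupI)
  fix f g assume "f \<in> carrier (AutR G)" "g \<in> carrier (AutR G)"
  then show "f \<otimes>\<^bsub>AutR G\<^esub> g \<in> carrier (AutR G)"
    by (auto simp: AutR_mult auto_def compose_hom[OF G] compose_Bij)
next
  show "\<one>\<^bsub>AutR G\<^esub> \<in> carrier (AutR G)" using group.id_in_auto[OF G] by (simp add: AutR_one)
next
  fix f g k assume a: "f \<in> carrier (AutR G)" "g \<in> carrier (AutR G)" "k \<in> carrier (AutR G)"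
  have fc: "f \<in> carrier G \<rightarrow> carrier G" "g \<in> carrier G \<rightarrow> carrier G" "k \<in> carrier G \<rightarrow> carrier G"
    using a by (auto simp: auto_closed)
  show "f \<otimes>\<^bsub>AutR G\<^esub> g \<otimes>\<^bsub>AutR G\<^esub> k = f \<otimes>\<^bsub>AutR G\<^esub> (g \<otimes>\<^bsub>AutR G\<^esub> k)"
    using fc by (simp add: AutR_mult compose_assoc)
next
  fix f assume "f \<in> carrier (AutR G)"
  then show "\<one>\<^bsub>AutR G\<^esub> \<otimes>\<^bsub>AutR G\<^esub> f = f"
    by (auto simp: AutR_mult AutR_one auto_closed auto_ext intro!: compose_Id)
next
  fix f assume a: "f \<in> carrier (AutR G)"
  define g where "g = (\<lambda>x\<in>carrier G. inv_into (carrier G) f x)"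
  have fb: "f \<in> Bij (carrier G)" "f \<in> hom G G" using a by (auto simp: auto_def)
  have gA: "g \<in> auto G" unfolding g_def auto_def
    using group.restrict_inv_into_hom[OF G fb(2,1)] restrict_inv_into_Bij[OF fb(1)] by simp
  have bij: "bij_betw f (carrier G) (carrier G)" using fb by (simp add: Bij_def)
  have "compose (carrier G) f g = (\<lambda>x\<in>carrier G. x)"
    unfolding g_def compose_def
    by (rule restrict_ext) (use bij in \<open>simp add: bij_betw_def f_inv_into_f\<close>)
  then show "\<exists>g\<in>carrier (AutR G). g \<otimes>\<^bsub>AutR G\<^esub> f = \<one>\<^bsub>AutR G\<^esub>"
    using gA by (auto simp: AutR_mult AutR_one)
qed

definition pext :: "'a set \<Rightarrow> 'a word set \<Rightarrow> ('a \<Rightarrow> 'a word set) \<Rightarrow> 'a word set \<Rightarrow> 'a word set" where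
  "pext S R \<phi> = restrict (lift (presented_group S R) R
      (\<lambda>a. if a \<in> S then \<phi> a else \<one>\<^bsub>presented_group S R\<^esub>)) (carrier (presented_group S R))"

definition good :: "'a set \<Rightarrow> 'a word set \<Rightarrow> ('a \<Rightarrow> 'a word set) \<Rightarrow> bool" where
  "good S R \<phi> \<longleftrightarrow> (\<forall>a\<in>S. \<phi> a \<in> carrier (presented_group S R)) \<and>
     (\<forall>r\<in>R. evw (presented_group S R) (\<lambda>a. if a \<in> S then \<phi> a else \<one>\<^bsub>presented_group S R\<^esub>) r
        = \<one>\<^bsub>presented_group S R\<^esub>)"

lemma good_funcset: "good S R \<phi> \<Longrightarrow>
  (\<lambda>a. if a \<in> S then \<phi> a else \<one>\<^bsub>presented_group S R\<^esub>) \<in> UNIV \<rightarrow> carrier (presented_group S R)"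
  using monoid.one_closed[OF group.is_monoid[OF group_pres]] by (auto simp: good_def)

lemma pext_hom: "good S R \<phi> \<Longrightarrow> pext S R \<phi> \<in> hom (presented_group S R) (presented_group S R)"
proof -
  assume g: "good S R \<phi>"
  have "lift (presented_group S R) R (\<lambda>a. if a \<in> S then \<phi> a else \<one>\<^bsub>presented_group S R\<^esub>)
     \<in> hom (presented_group S R) (presented_group S R)"
    by (rule lift_hom[OF group_pres good_funcset[OF g]]) (use g in \<open>simp add: good_def\<close>)
  then show ?thesis unfolding pext_def by (rule restrict_hom[OF group_pres])
qed

lemma pext_pgen: "good S R \<phi> \<Longrightarrow> a \<in> S \<Longrightarrow> pext S R \<phi> (pgen R a) = \<phi> a"
  unfolding pext_def
  by (simp add: pgen_carrier lift_pgen[OF group_pres good_funcset] good_def)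

lemma pext_ext: "pext S R \<phi> \<in> extensional (carrier (presented_group S R))"
  by (simp add: pext_def)

lemma involution_Bij:
  assumes "f \<in> hom G G" "f \<in> extensional (carrier G)" "\<And>x. x \<in> carrier G \<Longrightarrow> f (f x) = x"
  shows "f \<in> Bij (carrier G)"
proof -
  have c: "\<And>x. x \<in> carrier G \<Longrightarrow> f x \<in> carrier G" using assms(1) by (simp add: hom_in_carrier)
  have "bij_betw f (carrier G) (carrier G)"
    by (rule bij_betw_byWitness[where f'=f]) (use assms c in auto)
  then show ?thesis using assms(2) by (simp add: Bij_def)
qed

lemma hom_unique_pg:
  assumes h1: "h1 \<in> hom (presented_group S R) (presented_group S' R')"
    and h2: "h2 \<in> hom (presented_group S R) (presented_group S' R')"
    and eq: "\<And>a. a \<in> S \<Longrightarrow> h1 (pgen R a) = h2 (pgen R a)"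
    and x: "x \<in> carrier (presented_group S R)"
  shows "h1 x = h2 x"
  by (rule hom_unique[OF group_pres h1 h2 eq x])

section \<open>Building FVB representations\<close>

lemma evw_rel_eq: "group G \<Longrightarrow> f \<in> UNIV \<rightarrow> carrier G \<Longrightarrow> evw G f u = evw G f v \<Longrightarrow>
   evw G f (rel_eq u v) = \<one>\<^bsub>G\<^esub>"
  by (simp add: rel_eq_def group.evw_append group.evw_inv_word group.evw_closed group.r_inv)

lemma fvb_rep_exists:
  fixes T :: "('b, 'm) monoid_scheme"
  assumes T: "group T"
    and A: "\<And>i. 1 \<le> i \<Longrightarrow> i < n \<Longrightarrow> As i \<in> auto T \<and> Ar i \<in> auto T"
    and r1: "\<And>i j x. 1 \<le> i \<Longrightarrow> i < n \<Longrightarrow> 1 \<le> j \<Longrightarrow> j < n \<Longrightarrow> (i + 2 \<le> j \<or> j + 2 \<le> i) \<Longrightarrow> x \<in> carrier T \<Longrightarrow>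
              As j (As i x) = As i (As j x)"
    and r2: "\<And>i j x. 1 \<le> i \<Longrightarrow> i < n \<Longrightarrow> 1 \<le> j \<Longrightarrow> j < n \<Longrightarrow> (i + 2 \<le> j \<or> j + 2 \<le> i) \<Longrightarrow> x \<in> carrier T \<Longrightarrow>
              Ar j (Ar i x) = Ar i (Ar j x)"
    and r3: "\<And>i j x. 1 \<le> i \<Longrightarrow> i < n \<Longrightarrow> 1 \<le> j \<Longrightarrow> j < n \<Longrightarrow> (i + 2 \<le> j \<or> j + 2 \<le> i) \<Longrightarrow> x \<in> carrier T \<Longrightarrow>
              Ar j (As i x) = As i (Ar j x)"
    and r4: "\<And>i x. 1 \<le> i \<Longrightarrow> i + 1 < n \<Longrightarrow> x \<in> carrier T \<Longrightarrow>
              As i (As (i+1) (As i x)) = As (i+1) (As i (As (i+1) x))"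
    and r5: "\<And>i x. 1 \<le> i \<Longrightarrow> i + 1 < n \<Longrightarrow> x \<in> carrier T \<Longrightarrow>
              Ar i (Ar (i+1) (Ar i x)) = Ar (i+1) (Ar i (Ar (i+1) x))"
    and r6: "\<And>i x. 1 \<le> i \<Longrightarrow> i + 1 < n \<Longrightarrow> x \<in> carrier T \<Longrightarrow>
              As i (Ar (i+1) (Ar i x)) = Ar (i+1) (Ar i (As (i+1) x))"
    and r7: "\<And>i x. 1 \<le> i \<Longrightarrow> i < n \<Longrightarrow> x \<in> carrier T \<Longrightarrow> Ar i (Ar i x) = x"
    and r8: "\<And>i x. 1 \<le> i \<Longrightarrow> i < n \<Longrightarrow> x \<in> carrier T \<Longrightarrow> As i (As i x) = x"
  shows "\<exists>h. h \<in> hom (FVB n) (AutR T) \<and>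
     (\<forall>i. 1 \<le> i \<and> i < n \<longrightarrow> h (pgen (fvb_rels n) (Sig i)) = As i \<and> h (pgen (fvb_rels n) (Rho i)) = Ar i)"
proof -
  let ?A = "AutR T"
  have GA: "group ?A" by (rule group_AutR[OF T])
  define f where "f g = (case g of Sig i \<Rightarrow> if 1 \<le> i \<and> i < n then As i else \<one>\<^bsub>?A\<^esub>
                         | Rho i \<Rightarrow> if 1 \<le> i \<and> i < n then Ar i else \<one>\<^bsub>?A\<^esub>)" for g
  have fS: "\<And>i. 1 \<le> i \<Longrightarrow> i < n \<Longrightarrow> f (Sig i) = As i" and fR: "\<And>i. 1 \<le> i \<Longrightarrow> i < n \<Longrightarrow> f (Rho i) = Ar i"
    by (simp_all add: f_def)
  have f: "f \<in> UNIV \<rightarrow> carrier ?A"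
  proof
    fix g show "f g \<in> carrier ?A"
      using A monoid.one_closed[OF group.is_monoid[OF GA]] by (cases g) (auto simp: f_def)
  qed
  have ev2: "\<And>a b. evw ?A f [(a, True), (b, True)] = f a \<otimes>\<^bsub>?A\<^esub> f b"
    using f by (simp add: Pi_iff monoid.r_one[OF group.is_monoid[OF GA]])
  have ev3: "\<And>a b c. evw ?A f [(a, True), (b, True), (c, True)] = f a \<otimes>\<^bsub>?A\<^esub> (f b \<otimes>\<^bsub>?A\<^esub> f c)"
    using f by (simp add: Pi_iff monoid.r_one[OF group.is_monoid[OF GA]])
  have eq: "\<And>F G. F \<in> auto T \<Longrightarrow> G \<in> auto T \<Longrightarrow> (\<And>x. x \<in> carrier T \<Longrightarrow> F x = G x) \<Longrightarrow> F = G"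
    by (rule auto_eqI)
  have Ac: "\<And>i x. 1 \<le> i \<Longrightarrow> i < n \<Longrightarrow> x \<in> carrier T \<Longrightarrow> As i x \<in> carrier T \<and> Ar i x \<in> carrier T"
    using A by (auto simp: auto_closed)
  have mc: "\<And>F G. F \<in> auto T \<Longrightarrow> G \<in> auto T \<Longrightarrow> F \<otimes>\<^bsub>?A\<^esub> G \<in> auto T"
    using monoid.m_closed[OF group.is_monoid[OF GA]] by simp
  have R: "\<And>r. r \<in> fvb_rels n \<Longrightarrow> evw ?A f r = \<one>\<^bsub>?A\<^esub>"
  proof -
    fix r assume "r \<in> fvb_rels n"
    then consider
      (c1) i j where "r = rel_eq [sg i, sg j] [sg j, sg i]" "1 \<le> i" "i < n" "1 \<le> j" "j < n" "i + 2 \<le> j \<or> j + 2 \<le> i"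
    | (c2) i j where "r = rel_eq [rh i, rh j] [rh j, rh i]" "1 \<le> i" "i < n" "1 \<le> j" "j < n" "i + 2 \<le> j \<or> j + 2 \<le> i"
    | (c3) i j where "r = rel_eq [sg i, rh j] [rh j, sg i]" "1 \<le> i" "i < n" "1 \<le> j" "j < n" "i + 2 \<le> j \<or> j + 2 \<le> i"
    | (c4) i where "r = rel_eq [sg i, sg (i+1), sg i] [sg (i+1), sg i, sg (i+1)]" "1 \<le> i" "i + 1 < n"
    | (c5) i where "r = rel_eq [rh i, rh (i+1), rh i] [rh (i+1), rh i, rh (i+1)]" "1 \<le> i" "i + 1 < n"
    | (c6) i where "r = rel_eq [rh i, rh (i+1), sg i] [sg (i+1), rh i, rh (i+1)]" "1 \<le> i" "i + 1 < n"
    | (c7) i where "r = [rh i, rh i]" "1 \<le> i" "i < n"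
    | (c8) i where "r = [sg i, sg i]" "1 \<le> i" "i < n"
      unfolding fvb_rels_def by blast
    then show "evw ?A f r = \<one>\<^bsub>?A\<^esub>"
    proof cases
      case c1
      show ?thesis unfolding c1(1)
        apply (rule evw_rel_eq[OF GA f])
        unfolding sg_def ev2 using c1 A
        apply (simp add: fS)
        apply (rule eq)
        using c1 r1 Ac apply (auto simp: mc AutR_mult_apply)
        done
    next
      case c2
      show ?thesis unfolding c2(1)
        apply (rule evw_rel_eq[OF GA f])
        unfolding rh_def ev2 using c2 A
        apply (simp add: fR)
        apply (rule eq)
        using c2 r2 Ac apply (auto simp: mc AutR_mult_apply)
        done
    next
      case c3
      show ?thesis unfolding c3(1)
        apply (rule evw_rel_eq[OF GA f])
        unfolding rh_def sg_def ev2 using c3 A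
        apply (simp add: fR fS)
        apply (rule eq)
        using c3 r3 Ac apply (auto simp: mc AutR_mult_apply)
        done
    next
      case c4
      show ?thesis unfolding c4(1)
        apply (rule evw_rel_eq[OF GA f])
        unfolding sg_def ev3 using c4 A
        apply (simp add: fS)
        apply (rule eq)
        using c4 r4 Ac apply (auto simp: mc AutR_mult_apply)
        done
    next
      case c5
      show ?thesis unfolding c5(1)
        apply (rule evw_rel_eq[OF GA f])
        unfolding rh_def ev3 using c5 A
        apply (simp add: fR)
        apply (rule eq)
        using c5 r5 Ac apply (auto simp: mc AutR_mult_apply)
        done
    next
      case c6
      show ?thesis unfolding c6(1)
        apply (rule evw_rel_eq[OF GA f])
        unfolding rh_def sg_def ev3 using c6 A
        apply (simp add: fR fS)
        apply (rule eq)
        using c6 r6 Ac apply (auto simp: mc AutR_mult_apply)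
        done
    next
      case c7
      show ?thesis unfolding c7(1) rh_def ev2 using c7 A
        apply (simp add: fR AutR_one)
        apply (rule eq)
        using c7 r7 Ac apply (auto simp: mc AutR_mult_apply group.id_in_auto[OF T])
        done
    next
      case c8
      show ?thesis unfolding c8(1) sg_def ev2 using c8 A
        apply (simp add: fS AutR_one)
        apply (rule eq)
        using c8 r8 Ac apply (auto simp: mc AutR_mult_apply group.id_in_auto[OF T])
        done
    qed
  qed
  have "lift ?A (fvb_rels n) f \<in> hom (FVB n) ?A"
    unfolding FVB_def by (rule lift_hom[OF GA f R])
  moreover have "\<forall>i. 1 \<le> i \<and> i < n \<longrightarrow> lift ?A (fvb_rels n) f (pgen (fvb_rels n) (Sig i)) = As i \<and>
      lift ?A (fvb_rels n) f (pgen (fvb_rels n) (Rho i)) = Ar i"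
    by (simp add: lift_pgen[OF GA f R] fS fR)
  ultimately show ?thesis by blast
qed


lemma group_FVB: "group (FVB n)" unfolding FVB_def by (rule group_pres)

lemma fvb_gen_carrier: "g \<in> fvb_gens n \<Longrightarrow> pgen (fvb_rels n) g \<in> carrier (FVB n)"
  unfolding FVB_def by (rule pgen_carrier)

lemma fvb_inv_gen:
  assumes g: "g \<in> fvb_gens n"
  shows "inv\<^bsub>FVB n\<^esub> (pgen (fvb_rels n) g) = pgen (fvb_rels n) g"
proof -
  have "[(g, True), (g, True)] \<in> fvb_rels n"
    using g unfolding fvb_gens_def fvb_rels_def sg_def rh_def by blast
  then have "pgen (fvb_rels n) g \<otimes>\<^bsub>FVB n\<^esub> pgen (fvb_rels n) g = \<one>\<^bsub>FVB n\<^esub>"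
    unfolding FVB_def pgen_def by (simp add: pg_mult relator_one)
  then show ?thesis
    using group.inv_equality[OF group_FVB _ fvb_gen_carrier[OF g] fvb_gen_carrier[OF g]] by simp
qed

lemma fvb_induct:
  assumes x: "x \<in> carrier (FVB n)"
    and one: "P \<one>\<^bsub>FVB n\<^esub>"
    and step: "\<And>g y. g \<in> fvb_gens n \<Longrightarrow> y \<in> carrier (FVB n) \<Longrightarrow> P y \<Longrightarrow>
            P (pgen (fvb_rels n) g \<otimes>\<^bsub>FVB n\<^esub> y)"
  shows "P x"
proof -
  have x': "x \<in> carrier (presented_group (fvb_gens n) (fvb_rels n))" using x by (simp add: FVB_def)
  show ?thesis
  proof (rule pg_induct[OF x'])
    show "P \<one>\<^bsub>presented_group (fvb_gens n) (fvb_rels n)\<^esub>" using one by (simp add: FVB_def)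
  next
    fix a y assume a: "a \<in> fvb_gens n" "y \<in> carrier (presented_group (fvb_gens n) (fvb_rels n))" "P y"
    then show "P (pgen (fvb_rels n) a \<otimes>\<^bsub>presented_group (fvb_gens n) (fvb_rels n)\<^esub> y)"
      using step[of a y] by (simp add: FVB_def)
    show "P (inv\<^bsub>presented_group (fvb_gens n) (fvb_rels n)\<^esub> pgen (fvb_rels n) a
            \<otimes>\<^bsub>presented_group (fvb_gens n) (fvb_rels n)\<^esub> y)"
      using step[of a y] a fvb_inv_gen[OF a(1)] by (simp add: FVB_def)
  qed
qed

lemma rep_apply_mult:
  assumes h: "h \<in> hom (FVB n) (AutR T)" and g: "g \<in> fvb_gens n" and y: "y \<in> carrier (FVB n)"
    and t: "t \<in> carrier T"
  shows "h (pgen (fvb_rels n) g \<otimes>\<^bsub>FVB n\<^esub> y) t = h y (h (pgen (fvb_rels n) g) t)"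
  using hom_mult[OF h fvb_gen_carrier[OF g] y] AutR_mult_apply[OF t] by simp

lemma rep_one:
  assumes T: "group T" and h: "h \<in> hom (FVB n) (AutR T)"
  shows "h \<one>\<^bsub>FVB n\<^esub> = (\<lambda>x\<in>carrier T. x)"
proof -
  interpret group_hom "FVB n" "AutR T" h
    using group_FVB group_AutR[OF T] h by (simp add: group_hom_def group_hom_axioms_def)
  show ?thesis using hom_one by (simp add: AutR_one)
qed

lemma rep_auto: "h \<in> hom (FVB n) (AutR T) \<Longrightarrow> x \<in> carrier (FVB n) \<Longrightarrow> h x \<in> auto T"
  using hom_in_carrier by fastforce

lemma intertwine:
  assumes h1: "h1 \<in> hom (FVB n) (AutR (presented_group S1 R1))"
    and h2: "h2 \<in> hom (FVB n) (AutR (presented_group S2 R2))"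
    and s: "s \<in> hom (presented_group S2 R2) (presented_group S1 R1)"
    and gen: "\<And>g a. g \<in> fvb_gens n \<Longrightarrow> a \<in> S2 \<Longrightarrow>
                s (h2 (pgen (fvb_rels n) g) (pgen R2 a)) = h1 (pgen (fvb_rels n) g) (s (pgen R2 a))"
    and x: "x \<in> carrier (FVB n)"
  shows "\<forall>t\<in>carrier (presented_group S2 R2). s (h2 x t) = h1 x (s t)"
proof (rule fvb_induct[OF x, where P="\<lambda>x. \<forall>t\<in>carrier (presented_group S2 R2). s (h2 x t) = h1 x (s t)"])
  show "\<forall>t\<in>carrier (presented_group S2 R2). s (h2 \<one>\<^bsub>FVB n\<^esub> t) = h1 \<one>\<^bsub>FVB n\<^esub> (s t)" using rep_one[OF group_pres h1] rep_one[OF group_pres h2] s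
    by (simp add: hom_in_carrier)
next
  fix g y assume a2: "g \<in> fvb_gens n" "y \<in> carrier (FVB n)"
    "\<forall>t\<in>carrier (presented_group S2 R2). s (h2 y t) = h1 y (s t)"
  let ?G = "pgen (fvb_rels n) g"
  have A1: "h1 ?G \<in> hom (presented_group S1 R1) (presented_group S1 R1)"
    using rep_auto[OF h1 fvb_gen_carrier[OF a2(1)]] by (simp add: auto_hom)
  have A2: "h2 ?G \<in> hom (presented_group S2 R2) (presented_group S2 R2)"
    using rep_auto[OF h2 fvb_gen_carrier[OF a2(1)]] by (simp add: auto_hom)
  have gt: "\<And>t. t \<in> carrier (presented_group S2 R2) \<Longrightarrow> s (h2 ?G t) = h1 ?G (s t)"
  proof -
    fix t assume t: "t \<in> carrier (presented_group S2 R2)"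
    have "compose (carrier (presented_group S2 R2)) s (h2 ?G) t =
          compose (carrier (presented_group S2 R2)) (h1 ?G) s t"
      by (rule hom_unique_pg[OF compose_hom[OF group_pres A2 s] compose_hom[OF group_pres s A1] _ t])
         (simp add: compose_eq pgen_carrier gen[OF a2(1)])
    then show "s (h2 ?G t) = h1 ?G (s t)" using t by (simp add: compose_eq)
  qed
  show "\<forall>t\<in>carrier (presented_group S2 R2). s (h2 (?G \<otimes>\<^bsub>FVB n\<^esub> y) t) = h1 (?G \<otimes>\<^bsub>FVB n\<^esub> y) (s t)"
  proof
    fix t assume t: "t \<in> carrier (presented_group S2 R2)"
    have c2: "h2 ?G t \<in> carrier (presented_group S2 R2)" using A2 t by (simp add: hom_in_carrier)
    have c1: "s t \<in> carrier (presented_group S1 R1)" using s t by (simp add: hom_in_carrier)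
    show "s (h2 (?G \<otimes>\<^bsub>FVB n\<^esub> y) t) = h1 (?G \<otimes>\<^bsub>FVB n\<^esub> y) (s t)"
      using rep_apply_mult[OF h1 a2(1,2) c1] rep_apply_mult[OF h2 a2(1,2) t] a2(3) c2 gt[OF t] by simp
  qed
qed

lemma kernel_iff:
  assumes h: "h \<in> hom (FVB n) (AutR (presented_group S R))" and x: "x \<in> carrier (FVB n)"
  shows "x \<in> kernel (FVB n) (AutR (presented_group S R)) h \<longleftrightarrow> (\<forall>a\<in>S. h x (pgen R a) = pgen R a)"
proof
  assume "x \<in> kernel (FVB n) (AutR (presented_group S R)) h"
  then have "h x = (\<lambda>t\<in>carrier (presented_group S R). t)" by (simp add: kernel_def AutR_one)
  then show "\<forall>a\<in>S. h x (pgen R a) = pgen R a" by (simp add: pgen_carrier)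
next
  assume a: "\<forall>a\<in>S. h x (pgen R a) = pgen R a"
  have hx: "h x \<in> auto (presented_group S R)" by (rule rep_auto[OF h x])
  have "h x = (\<lambda>t\<in>carrier (presented_group S R). t)"
  proof (rule auto_eqI[OF hx group.id_in_auto[OF group_pres]])
    fix t assume t: "t \<in> carrier (presented_group S R)"
    show "h x t = (\<lambda>t\<in>carrier (presented_group S R). t) t"
      by (rule hom_unique_pg[OF auto_hom[OF hx] auto_hom[OF group.id_in_auto[OF group_pres]] _ t])
         (simp add: a pgen_carrier)
  qed
  then show "x \<in> kernel (FVB n) (AutR (presented_group S R)) h" using x by (simp add: kernel_def AutR_one)
qed

lemma is_rep_hom: "is_rep n S R sig rho h \<Longrightarrow> h \<in> hom (FVB n) (AutR (presented_group S R))"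
  by (simp add: is_rep_def)

lemma is_rep_gen:
  assumes "is_rep n S R sig rho h" "1 \<le> i" "i < n" "a \<in> S"
  shows "h (pgen (fvb_rels n) (Sig i)) (pgen R a) = sig i a"
    "h (pgen (fvb_rels n) (Rho i)) (pgen R a) = rho i a"
  using assms by (auto simp: is_rep_def)

lemma is_rep_auto:
  assumes "is_rep n S R sig rho h" "1 \<le> i" "i < n"
  shows "h (pgen (fvb_rels n) (Sig i)) \<in> hom (presented_group S R) (presented_group S R)"
    "h (pgen (fvb_rels n) (Rho i)) \<in> hom (presented_group S R) (presented_group S R)"
  using assms rep_auto[OF is_rep_hom[OF assms(1)] fvb_gen_carrier, of "Sig i"]
    rep_auto[OF is_rep_hom[OF assms(1)] fvb_gen_carrier, of "Rho i"]
  by (auto simp: fvb_gens_def auto_hom)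

lemma fvb_gens_cases: "g \<in> fvb_gens n \<Longrightarrow> (\<And>i. g = Sig i \<Longrightarrow> 1 \<le> i \<Longrightarrow> i < n \<Longrightarrow> P) \<Longrightarrow>
   (\<And>i. g = Rho i \<Longrightarrow> 1 \<le> i \<Longrightarrow> i < n \<Longrightarrow> P) \<Longrightarrow> P"
  unfolding fvb_gens_def by blast


lemma gens2n_simps[simp]:
  "Xg j \<in> gens2n n \<longleftrightarrow> 1 \<le> j \<and> j \<le> n"
  "Yg j \<in> gens2n n \<longleftrightarrow> 1 \<le> j \<and> j \<le> n"
  "Zg \<notin> gens2n n"
  "Xg j \<in> gens2n1 n \<longleftrightarrow> 1 \<le> j \<and> j \<le> n"
  "Yg j \<in> gens2n1 n \<longleftrightarrow> 1 \<le> j \<and> j \<le> n"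
  "Zg \<in> gens2n1 n"
  by (auto simp: gens2n_def gens2n1_def)

lemma gens2n_cases: "a \<in> gens2n n \<Longrightarrow> (\<And>j. a = Xg j \<Longrightarrow> 1 \<le> j \<Longrightarrow> j \<le> n \<Longrightarrow> P) \<Longrightarrow>
   (\<And>j. a = Yg j \<Longrightarrow> 1 \<le> j \<Longrightarrow> j \<le> n \<Longrightarrow> P) \<Longrightarrow> P"
  by (auto simp: gens2n_def)

lemma gens2n1_cases: "a \<in> gens2n1 n \<Longrightarrow> (\<And>j. a = Xg j \<Longrightarrow> 1 \<le> j \<Longrightarrow> j \<le> n \<Longrightarrow> P) \<Longrightarrow>
   (\<And>j. a = Yg j \<Longrightarrow> 1 \<le> j \<Longrightarrow> j \<le> n \<Longrightarrow> P) \<Longrightarrow> (a = Zg \<Longrightarrow> P) \<Longrightarrow> P"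
  by (auto simp: gens2n_def gens2n1_def)

context
  fixes S :: "'a set" and R :: "'a word set" and \<phi> :: "'a \<Rightarrow> 'a word set"
  assumes g: "good S R \<phi>"
begin

lemma ext_mult: "x \<in> carrier (presented_group S R) \<Longrightarrow> y \<in> carrier (presented_group S R) \<Longrightarrow>
  pext S R \<phi> (x \<otimes>\<^bsub>presented_group S R\<^esub> y) = pext S R \<phi> x \<otimes>\<^bsub>presented_group S R\<^esub> pext S R \<phi> y"
  by (rule hom_mult[OF pext_hom[OF g]])

lemma ext_inv: "x \<in> carrier (presented_group S R) \<Longrightarrow>
  pext S R \<phi> (inv\<^bsub>presented_group S R\<^esub> x) = inv\<^bsub>presented_group S R\<^esub> (pext S R \<phi> x)"
  using group_hom.hom_inv[of "presented_group S R" "presented_group S R" "pext S R \<phi>"]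
    pext_hom[OF g] group_pres[of S R] by (simp add: group_hom_def group_hom_axioms_def)

lemma ext_pow: "x \<in> carrier (presented_group S R) \<Longrightarrow>
  pext S R \<phi> (x [^]\<^bsub>presented_group S R\<^esub> (k::int)) = (pext S R \<phi> x) [^]\<^bsub>presented_group S R\<^esub> k"
  using group_hom.hom_int_pow[of "presented_group S R" "presented_group S R" "pext S R \<phi>"]
    pext_hom[OF g] group_pres[of S R] by (simp add: group_hom_def group_hom_axioms_def)

lemma ext_npow: "x \<in> carrier (presented_group S R) \<Longrightarrow>
  pext S R \<phi> (x [^]\<^bsub>presented_group S R\<^esub> (k::nat)) = (pext S R \<phi> x) [^]\<^bsub>presented_group S R\<^esub> k"
  using group_hom.hom_nat_pow[of "presented_group S R" "presented_group S R" "pext S R \<phi>"]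
    pext_hom[OF g] group_pres[of S R] by (simp add: group_hom_def group_hom_axioms_def)

lemma ext_gen: "a \<in> S \<Longrightarrow> pext S R \<phi> (pgen R a) = \<phi> a"
  by (rule pext_pgen[OF g])

lemma ext_closed: "x \<in> carrier (presented_group S R) \<Longrightarrow> pext S R \<phi> x \<in> carrier (presented_group S R)"
  using pext_hom[OF g] by (simp add: hom_in_carrier)

end

lemma pg_closed:
  "x \<in> carrier (presented_group S R) \<Longrightarrow> y \<in> carrier (presented_group S R) \<Longrightarrow>
     x \<otimes>\<^bsub>presented_group S R\<^esub> y \<in> carrier (presented_group S R)"
  "x \<in> carrier (presented_group S R) \<Longrightarrow> inv\<^bsub>presented_group S R\<^esub> x \<in> carrier (presented_group S R)"
  "x \<in> carrier (presented_group S R) \<Longrightarrow> x [^]\<^bsub>presented_group S R\<^esub> (k::int) \<in> carrier (presented_group S R)"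
  "x \<in> carrier (presented_group S R) \<Longrightarrow> x [^]\<^bsub>presented_group S R\<^esub> (k'::nat) \<in> carrier (presented_group S R)"
  "\<one>\<^bsub>presented_group S R\<^esub> \<in> carrier (presented_group S R)"
  using group_pres[of S R] by (auto simp: group.is_monoid monoid.m_closed group.int_pow_closed monoid.nat_pow_closed)

lemma comp2_eq:
  assumes "f1 \<in> hom (presented_group S R) (presented_group S R)" "f2 \<in> hom (presented_group S R) (presented_group S R)"
    "g1 \<in> hom (presented_group S R) (presented_group S R)" "g2 \<in> hom (presented_group S R) (presented_group S R)"
    "\<And>a. a \<in> S \<Longrightarrow> f2 (f1 (pgen R a)) = g2 (g1 (pgen R a))"
    "x \<in> carrier (presented_group S R)"
  shows "f2 (f1 x) = g2 (g1 x)"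
  using hom_unique_pg[OF compose_hom[OF group_pres assms(1,2)] compose_hom[OF group_pres assms(3,4)], of x]
    assms(5,6) by (simp add: compose_eq pgen_carrier)

lemma comp3_eq:
  assumes "f1 \<in> hom (presented_group S R) (presented_group S R)" "f2 \<in> hom (presented_group S R) (presented_group S R)"
    "f3 \<in> hom (presented_group S R) (presented_group S R)"
    "g1 \<in> hom (presented_group S R) (presented_group S R)" "g2 \<in> hom (presented_group S R) (presented_group S R)"
    "g3 \<in> hom (presented_group S R) (presented_group S R)"
    "\<And>a. a \<in> S \<Longrightarrow> f3 (f2 (f1 (pgen R a))) = g3 (g2 (g1 (pgen R a)))"
    "x \<in> carrier (presented_group S R)"
  shows "f3 (f2 (f1 x)) = g3 (g2 (g1 x))"
proof -
  have h1: "compose (carrier (presented_group S R)) f3 (compose (carrier (presented_group S R)) f2 f1)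
     \<in> hom (presented_group S R) (presented_group S R)"
    by (rule compose_hom[OF group_pres compose_hom[OF group_pres assms(1) assms(2)] assms(3)])
  have h2: "compose (carrier (presented_group S R)) g3 (compose (carrier (presented_group S R)) g2 g1)
     \<in> hom (presented_group S R) (presented_group S R)"
    by (rule compose_hom[OF group_pres compose_hom[OF group_pres assms(4) assms(5)] assms(6)])
  have c: "\<And>f y. f \<in> hom (presented_group S R) (presented_group S R) \<Longrightarrow> y \<in> carrier (presented_group S R) \<Longrightarrow>
     f y \<in> carrier (presented_group S R)" by (simp add: hom_in_carrier)
  show ?thesis
    using hom_unique_pg[OF h1 h2, of x] assms(7,8) c assms(1-6) by (simp add: compose_eq pgen_carrier)
qed

lemma id_eq:
  assumes "f1 \<in> hom (presented_group S R) (presented_group S R)" "f2 \<in> hom (presented_group S R) (presented_group S R)"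
    "\<And>a. a \<in> S \<Longrightarrow> f2 (f1 (pgen R a)) = pgen R a"
    "x \<in> carrier (presented_group S R)"
  shows "f2 (f1 x) = x"
  using hom_unique_pg[OF compose_hom[OF group_pres assms(1,2)] auto_hom[OF group.id_in_auto[OF group_pres]], of x]
    assms(3,4) by (simp add: compose_eq pgen_carrier)

lemma pext_auto_inv:
  assumes "good S R \<phi>" "\<And>a. a \<in> S \<Longrightarrow> pext S R \<phi> (pext S R \<phi> (pgen R a)) = pgen R a"
  shows "pext S R \<phi> \<in> auto (presented_group S R)"
  unfolding auto_def
  using pext_hom[OF assms(1)] pext_ext
    involution_Bij[OF pext_hom[OF assms(1)] pext_ext id_eq[OF pext_hom[OF assms(1)] pext_hom[OF assms(1)] assms(2)]]
  by simp

definition "X1 j = pgen ({}::fgen word set) (Xg j)"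
definition "Y1 j = pgen ({}::fgen word set) (Yg j)"

lemma theta1_good: "1 \<le> i \<Longrightarrow> i < n \<Longrightarrow> good (gens2n n) {} (theta1_sig n m i)"
  "1 \<le> i \<Longrightarrow> i < n \<Longrightarrow> good (gens2n n) {} (theta1_rho n m i)"
  by (auto simp: good_def theta1_sig_def theta1_rho_def swap_xy_def Let_def pgen_carrier pg_closed
      elim!: gens2n_cases)


lemmas ext_simps = ext_mult ext_inv ext_pow ext_npow ext_gen pgen_carrier pg_closed ext_closed

lemma int_pow_assoc: "group G \<Longrightarrow> x \<in> carrier G \<Longrightarrow> z \<in> carrier G \<Longrightarrow>
   x [^]\<^bsub>G\<^esub> (a::int) \<otimes>\<^bsub>G\<^esub> (x [^]\<^bsub>G\<^esub> (b::int) \<otimes>\<^bsub>G\<^esub> z) = x [^]\<^bsub>G\<^esub> (a + b) \<otimes>\<^bsub>G\<^esub> z"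
  by (simp add: group.int_pow_mult monoid.m_assoc[OF group.is_monoid, symmetric] group.int_pow_closed)

lemmas gsimps = monoid.m_assoc[OF group.is_monoid[OF group_pres]] group.l_inv[OF group_pres] group.r_inv[OF group_pres]
  group.cancel_l1[OF group_pres] group.cancel_l2[OF group_pres] group.inv_inv[OF group_pres]
  group.inv_mult_group[OF group_pres] monoid.inv_one[OF group.is_monoid[OF group_pres]]
  monoid.l_one[OF group.is_monoid[OF group_pres]] monoid.r_one[OF group.is_monoid[OF group_pres]]
  int_pow_assoc[OF group_pres] group.int_pow_mult[OF group_pres]
  group.int_pow_neg[OF group_pres] int_pow_0

lemma rel_eq_class: "rel_eq u v \<in> R \<Longrightarrow> pres_class R u = pres_class R v"
proof -
  assume r: "rel_eq u v \<in> R"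
  have "pres_rel R (u @ (inv_word v @ v) @ []) (u @ [] @ [])"
    by (rule pres_rel_ctxt[OF inv_word_cancel1])
  then have "pres_rel R (u @ inv_word v @ v) u" by simp
  moreover have "pres_rel R ([] @ rel_eq u v @ v) ([] @ v)"
    by (rule pres_rel.relator[OF r])
  ultimately have "pres_rel R u v" unfolding rel_eq_def
    by (auto intro: pres_rel.trans pres_rel.sym)
  then show ?thesis by (simp add: pres_class_eq)
qed

lemma K_comm0: "1 \<le> j \<Longrightarrow> j \<le> n \<Longrightarrow>
  pgen (K_rels n) (Yg j) \<otimes>\<^bsub>Kgrp n\<^esub> pgen (K_rels n) Zg = pgen (K_rels n) Zg \<otimes>\<^bsub>Kgrp n\<^esub> pgen (K_rels n) (Yg j)"
  unfolding pgen_def pg_mult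
  by (rule rel_eq_class) (auto simp: K_rels_def)

lemma (in group) comm_invl:
  assumes a: "a \<in> carrier G" and b: "b \<in> carrier G" and c: "a \<otimes> b = b \<otimes> a"
  shows "inv a \<otimes> b = b \<otimes> inv a"
proof -
  have "inv a \<otimes> b = inv a \<otimes> (b \<otimes> a) \<otimes> inv a" using a b by (simp add: m_assoc)
  also have "\<dots> = inv a \<otimes> (a \<otimes> b) \<otimes> inv a" by (simp add: c)
  also have "\<dots> = b \<otimes> inv a" using a b by (simp add: m_assoc[symmetric])
  finally show ?thesis .
qed

context
  fixes n j :: nat
  assumes j: "1 \<le> j" "j \<le> n"
begin

lemma K_comm:
  "pgen (K_rels n) Zg \<otimes>\<^bsub>Kgrp n\<^esub> pgen (K_rels n) (Yg j) = pgen (K_rels n) (Yg j) \<otimes>\<^bsub>Kgrp n\<^esub> pgen (K_rels n) Zg"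
  "inv\<^bsub>Kgrp n\<^esub> pgen (K_rels n) Zg \<otimes>\<^bsub>Kgrp n\<^esub> pgen (K_rels n) (Yg j) = pgen (K_rels n) (Yg j) \<otimes>\<^bsub>Kgrp n\<^esub> inv\<^bsub>Kgrp n\<^esub> pgen (K_rels n) Zg"
  "pgen (K_rels n) Zg \<otimes>\<^bsub>Kgrp n\<^esub> inv\<^bsub>Kgrp n\<^esub> pgen (K_rels n) (Yg j) = inv\<^bsub>Kgrp n\<^esub> pgen (K_rels n) (Yg j) \<otimes>\<^bsub>Kgrp n\<^esub> pgen (K_rels n) Zg"
  "inv\<^bsub>Kgrp n\<^esub> pgen (K_rels n) Zg \<otimes>\<^bsub>Kgrp n\<^esub> inv\<^bsub>Kgrp n\<^esub> pgen (K_rels n) (Yg j) = inv\<^bsub>Kgrp n\<^esub> pgen (K_rels n) (Yg j) \<otimes>\<^bsub>Kgrp n\<^esub> inv\<^bsub>Kgrp n\<^esub> pgen (K_rels n) Zg"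
proof -
  interpret G: group "Kgrp n" by (rule group_pres)
  have y: "pgen (K_rels n) (Yg j) \<in> carrier (Kgrp n)" using j by (simp add: pgen_carrier)
  have z: "pgen (K_rels n) Zg \<in> carrier (Kgrp n)" by (simp add: pgen_carrier)
  have c: "pgen (K_rels n) Zg \<otimes>\<^bsub>Kgrp n\<^esub> pgen (K_rels n) (Yg j) = pgen (K_rels n) (Yg j) \<otimes>\<^bsub>Kgrp n\<^esub> pgen (K_rels n) Zg"
    using K_comm0[OF j] by simp
  have c2: "inv\<^bsub>Kgrp n\<^esub> pgen (K_rels n) Zg \<otimes>\<^bsub>Kgrp n\<^esub> pgen (K_rels n) (Yg j) = pgen (K_rels n) (Yg j) \<otimes>\<^bsub>Kgrp n\<^esub> inv\<^bsub>Kgrp n\<^esub> pgen (K_rels n) Zg"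
    by (rule G.comm_invl[OF z y c])
  have c3: "inv\<^bsub>Kgrp n\<^esub> pgen (K_rels n) (Yg j) \<otimes>\<^bsub>Kgrp n\<^esub> pgen (K_rels n) Zg = pgen (K_rels n) Zg \<otimes>\<^bsub>Kgrp n\<^esub> inv\<^bsub>Kgrp n\<^esub> pgen (K_rels n) (Yg j)"
    by (rule G.comm_invl[OF y z c[symmetric]])
  have c4: "inv\<^bsub>Kgrp n\<^esub> pgen (K_rels n) Zg \<otimes>\<^bsub>Kgrp n\<^esub> inv\<^bsub>Kgrp n\<^esub> pgen (K_rels n) (Yg j) = inv\<^bsub>Kgrp n\<^esub> pgen (K_rels n) (Yg j) \<otimes>\<^bsub>Kgrp n\<^esub> inv\<^bsub>Kgrp n\<^esub> pgen (K_rels n) Zg"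
    by (rule G.comm_invl[OF z _ c3[symmetric]]) (simp add: y)
  show "pgen (K_rels n) Zg \<otimes>\<^bsub>Kgrp n\<^esub> pgen (K_rels n) (Yg j) = pgen (K_rels n) (Yg j) \<otimes>\<^bsub>Kgrp n\<^esub> pgen (K_rels n) Zg"
    by (rule c)
  show "inv\<^bsub>Kgrp n\<^esub> pgen (K_rels n) Zg \<otimes>\<^bsub>Kgrp n\<^esub> pgen (K_rels n) (Yg j) = pgen (K_rels n) (Yg j) \<otimes>\<^bsub>Kgrp n\<^esub> inv\<^bsub>Kgrp n\<^esub> pgen (K_rels n) Zg"
    by (rule c2)
  show "pgen (K_rels n) Zg \<otimes>\<^bsub>Kgrp n\<^esub> inv\<^bsub>Kgrp n\<^esub> pgen (K_rels n) (Yg j) = inv\<^bsub>Kgrp n\<^esub> pgen (K_rels n) (Yg j) \<otimes>\<^bsub>Kgrp n\<^esub> pgen (K_rels n) Zg"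
    by (rule c3[symmetric])
  show "inv\<^bsub>Kgrp n\<^esub> pgen (K_rels n) Zg \<otimes>\<^bsub>Kgrp n\<^esub> inv\<^bsub>Kgrp n\<^esub> pgen (K_rels n) (Yg j) = inv\<^bsub>Kgrp n\<^esub> pgen (K_rels n) (Yg j) \<otimes>\<^bsub>Kgrp n\<^esub> inv\<^bsub>Kgrp n\<^esub> pgen (K_rels n) Zg"
    by (rule c4)
qed

lemma K_comm_assoc:
  "w \<in> carrier (Kgrp n) \<Longrightarrow> pgen (K_rels n) Zg \<otimes>\<^bsub>Kgrp n\<^esub> (pgen (K_rels n) (Yg j) \<otimes>\<^bsub>Kgrp n\<^esub> w) = pgen (K_rels n) (Yg j) \<otimes>\<^bsub>Kgrp n\<^esub> (pgen (K_rels n) Zg \<otimes>\<^bsub>Kgrp n\<^esub> w)"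
  "w \<in> carrier (Kgrp n) \<Longrightarrow> inv\<^bsub>Kgrp n\<^esub> pgen (K_rels n) Zg \<otimes>\<^bsub>Kgrp n\<^esub> (pgen (K_rels n) (Yg j) \<otimes>\<^bsub>Kgrp n\<^esub> w) = pgen (K_rels n) (Yg j) \<otimes>\<^bsub>Kgrp n\<^esub> (inv\<^bsub>Kgrp n\<^esub> pgen (K_rels n) Zg \<otimes>\<^bsub>Kgrp n\<^esub> w)"
  "w \<in> carrier (Kgrp n) \<Longrightarrow> pgen (K_rels n) Zg \<otimes>\<^bsub>Kgrp n\<^esub> (inv\<^bsub>Kgrp n\<^esub> pgen (K_rels n) (Yg j) \<otimes>\<^bsub>Kgrp n\<^esub> w) = inv\<^bsub>Kgrp n\<^esub> pgen (K_rels n) (Yg j) \<otimes>\<^bsub>Kgrp n\<^esub> (pgen (K_rels n) Zg \<otimes>\<^bsub>Kgrp n\<^esub> w)"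
  "w \<in> carrier (Kgrp n) \<Longrightarrow> inv\<^bsub>Kgrp n\<^esub> pgen (K_rels n) Zg \<otimes>\<^bsub>Kgrp n\<^esub> (inv\<^bsub>Kgrp n\<^esub> pgen (K_rels n) (Yg j) \<otimes>\<^bsub>Kgrp n\<^esub> w) = inv\<^bsub>Kgrp n\<^esub> pgen (K_rels n) (Yg j) \<otimes>\<^bsub>Kgrp n\<^esub> (inv\<^bsub>Kgrp n\<^esub> pgen (K_rels n) Zg \<otimes>\<^bsub>Kgrp n\<^esub> w)"
proof -
  interpret G: group "Kgrp n" by (rule group_pres)
  have y: "pgen (K_rels n) (Yg j) \<in> carrier (Kgrp n)" using j by (simp add: pgen_carrier)
  have z: "pgen (K_rels n) Zg \<in> carrier (Kgrp n)" by (simp add: pgen_carrier)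
  assume w: "w \<in> carrier (Kgrp n)"
  show "pgen (K_rels n) Zg \<otimes>\<^bsub>Kgrp n\<^esub> (pgen (K_rels n) (Yg j) \<otimes>\<^bsub>Kgrp n\<^esub> w) = pgen (K_rels n) (Yg j) \<otimes>\<^bsub>Kgrp n\<^esub> (pgen (K_rels n) Zg \<otimes>\<^bsub>Kgrp n\<^esub> w)"
    using y z w K_comm(1) by (simp add: G.m_assoc[symmetric])
  show "inv\<^bsub>Kgrp n\<^esub> pgen (K_rels n) Zg \<otimes>\<^bsub>Kgrp n\<^esub> (pgen (K_rels n) (Yg j) \<otimes>\<^bsub>Kgrp n\<^esub> w) = pgen (K_rels n) (Yg j) \<otimes>\<^bsub>Kgrp n\<^esub> (inv\<^bsub>Kgrp n\<^esub> pgen (K_rels n) Zg \<otimes>\<^bsub>Kgrp n\<^esub> w)"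
    using y z w K_comm(2) by (simp add: G.m_assoc[symmetric])
  show "pgen (K_rels n) Zg \<otimes>\<^bsub>Kgrp n\<^esub> (inv\<^bsub>Kgrp n\<^esub> pgen (K_rels n) (Yg j) \<otimes>\<^bsub>Kgrp n\<^esub> w) = inv\<^bsub>Kgrp n\<^esub> pgen (K_rels n) (Yg j) \<otimes>\<^bsub>Kgrp n\<^esub> (pgen (K_rels n) Zg \<otimes>\<^bsub>Kgrp n\<^esub> w)"
    using y z w K_comm(3) by (simp add: G.m_assoc[symmetric])
  show "inv\<^bsub>Kgrp n\<^esub> pgen (K_rels n) Zg \<otimes>\<^bsub>Kgrp n\<^esub> (inv\<^bsub>Kgrp n\<^esub> pgen (K_rels n) (Yg j) \<otimes>\<^bsub>Kgrp n\<^esub> w) = inv\<^bsub>Kgrp n\<^esub> pgen (K_rels n) (Yg j) \<otimes>\<^bsub>Kgrp n\<^esub> (inv\<^bsub>Kgrp n\<^esub> pgen (K_rels n) Zg \<otimes>\<^bsub>Kgrp n\<^esub> w)"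
    using y z w K_comm(4) by (simp add: G.m_assoc[symmetric])
qed

end

lemmas Ksimps = K_comm K_comm_assoc

lemma evw_K_rel:
  assumes "(\<lambda>a. if a \<in> gens2n1 n then \<phi> a else \<one>\<^bsub>Kgrp n\<^esub>) \<in> UNIV \<rightarrow> carrier (Kgrp n)"
    "\<And>j. 1 \<le> j \<Longrightarrow> j \<le> n \<Longrightarrow> \<phi> (Yg j) \<otimes>\<^bsub>Kgrp n\<^esub> \<phi> Zg = \<phi> Zg \<otimes>\<^bsub>Kgrp n\<^esub> \<phi> (Yg j)"
    "r \<in> K_rels n"
  shows "evw (Kgrp n) (\<lambda>a. if a \<in> gens2n1 n then \<phi> a else \<one>\<^bsub>Kgrp n\<^esub>) r = \<one>\<^bsub>Kgrp n\<^esub>"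
proof -
  obtain j where r: "r = rel_eq [(Yg j, True), (Zg, True)] [(Zg, True), (Yg j, True)]" "1 \<le> j" "j \<le> n"
    using assms(3) by (auto simp: K_rels_def)
  have c: "\<phi> (Yg j) \<in> carrier (Kgrp n)" "\<phi> Zg \<in> carrier (Kgrp n)"
    using funcset_mem[OF assms(1), of "Yg j"] funcset_mem[OF assms(1), of "Zg"] r by auto
  show ?thesis unfolding r(1)
    by (rule evw_rel_eq[OF group_pres assms(1)])
       (use r assms(1,2) c in \<open>simp add: Pi_iff monoid.r_one[OF group.is_monoid[OF group_pres]]\<close>)
qed

lemma good_K:
  assumes "\<And>a. a \<in> gens2n1 n \<Longrightarrow> \<phi> a \<in> carrier (Kgrp n)"
    "\<And>j. 1 \<le> j \<Longrightarrow> j \<le> n \<Longrightarrow> \<phi> (Yg j) \<otimes>\<^bsub>Kgrp n\<^esub> \<phi> Zg = \<phi> Zg \<otimes>\<^bsub>Kgrp n\<^esub> \<phi> (Yg j)"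
  shows "good (gens2n1 n) (K_rels n) \<phi>"
proof -
  have f: "(\<lambda>a. if a \<in> gens2n1 n then \<phi> a else \<one>\<^bsub>Kgrp n\<^esub>) \<in> UNIV \<rightarrow> carrier (Kgrp n)"
    using assms(1) pg_closed(5) by auto
  show ?thesis unfolding good_def using assms(1) evw_K_rel[OF f assms(2)] by auto
qed

lemma theta2_good: "1 \<le> i \<Longrightarrow> i < n \<Longrightarrow> good (gens2n1 n) {} (theta2_sig n i)"
  "1 \<le> i \<Longrightarrow> i < n \<Longrightarrow> good (gens2n1 n) {} (theta2_rho n i)"
  by (auto simp: good_def theta2_sig_def theta2_rho_def swap_xy_def Let_def pgen_carrier pg_closed conjg_def
      elim!: gens2n1_cases)

lemma theta3_good: "1 \<le> i \<Longrightarrow> i < n \<Longrightarrow> good (gens2n1 n) (K_rels n) (theta3_sig n i)"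
  "1 \<le> i \<Longrightarrow> i < n \<Longrightarrow> good (gens2n1 n) (K_rels n) (theta3_rho n i)"
  by (rule good_K; auto simp: theta3_sig_def theta3_rho_def swap_xy_def Let_def pgen_carrier pg_closed
      K_comm0 elim!: gens2n1_cases)+

lemma theta4_good: "1 \<le> i \<Longrightarrow> i < n \<Longrightarrow> good (gens2n1 n) (K_rels n) (theta4_sig n i)"
  "1 \<le> i \<Longrightarrow> i < n \<Longrightarrow> good (gens2n1 n) (K_rels n) (theta4_rho n i)"
  by (rule good_K; auto simp: theta4_sig_def theta3_sig_def theta4_rho_def swap_xy_def Let_def pgen_carrier pg_closed
      K_comm0 conjg_def elim!: gens2n1_cases)+

lemma th1_r1:
  assumes "1 \<le> i" "i < n" "1 \<le> j" "j < n" "i + 2 \<le> j \<or> j + 2 \<le> i" "a \<in> gens2n n"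
  shows "pext (gens2n n) ({}) (theta1_sig n m j) (pext (gens2n n) ({}) (theta1_sig n m i) (pgen ({}) a)) = pext (gens2n n) ({}) (theta1_sig n m i) (pext (gens2n n) ({}) (theta1_sig n m j) (pgen ({}) a))"
  using assms(6) proof (cases rule: gens2n_cases)
qed (use assms(1-5) in \<open>auto simp: ext_simps theta1_good gsimps theta1_sig_def theta1_rho_def swap_xy_def Let_def\<close>)

lemma th1_r2:
  assumes "1 \<le> i" "i < n" "1 \<le> j" "j < n" "i + 2 \<le> j \<or> j + 2 \<le> i" "a \<in> gens2n n"
  shows "pext (gens2n n) ({}) (theta1_rho n m j) (pext (gens2n n) ({}) (theta1_rho n m i) (pgen ({}) a)) = pext (gens2n n) ({}) (theta1_rho n m i) (pext (gens2n n) ({}) (theta1_rho n m j) (pgen ({}) a))"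
  using assms(6) proof (cases rule: gens2n_cases)
qed (use assms(1-5) in \<open>auto simp: ext_simps theta1_good gsimps theta1_sig_def theta1_rho_def swap_xy_def Let_def\<close>)

lemma th1_r3:
  assumes "1 \<le> i" "i < n" "1 \<le> j" "j < n" "i + 2 \<le> j \<or> j + 2 \<le> i" "a \<in> gens2n n"
  shows "pext (gens2n n) ({}) (theta1_rho n m j) (pext (gens2n n) ({}) (theta1_sig n m i) (pgen ({}) a)) = pext (gens2n n) ({}) (theta1_sig n m i) (pext (gens2n n) ({}) (theta1_rho n m j) (pgen ({}) a))"
  using assms(6) proof (cases rule: gens2n_cases)
qed (use assms(1-5) in \<open>auto simp: ext_simps theta1_good gsimps theta1_sig_def theta1_rho_def swap_xy_def Let_def\<close>)

lemma th1_r4: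
  assumes "1 \<le> i" "i + 1 < n" "a \<in> gens2n n"
  shows "pext (gens2n n) ({}) (theta1_sig n m i) (pext (gens2n n) ({}) (theta1_sig n m (i+1)) (pext (gens2n n) ({}) (theta1_sig n m i) (pgen ({}) a))) = pext (gens2n n) ({}) (theta1_sig n m (i+1)) (pext (gens2n n) ({}) (theta1_sig n m i) (pext (gens2n n) ({}) (theta1_sig n m (i+1)) (pgen ({}) a)))"
  using assms(3) proof (cases rule: gens2n_cases)
qed (use assms(1-2) in \<open>auto simp: ext_simps theta1_good gsimps theta1_sig_def theta1_rho_def swap_xy_def Let_def\<close>)

lemma th1_r5:
  assumes "1 \<le> i" "i + 1 < n" "a \<in> gens2n n"
  shows "pext (gens2n n) ({}) (theta1_rho n m i) (pext (gens2n n) ({}) (theta1_rho n m (i+1)) (pext (gens2n n) ({}) (theta1_rho n m i) (pgen ({}) a))) = pext (gens2n n) ({}) (theta1_rho n m (i+1)) (pext (gens2n n) ({}) (theta1_rho n m i) (pext (gens2n n) ({}) (theta1_rho n m (i+1)) (pgen ({}) a)))"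
  using assms(3) proof (cases rule: gens2n_cases)
qed (use assms(1-2) in \<open>auto simp: ext_simps theta1_good gsimps theta1_sig_def theta1_rho_def swap_xy_def Let_def\<close>)

lemma th1_r6:
  assumes "1 \<le> i" "i + 1 < n" "a \<in> gens2n n"
  shows "pext (gens2n n) ({}) (theta1_sig n m i) (pext (gens2n n) ({}) (theta1_rho n m (i+1)) (pext (gens2n n) ({}) (theta1_rho n m i) (pgen ({}) a))) = pext (gens2n n) ({}) (theta1_rho n m (i+1)) (pext (gens2n n) ({}) (theta1_rho n m i) (pext (gens2n n) ({}) (theta1_sig n m (i+1)) (pgen ({}) a)))"
  using assms(3) proof (cases rule: gens2n_cases)
qed (use assms(1-2) in \<open>auto simp: ext_simps theta1_good gsimps theta1_sig_def theta1_rho_def swap_xy_def Let_def\<close>)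

lemma th1_r7:
  assumes "1 \<le> i" "i < n" "a \<in> gens2n n"
  shows "pext (gens2n n) ({}) (theta1_rho n m i) (pext (gens2n n) ({}) (theta1_rho n m i) (pgen ({}) a)) = pgen ({}) a"
  using assms(3) proof (cases rule: gens2n_cases)
qed (use assms(1-2) in \<open>auto simp: ext_simps theta1_good gsimps theta1_sig_def theta1_rho_def swap_xy_def Let_def\<close>)

lemma th1_r8:
  assumes "1 \<le> i" "i < n" "a \<in> gens2n n"
  shows "pext (gens2n n) ({}) (theta1_sig n m i) (pext (gens2n n) ({}) (theta1_sig n m i) (pgen ({}) a)) = pgen ({}) a"
  using assms(3) proof (cases rule: gens2n_cases)
qed (use assms(1-2) in \<open>auto simp: ext_simps theta1_good gsimps theta1_sig_def theta1_rho_def swap_xy_def Let_def\<close>)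
lemma th2_r1:
  assumes "1 \<le> i" "i < n" "1 \<le> j" "j < n" "i + 2 \<le> j \<or> j + 2 \<le> i" "a \<in> gens2n1 n"
  shows "pext (gens2n1 n) ({}) (theta2_sig n j) (pext (gens2n1 n) ({}) (theta2_sig n i) (pgen ({}) a)) = pext (gens2n1 n) ({}) (theta2_sig n i) (pext (gens2n1 n) ({}) (theta2_sig n j) (pgen ({}) a))"
  using assms(6) proof (cases rule: gens2n1_cases)
qed (use assms(1-5) in \<open>auto simp: ext_simps theta2_good gsimps theta2_sig_def theta2_rho_def swap_xy_def Let_def conjg_def\<close>)

lemma th2_r2:
  assumes "1 \<le> i" "i < n" "1 \<le> j" "j < n" "i + 2 \<le> j \<or> j + 2 \<le> i" "a \<in> gens2n1 n"
  shows "pext (gens2n1 n) ({}) (theta2_rho n j) (pext (gens2n1 n) ({}) (theta2_rho n i) (pgen ({}) a)) = pext (gens2n1 n) ({}) (theta2_rho n i) (pext (gens2n1 n) ({}) (theta2_rho n j) (pgen ({}) a))"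
  using assms(6) proof (cases rule: gens2n1_cases)
qed (use assms(1-5) in \<open>auto simp: ext_simps theta2_good gsimps theta2_sig_def theta2_rho_def swap_xy_def Let_def conjg_def\<close>)

lemma th2_r3:
  assumes "1 \<le> i" "i < n" "1 \<le> j" "j < n" "i + 2 \<le> j \<or> j + 2 \<le> i" "a \<in> gens2n1 n"
  shows "pext (gens2n1 n) ({}) (theta2_rho n j) (pext (gens2n1 n) ({}) (theta2_sig n i) (pgen ({}) a)) = pext (gens2n1 n) ({}) (theta2_sig n i) (pext (gens2n1 n) ({}) (theta2_rho n j) (pgen ({}) a))"
  using assms(6) proof (cases rule: gens2n1_cases)
qed (use assms(1-5) in \<open>auto simp: ext_simps theta2_good gsimps theta2_sig_def theta2_rho_def swap_xy_def Let_def conjg_def\<close>)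

lemma th2_r4:
  assumes "1 \<le> i" "i + 1 < n" "a \<in> gens2n1 n"
  shows "pext (gens2n1 n) ({}) (theta2_sig n i) (pext (gens2n1 n) ({}) (theta2_sig n (i+1)) (pext (gens2n1 n) ({}) (theta2_sig n i) (pgen ({}) a))) = pext (gens2n1 n) ({}) (theta2_sig n (i+1)) (pext (gens2n1 n) ({}) (theta2_sig n i) (pext (gens2n1 n) ({}) (theta2_sig n (i+1)) (pgen ({}) a)))"
  using assms(3) proof (cases rule: gens2n1_cases)
qed (use assms(1-2) in \<open>auto simp: ext_simps theta2_good gsimps theta2_sig_def theta2_rho_def swap_xy_def Let_def conjg_def\<close>)

lemma th2_r5:
  assumes "1 \<le> i" "i + 1 < n" "a \<in> gens2n1 n"
  shows "pext (gens2n1 n) ({}) (theta2_rho n i) (pext (gens2n1 n) ({}) (theta2_rho n (i+1)) (pext (gens2n1 n) ({}) (theta2_rho n i) (pgen ({}) a))) = pext (gens2n1 n) ({}) (theta2_rho n (i+1)) (pext (gens2n1 n) ({}) (theta2_rho n i) (pext (gens2n1 n) ({}) (theta2_rho n (i+1)) (pgen ({}) a)))"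
  using assms(3) proof (cases rule: gens2n1_cases)
qed (use assms(1-2) in \<open>auto simp: ext_simps theta2_good gsimps theta2_sig_def theta2_rho_def swap_xy_def Let_def conjg_def\<close>)

lemma th2_r6:
  assumes "1 \<le> i" "i + 1 < n" "a \<in> gens2n1 n"
  shows "pext (gens2n1 n) ({}) (theta2_sig n i) (pext (gens2n1 n) ({}) (theta2_rho n (i+1)) (pext (gens2n1 n) ({}) (theta2_rho n i) (pgen ({}) a))) = pext (gens2n1 n) ({}) (theta2_rho n (i+1)) (pext (gens2n1 n) ({}) (theta2_rho n i) (pext (gens2n1 n) ({}) (theta2_sig n (i+1)) (pgen ({}) a)))"
  using assms(3) proof (cases rule: gens2n1_cases)
qed (use assms(1-2) in \<open>auto simp: ext_simps theta2_good gsimps theta2_sig_def theta2_rho_def swap_xy_def Let_def conjg_def\<close>)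

lemma th2_r7:
  assumes "1 \<le> i" "i < n" "a \<in> gens2n1 n"
  shows "pext (gens2n1 n) ({}) (theta2_rho n i) (pext (gens2n1 n) ({}) (theta2_rho n i) (pgen ({}) a)) = pgen ({}) a"
  using assms(3) proof (cases rule: gens2n1_cases)
qed (use assms(1-2) in \<open>auto simp: ext_simps theta2_good gsimps theta2_sig_def theta2_rho_def swap_xy_def Let_def conjg_def\<close>)

lemma th2_r8:
  assumes "1 \<le> i" "i < n" "a \<in> gens2n1 n"
  shows "pext (gens2n1 n) ({}) (theta2_sig n i) (pext (gens2n1 n) ({}) (theta2_sig n i) (pgen ({}) a)) = pgen ({}) a"
  using assms(3) proof (cases rule: gens2n1_cases)
qed (use assms(1-2) in \<open>auto simp: ext_simps theta2_good gsimps theta2_sig_def theta2_rho_def swap_xy_def Let_def conjg_def\<close>)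
lemma th3_r1:
  assumes "1 \<le> i" "i < n" "1 \<le> j" "j < n" "i + 2 \<le> j \<or> j + 2 \<le> i" "a \<in> gens2n1 n"
  shows "pext (gens2n1 n) (K_rels n) (theta3_sig n j) (pext (gens2n1 n) (K_rels n) (theta3_sig n i) (pgen (K_rels n) a)) = pext (gens2n1 n) (K_rels n) (theta3_sig n i) (pext (gens2n1 n) (K_rels n) (theta3_sig n j) (pgen (K_rels n) a))"
  using assms(6) proof (cases rule: gens2n1_cases)
qed (use assms(1-5) in \<open>auto simp: ext_simps theta3_good gsimps theta3_sig_def theta3_rho_def swap_xy_def Let_def Ksimps\<close>)

lemma th3_r2:
  assumes "1 \<le> i" "i < n" "1 \<le> j" "j < n" "i + 2 \<le> j \<or> j + 2 \<le> i" "a \<in> gens2n1 n"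
  shows "pext (gens2n1 n) (K_rels n) (theta3_rho n j) (pext (gens2n1 n) (K_rels n) (theta3_rho n i) (pgen (K_rels n) a)) = pext (gens2n1 n) (K_rels n) (theta3_rho n i) (pext (gens2n1 n) (K_rels n) (theta3_rho n j) (pgen (K_rels n) a))"
  using assms(6) proof (cases rule: gens2n1_cases)
qed (use assms(1-5) in \<open>auto simp: ext_simps theta3_good gsimps theta3_sig_def theta3_rho_def swap_xy_def Let_def Ksimps\<close>)

lemma th3_r3:
  assumes "1 \<le> i" "i < n" "1 \<le> j" "j < n" "i + 2 \<le> j \<or> j + 2 \<le> i" "a \<in> gens2n1 n"
  shows "pext (gens2n1 n) (K_rels n) (theta3_rho n j) (pext (gens2n1 n) (K_rels n) (theta3_sig n i) (pgen (K_rels n) a)) = pext (gens2n1 n) (K_rels n) (theta3_sig n i) (pext (gens2n1 n) (K_rels n) (theta3_rho n j) (pgen (K_rels n) a))"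
  using assms(6) proof (cases rule: gens2n1_cases)
qed (use assms(1-5) in \<open>auto simp: ext_simps theta3_good gsimps theta3_sig_def theta3_rho_def swap_xy_def Let_def Ksimps\<close>)

lemma th3_r4:
  assumes "1 \<le> i" "i + 1 < n" "a \<in> gens2n1 n"
  shows "pext (gens2n1 n) (K_rels n) (theta3_sig n i) (pext (gens2n1 n) (K_rels n) (theta3_sig n (i+1)) (pext (gens2n1 n) (K_rels n) (theta3_sig n i) (pgen (K_rels n) a))) = pext (gens2n1 n) (K_rels n) (theta3_sig n (i+1)) (pext (gens2n1 n) (K_rels n) (theta3_sig n i) (pext (gens2n1 n) (K_rels n) (theta3_sig n (i+1)) (pgen (K_rels n) a)))"
  using assms(3) proof (cases rule: gens2n1_cases)
qed (use assms(1-2) in \<open>auto simp: ext_simps theta3_good gsimps theta3_sig_def theta3_rho_def swap_xy_def Let_def Ksimps\<close>)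

lemma th3_r5:
  assumes "1 \<le> i" "i + 1 < n" "a \<in> gens2n1 n"
  shows "pext (gens2n1 n) (K_rels n) (theta3_rho n i) (pext (gens2n1 n) (K_rels n) (theta3_rho n (i+1)) (pext (gens2n1 n) (K_rels n) (theta3_rho n i) (pgen (K_rels n) a))) = pext (gens2n1 n) (K_rels n) (theta3_rho n (i+1)) (pext (gens2n1 n) (K_rels n) (theta3_rho n i) (pext (gens2n1 n) (K_rels n) (theta3_rho n (i+1)) (pgen (K_rels n) a)))"
  using assms(3) proof (cases rule: gens2n1_cases)
qed (use assms(1-2) in \<open>auto simp: ext_simps theta3_good gsimps theta3_sig_def theta3_rho_def swap_xy_def Let_def Ksimps\<close>)

lemma th3_r6:
  assumes "1 \<le> i" "i + 1 < n" "a \<in> gens2n1 n"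
  shows "pext (gens2n1 n) (K_rels n) (theta3_sig n i) (pext (gens2n1 n) (K_rels n) (theta3_rho n (i+1)) (pext (gens2n1 n) (K_rels n) (theta3_rho n i) (pgen (K_rels n) a))) = pext (gens2n1 n) (K_rels n) (theta3_rho n (i+1)) (pext (gens2n1 n) (K_rels n) (theta3_rho n i) (pext (gens2n1 n) (K_rels n) (theta3_sig n (i+1)) (pgen (K_rels n) a)))"
  using assms(3) proof (cases rule: gens2n1_cases)
qed (use assms(1-2) in \<open>auto simp: ext_simps theta3_good gsimps theta3_sig_def theta3_rho_def swap_xy_def Let_def Ksimps\<close>)

lemma th3_r7:
  assumes "1 \<le> i" "i < n" "a \<in> gens2n1 n"
  shows "pext (gens2n1 n) (K_rels n) (theta3_rho n i) (pext (gens2n1 n) (K_rels n) (theta3_rho n i) (pgen (K_rels n) a)) = pgen (K_rels n) a"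
  using assms(3) proof (cases rule: gens2n1_cases)
qed (use assms(1-2) in \<open>auto simp: ext_simps theta3_good gsimps theta3_sig_def theta3_rho_def swap_xy_def Let_def Ksimps\<close>)

lemma th3_r8:
  assumes "1 \<le> i" "i < n" "a \<in> gens2n1 n"
  shows "pext (gens2n1 n) (K_rels n) (theta3_sig n i) (pext (gens2n1 n) (K_rels n) (theta3_sig n i) (pgen (K_rels n) a)) = pgen (K_rels n) a"
  using assms(3) proof (cases rule: gens2n1_cases)
qed (use assms(1-2) in \<open>auto simp: ext_simps theta3_good gsimps theta3_sig_def theta3_rho_def swap_xy_def Let_def Ksimps\<close>)
lemma th4_r1:
  assumes "1 \<le> i" "i < n" "1 \<le> j" "j < n" "i + 2 \<le> j \<or> j + 2 \<le> i" "a \<in> gens2n1 n"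
  shows "pext (gens2n1 n) (K_rels n) (theta4_sig n j) (pext (gens2n1 n) (K_rels n) (theta4_sig n i) (pgen (K_rels n) a)) = pext (gens2n1 n) (K_rels n) (theta4_sig n i) (pext (gens2n1 n) (K_rels n) (theta4_sig n j) (pgen (K_rels n) a))"
  using assms(6) proof (cases rule: gens2n1_cases)
qed (use assms(1-5) in \<open>auto simp: ext_simps theta4_good gsimps theta4_sig_def theta3_sig_def theta4_rho_def swap_xy_def Let_def conjg_def Ksimps\<close>)

lemma th4_r2:
  assumes "1 \<le> i" "i < n" "1 \<le> j" "j < n" "i + 2 \<le> j \<or> j + 2 \<le> i" "a \<in> gens2n1 n"
  shows "pext (gens2n1 n) (K_rels n) (theta4_rho n j) (pext (gens2n1 n) (K_rels n) (theta4_rho n i) (pgen (K_rels n) a)) = pext (gens2n1 n) (K_rels n) (theta4_rho n i) (pext (gens2n1 n) (K_rels n) (theta4_rho n j) (pgen (K_rels n) a))"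
  using assms(6) proof (cases rule: gens2n1_cases)
qed (use assms(1-5) in \<open>auto simp: ext_simps theta4_good gsimps theta4_sig_def theta3_sig_def theta4_rho_def swap_xy_def Let_def conjg_def Ksimps\<close>)

lemma th4_r3:
  assumes "1 \<le> i" "i < n" "1 \<le> j" "j < n" "i + 2 \<le> j \<or> j + 2 \<le> i" "a \<in> gens2n1 n"
  shows "pext (gens2n1 n) (K_rels n) (theta4_rho n j) (pext (gens2n1 n) (K_rels n) (theta4_sig n i) (pgen (K_rels n) a)) = pext (gens2n1 n) (K_rels n) (theta4_sig n i) (pext (gens2n1 n) (K_rels n) (theta4_rho n j) (pgen (K_rels n) a))"
  using assms(6) proof (cases rule: gens2n1_cases)
qed (use assms(1-5) in \<open>auto simp: ext_simps theta4_good gsimps theta4_sig_def theta3_sig_def theta4_rho_def swap_xy_def Let_def conjg_def Ksimps\<close>)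

lemma th4_r4:
  assumes "1 \<le> i" "i + 1 < n" "a \<in> gens2n1 n"
  shows "pext (gens2n1 n) (K_rels n) (theta4_sig n i) (pext (gens2n1 n) (K_rels n) (theta4_sig n (i+1)) (pext (gens2n1 n) (K_rels n) (theta4_sig n i) (pgen (K_rels n) a))) = pext (gens2n1 n) (K_rels n) (theta4_sig n (i+1)) (pext (gens2n1 n) (K_rels n) (theta4_sig n i) (pext (gens2n1 n) (K_rels n) (theta4_sig n (i+1)) (pgen (K_rels n) a)))"
  using assms(3) proof (cases rule: gens2n1_cases)
qed (use assms(1-2) in \<open>auto simp: ext_simps theta4_good gsimps theta4_sig_def theta3_sig_def theta4_rho_def swap_xy_def Let_def conjg_def Ksimps\<close>)

lemma th4_r5:
  assumes "1 \<le> i" "i + 1 < n" "a \<in> gens2n1 n"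
  shows "pext (gens2n1 n) (K_rels n) (theta4_rho n i) (pext (gens2n1 n) (K_rels n) (theta4_rho n (i+1)) (pext (gens2n1 n) (K_rels n) (theta4_rho n i) (pgen (K_rels n) a))) = pext (gens2n1 n) (K_rels n) (theta4_rho n (i+1)) (pext (gens2n1 n) (K_rels n) (theta4_rho n i) (pext (gens2n1 n) (K_rels n) (theta4_rho n (i+1)) (pgen (K_rels n) a)))"
  using assms(3) proof (cases rule: gens2n1_cases)
qed (use assms(1-2) in \<open>auto simp: ext_simps theta4_good gsimps theta4_sig_def theta3_sig_def theta4_rho_def swap_xy_def Let_def conjg_def Ksimps\<close>)

lemma th4_r6:
  assumes "1 \<le> i" "i + 1 < n" "a \<in> gens2n1 n"
  shows "pext (gens2n1 n) (K_rels n) (theta4_sig n i) (pext (gens2n1 n) (K_rels n) (theta4_rho n (i+1)) (pext (gens2n1 n) (K_rels n) (theta4_rho n i) (pgen (K_rels n) a))) = pext (gens2n1 n) (K_rels n) (theta4_rho n (i+1)) (pext (gens2n1 n) (K_rels n) (theta4_rho n i) (pext (gens2n1 n) (K_rels n) (theta4_sig n (i+1)) (pgen (K_rels n) a)))"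
  using assms(3) proof (cases rule: gens2n1_cases)
qed (use assms(1-2) in \<open>auto simp: ext_simps theta4_good gsimps theta4_sig_def theta3_sig_def theta4_rho_def swap_xy_def Let_def conjg_def Ksimps\<close>)

lemma th4_r7:
  assumes "1 \<le> i" "i < n" "a \<in> gens2n1 n"
  shows "pext (gens2n1 n) (K_rels n) (theta4_rho n i) (pext (gens2n1 n) (K_rels n) (theta4_rho n i) (pgen (K_rels n) a)) = pgen (K_rels n) a"
  using assms(3) proof (cases rule: gens2n1_cases)
qed (use assms(1-2) in \<open>auto simp: ext_simps theta4_good gsimps theta4_sig_def theta3_sig_def theta4_rho_def swap_xy_def Let_def conjg_def Ksimps\<close>)

lemma th4_r8:
  assumes "1 \<le> i" "i < n" "a \<in> gens2n1 n"
  shows "pext (gens2n1 n) (K_rels n) (theta4_sig n i) (pext (gens2n1 n) (K_rels n) (theta4_sig n i) (pgen (K_rels n) a)) = pgen (K_rels n) a"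
  using assms(3) proof (cases rule: gens2n1_cases)
qed (use assms(1-2) in \<open>auto simp: ext_simps theta4_good gsimps theta4_sig_def theta3_sig_def theta4_rho_def swap_xy_def Let_def conjg_def Ksimps\<close>)


lemma rep_build:
  fixes S :: "'a set" and R :: "'a word set"
  assumes good: "\<And>i. 1 \<le> i \<Longrightarrow> i < n \<Longrightarrow> good S R (sig i) \<and> good S R (rho i)"
    and r1: "\<And>i j a. 1 \<le> i \<Longrightarrow> i < n \<Longrightarrow> 1 \<le> j \<Longrightarrow> j < n \<Longrightarrow> (i + 2 \<le> j \<or> j + 2 \<le> i) \<Longrightarrow> a \<in> S \<Longrightarrow>
              pext S R (sig j) (pext S R (sig i) (pgen R a)) = pext S R (sig i) (pext S R (sig j) (pgen R a))"
    and r2: "\<And>i j a. 1 \<le> i \<Longrightarrow> i < n \<Longrightarrow> 1 \<le> j \<Longrightarrow> j < n \<Longrightarrow> (i + 2 \<le> j \<or> j + 2 \<le> i) \<Longrightarrow> a \<in> S \<Longrightarrow>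
              pext S R (rho j) (pext S R (rho i) (pgen R a)) = pext S R (rho i) (pext S R (rho j) (pgen R a))"
    and r3: "\<And>i j a. 1 \<le> i \<Longrightarrow> i < n \<Longrightarrow> 1 \<le> j \<Longrightarrow> j < n \<Longrightarrow> (i + 2 \<le> j \<or> j + 2 \<le> i) \<Longrightarrow> a \<in> S \<Longrightarrow>
              pext S R (rho j) (pext S R (sig i) (pgen R a)) = pext S R (sig i) (pext S R (rho j) (pgen R a))"
    and r4: "\<And>i a. 1 \<le> i \<Longrightarrow> i + 1 < n \<Longrightarrow> a \<in> S \<Longrightarrow>
              pext S R (sig i) (pext S R (sig (i+1)) (pext S R (sig i) (pgen R a))) =
              pext S R (sig (i+1)) (pext S R (sig i) (pext S R (sig (i+1)) (pgen R a)))"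
    and r5: "\<And>i a. 1 \<le> i \<Longrightarrow> i + 1 < n \<Longrightarrow> a \<in> S \<Longrightarrow>
              pext S R (rho i) (pext S R (rho (i+1)) (pext S R (rho i) (pgen R a))) =
              pext S R (rho (i+1)) (pext S R (rho i) (pext S R (rho (i+1)) (pgen R a)))"
    and r6: "\<And>i a. 1 \<le> i \<Longrightarrow> i + 1 < n \<Longrightarrow> a \<in> S \<Longrightarrow>
              pext S R (sig i) (pext S R (rho (i+1)) (pext S R (rho i) (pgen R a))) =
              pext S R (rho (i+1)) (pext S R (rho i) (pext S R (sig (i+1)) (pgen R a)))"
    and r7: "\<And>i a. 1 \<le> i \<Longrightarrow> i < n \<Longrightarrow> a \<in> S \<Longrightarrow> pext S R (rho i) (pext S R (rho i) (pgen R a)) = pgen R a"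
    and r8: "\<And>i a. 1 \<le> i \<Longrightarrow> i < n \<Longrightarrow> a \<in> S \<Longrightarrow> pext S R (sig i) (pext S R (sig i) (pgen R a)) = pgen R a"
  shows "\<exists>h. is_rep n S R sig rho h"
proof -
  let ?As = "\<lambda>i. pext S R (sig i)" and ?Ar = "\<lambda>i. pext S R (rho i)"
  have hs: "\<And>i. 1 \<le> i \<Longrightarrow> i < n \<Longrightarrow> ?As i \<in> hom (presented_group S R) (presented_group S R)"
    using good pext_hom by blast
  have hr: "\<And>i. 1 \<le> i \<Longrightarrow> i < n \<Longrightarrow> ?Ar i \<in> hom (presented_group S R) (presented_group S R)"
    using good pext_hom by blast
  obtain h where h: "h \<in> hom (FVB n) (AutR (presented_group S R))"
    "\<forall>i. 1 \<le> i \<and> i < n \<longrightarrow> h (pgen (fvb_rels n) (Sig i)) = ?As i \<and> h (pgen (fvb_rels n) (Rho i)) = ?Ar i"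
  proof (atomize_elim, rule fvb_rep_exists[OF group_pres])
    fix i assume i: "1 \<le> i" "i < n"
    show "?As i \<in> auto (presented_group S R) \<and> ?Ar i \<in> auto (presented_group S R)"
      using pext_auto_inv[of S R "sig i"] pext_auto_inv[of S R "rho i"] good[OF i] r7[OF i] r8[OF i] by blast
  next
    fix i j x assume a: "1 \<le> i" "i < n" "1 \<le> j" "j < n" "i + 2 \<le> j \<or> j + 2 \<le> i" "x \<in> carrier (presented_group S R)"
    show "?As j (?As i x) = ?As i (?As j x)"
      by (rule comp2_eq[OF hs hs hs hs]) (use a r1 in auto)
    show "?Ar j (?Ar i x) = ?Ar i (?Ar j x)"
      by (rule comp2_eq[OF hr hr hr hr]) (use a r2 in auto)
    show "?Ar j (?As i x) = ?As i (?Ar j x)"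
      by (rule comp2_eq[OF hs hr hr hs]) (use a r3 in auto)
  next
    fix i x assume a: "1 \<le> i" "i + 1 < n" "x \<in> carrier (presented_group S R)"
    show "?As i (?As (i+1) (?As i x)) = ?As (i+1) (?As i (?As (i+1) x))"
      by (rule comp3_eq[OF hs hs hs hs hs hs]) (use a r4 in auto)
    show "?Ar i (?Ar (i+1) (?Ar i x)) = ?Ar (i+1) (?Ar i (?Ar (i+1) x))"
      by (rule comp3_eq[OF hr hr hr hr hr hr]) (use a r5 in auto)
    show "?As i (?Ar (i+1) (?Ar i x)) = ?Ar (i+1) (?Ar i (?As (i+1) x))"
      by (rule comp3_eq[OF hr hr hs hs hr hr]) (use a r6 in auto)
  next
    fix i x assume a: "1 \<le> i" "i < n" "x \<in> carrier (presented_group S R)"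
    show "?Ar i (?Ar i x) = x" by (rule id_eq[OF hr hr]) (use a r7 in auto)
    show "?As i (?As i x) = x" by (rule id_eq[OF hs hs]) (use a r8 in auto)
  qed
  have "is_rep n S R sig rho h"
    unfolding is_rep_def using h good by (auto simp: pext_pgen)
  then show ?thesis by blast
qed

lemma exists_theta1: "\<exists>h. is_rep n (gens2n n) {} (theta1_sig n m) (theta1_rho n m) h"
  by (rule rep_build, simp add: theta1_good, (rule th1_r1, assumption+), (rule th1_r2, assumption+), (rule th1_r3, assumption+), (rule th1_r4, assumption+), (rule th1_r5, assumption+), (rule th1_r6, assumption+), (rule th1_r7, assumption+), (rule th1_r8, assumption+))

lemma exists_theta2: "\<exists>h. is_rep n (gens2n1 n) {} (theta2_sig n) (theta2_rho n) h"
  by (rule rep_build, simp add: theta2_good, (rule th2_r1, assumption+), (rule th2_r2, assumption+), (rule th2_r3, assumption+), (rule th2_r4, assumption+), (rule th2_r5, assumption+), (rule th2_r6, assumption+), (rule th2_r7, assumption+), (rule th2_r8, assumption+))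

lemma exists_theta3: "\<exists>h. is_rep n (gens2n1 n) (K_rels n) (theta3_sig n) (theta3_rho n) h"
  by (rule rep_build, simp add: theta3_good, (rule th3_r1, assumption+), (rule th3_r2, assumption+), (rule th3_r3, assumption+), (rule th3_r4, assumption+), (rule th3_r5, assumption+), (rule th3_r6, assumption+), (rule th3_r7, assumption+), (rule th3_r8, assumption+))

lemma exists_theta4: "\<exists>h. is_rep n (gens2n1 n) (K_rels n) (theta4_sig n) (theta4_rho n) h"
  by (rule rep_build, simp add: theta4_good, (rule th4_r1, assumption+), (rule th4_r2, assumption+), (rule th4_r3, assumption+), (rule th4_r4, assumption+), (rule th4_r5, assumption+), (rule th4_r6, assumption+), (rule th4_r7, assumption+), (rule th4_r8, assumption+))


definition pmap :: "'a set \<Rightarrow> 'a word set \<Rightarrow> 'b set \<Rightarrow> 'b word set \<Rightarrow> ('a \<Rightarrow> 'b word set) \<Rightarrow> 'a word set \<Rightarrow> 'b word set" where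
  "pmap S R S' R' \<phi> = lift (presented_group S' R') R (\<lambda>a. if a \<in> S then \<phi> a else \<one>\<^bsub>presented_group S' R'\<^esub>)"

definition good2 :: "'a set \<Rightarrow> 'a word set \<Rightarrow> 'b set \<Rightarrow> 'b word set \<Rightarrow> ('a \<Rightarrow> 'b word set) \<Rightarrow> bool" where
  "good2 S R S' R' \<phi> \<longleftrightarrow> (\<forall>a\<in>S. \<phi> a \<in> carrier (presented_group S' R')) \<and>
     (\<forall>r\<in>R. evw (presented_group S' R') (\<lambda>a. if a \<in> S then \<phi> a else \<one>\<^bsub>presented_group S' R'\<^esub>) r
        = \<one>\<^bsub>presented_group S' R'\<^esub>)"

lemma good2_funcset: "good2 S R S' R' \<phi> \<Longrightarrow>
  (\<lambda>a. if a \<in> S then \<phi> a else \<one>\<^bsub>presented_group S' R'\<^esub>) \<in> UNIV \<rightarrow> carrier (presented_group S' R')"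
  using pg_closed(5) by (auto simp: good2_def)

lemma pmap_hom: "good2 S R S' R' \<phi> \<Longrightarrow> pmap S R S' R' \<phi> \<in> hom (presented_group S R) (presented_group S' R')"
  unfolding pmap_def by (rule lift_hom[OF group_pres good2_funcset]) (auto simp: good2_def)

lemma pmap_gen: "good2 S R S' R' \<phi> \<Longrightarrow> a \<in> S \<Longrightarrow> pmap S R S' R' \<phi> (pgen R a) = \<phi> a"
proof -
  assume g: "good2 S R S' R' \<phi>" and a: "a \<in> S"
  have "lift (presented_group S' R') R (\<lambda>a. if a \<in> S then \<phi> a else \<one>\<^bsub>presented_group S' R'\<^esub>) (pgen R a)
     = (\<lambda>a. if a \<in> S then \<phi> a else \<one>\<^bsub>presented_group S' R'\<^esub>) a"
    by (rule lift_pgen[OF group_pres good2_funcset[OF g]]) (use g in \<open>auto simp: good2_def\<close>)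
  then show ?thesis using a by (simp add: pmap_def)
qed

lemma good2_free: "(\<And>a. a \<in> S \<Longrightarrow> \<phi> a \<in> carrier (presented_group S' R')) \<Longrightarrow> good2 S {} S' R' \<phi>"
  by (simp add: good2_def)

context
  fixes S R S' R' \<phi>
  assumes g: "good2 S R S' R' \<phi>"
begin

lemma pmap_mult: "x \<in> carrier (presented_group S R) \<Longrightarrow> y \<in> carrier (presented_group S R) \<Longrightarrow>
  pmap S R S' R' \<phi> (x \<otimes>\<^bsub>presented_group S R\<^esub> y) = pmap S R S' R' \<phi> x \<otimes>\<^bsub>presented_group S' R'\<^esub> pmap S R S' R' \<phi> y"
  by (rule hom_mult[OF pmap_hom[OF g]])

lemma pmap_inv: "x \<in> carrier (presented_group S R) \<Longrightarrow>
  pmap S R S' R' \<phi> (inv\<^bsub>presented_group S R\<^esub> x) = inv\<^bsub>presented_group S' R'\<^esub> (pmap S R S' R' \<phi> x)"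
  using group_hom.hom_inv[of "presented_group S R" "presented_group S' R'" "pmap S R S' R' \<phi>"]
    pmap_hom[OF g] group_pres[of S R] group_pres[of S' R'] by (simp add: group_hom_def group_hom_axioms_def)

lemma pmap_pow: "x \<in> carrier (presented_group S R) \<Longrightarrow>
  pmap S R S' R' \<phi> (x [^]\<^bsub>presented_group S R\<^esub> (k::int)) = (pmap S R S' R' \<phi> x) [^]\<^bsub>presented_group S' R'\<^esub> k"
  using group_hom.hom_int_pow[of "presented_group S R" "presented_group S' R'" "pmap S R S' R' \<phi>"]
    pmap_hom[OF g] group_pres[of S R] group_pres[of S' R'] by (simp add: group_hom_def group_hom_axioms_def)

lemma pmap_npow: "x \<in> carrier (presented_group S R) \<Longrightarrow>
  pmap S R S' R' \<phi> (x [^]\<^bsub>presented_group S R\<^esub> (k::nat)) = (pmap S R S' R' \<phi> x) [^]\<^bsub>presented_group S' R'\<^esub> k"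
  using group_hom.hom_nat_pow[of "presented_group S R" "presented_group S' R'" "pmap S R S' R' \<phi>"]
    pmap_hom[OF g] group_pres[of S R] group_pres[of S' R'] by (simp add: group_hom_def group_hom_axioms_def)

lemma pmap_one: "pmap S R S' R' \<phi> \<one>\<^bsub>presented_group S R\<^esub> = \<one>\<^bsub>presented_group S' R'\<^esub>"
  using group_hom.hom_one[of "presented_group S R" "presented_group S' R'" "pmap S R S' R' \<phi>"]
    pmap_hom[OF g] group_pres[of S R] group_pres[of S' R'] by (simp add: group_hom_def group_hom_axioms_def)

lemma pmap_closed: "x \<in> carrier (presented_group S R) \<Longrightarrow> pmap S R S' R' \<phi> x \<in> carrier (presented_group S' R')"
  using pmap_hom[OF g] by (simp add: hom_in_carrier)

end

lemmas pmap_simps = pmap_mult pmap_inv pmap_pow pmap_npow pmap_gen pmap_one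

context
  fixes n S R sig rho h
  assumes rep: "is_rep n S R sig rho h"
begin

lemma rep_gen_hom: "g \<in> fvb_gens n \<Longrightarrow> h (pgen (fvb_rels n) g) \<in> hom (presented_group S R) (presented_group S R)"
  by (rule auto_hom[OF rep_auto[OF is_rep_hom[OF rep] fvb_gen_carrier]])

lemma rep_mult: "g \<in> fvb_gens n \<Longrightarrow> x \<in> carrier (presented_group S R) \<Longrightarrow> y \<in> carrier (presented_group S R) \<Longrightarrow>
  h (pgen (fvb_rels n) g) (x \<otimes>\<^bsub>presented_group S R\<^esub> y) =
  h (pgen (fvb_rels n) g) x \<otimes>\<^bsub>presented_group S R\<^esub> h (pgen (fvb_rels n) g) y"
  by (rule hom_mult[OF rep_gen_hom])

lemma rep_inv: "g \<in> fvb_gens n \<Longrightarrow> x \<in> carrier (presented_group S R) \<Longrightarrow>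
  h (pgen (fvb_rels n) g) (inv\<^bsub>presented_group S R\<^esub> x) = inv\<^bsub>presented_group S R\<^esub> (h (pgen (fvb_rels n) g) x)"
  using group_hom.hom_inv[of "presented_group S R" "presented_group S R"] rep_gen_hom group_pres[of S R]
  by (simp add: group_hom_def group_hom_axioms_def)

lemma rep_pow: "g \<in> fvb_gens n \<Longrightarrow> x \<in> carrier (presented_group S R) \<Longrightarrow>
  h (pgen (fvb_rels n) g) (x [^]\<^bsub>presented_group S R\<^esub> (k::int)) = (h (pgen (fvb_rels n) g) x) [^]\<^bsub>presented_group S R\<^esub> k"
  using group_hom.hom_int_pow[of "presented_group S R" "presented_group S R"] rep_gen_hom group_pres[of S R]
  by (simp add: group_hom_def group_hom_axioms_def)

lemma rep_npow: "g \<in> fvb_gens n \<Longrightarrow> x \<in> carrier (presented_group S R) \<Longrightarrow>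
  h (pgen (fvb_rels n) g) (x [^]\<^bsub>presented_group S R\<^esub> (k::nat)) = (h (pgen (fvb_rels n) g) x) [^]\<^bsub>presented_group S R\<^esub> k"
  using group_hom.hom_nat_pow[of "presented_group S R" "presented_group S R"] rep_gen_hom group_pres[of S R]
  by (simp add: group_hom_def group_hom_axioms_def)

lemma rep_one': "g \<in> fvb_gens n \<Longrightarrow> h (pgen (fvb_rels n) g) \<one>\<^bsub>presented_group S R\<^esub> = \<one>\<^bsub>presented_group S R\<^esub>"
  using group_hom.hom_one[of "presented_group S R" "presented_group S R"] rep_gen_hom group_pres[of S R]
  by (simp add: group_hom_def group_hom_axioms_def)

lemma rep_S: "1 \<le> i \<Longrightarrow> i < n \<Longrightarrow> a \<in> S \<Longrightarrow> h (pgen (fvb_rels n) (Sig i)) (pgen R a) = sig i a"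
  using is_rep_gen[OF rep] by blast

lemma rep_R: "1 \<le> i \<Longrightarrow> i < n \<Longrightarrow> a \<in> S \<Longrightarrow> h (pgen (fvb_rels n) (Rho i)) (pgen R a) = rho i a"
  using is_rep_gen[OF rep] by blast

lemma rep_x_mult: "x \<in> carrier (FVB n) \<Longrightarrow> s \<in> carrier (presented_group S R) \<Longrightarrow> t \<in> carrier (presented_group S R) \<Longrightarrow>
  h x (s \<otimes>\<^bsub>presented_group S R\<^esub> t) = h x s \<otimes>\<^bsub>presented_group S R\<^esub> h x t"
  by (rule hom_mult[OF auto_hom[OF rep_auto[OF is_rep_hom[OF rep]]]])

lemma rep_x_closed: "x \<in> carrier (FVB n) \<Longrightarrow> s \<in> carrier (presented_group S R) \<Longrightarrow> h x s \<in> carrier (presented_group S R)"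
  by (rule auto_closed[OF rep_auto[OF is_rep_hom[OF rep]]])

lemma rep_x_hom: "x \<in> carrier (FVB n) \<Longrightarrow> h x \<in> hom (presented_group S R) (presented_group S R)"
  by (rule auto_hom[OF rep_auto[OF is_rep_hom[OF rep]]])

lemma rep_x_inv: "x \<in> carrier (FVB n) \<Longrightarrow> s \<in> carrier (presented_group S R) \<Longrightarrow>
  h x (inv\<^bsub>presented_group S R\<^esub> s) = inv\<^bsub>presented_group S R\<^esub> (h x s)"
  using group_hom.hom_inv[of "presented_group S R" "presented_group S R"] rep_x_hom group_pres[of S R]
  by (simp add: group_hom_def group_hom_axioms_def)

lemma rep_x_pow: "x \<in> carrier (FVB n) \<Longrightarrow> s \<in> carrier (presented_group S R) \<Longrightarrow>
  h x (s [^]\<^bsub>presented_group S R\<^esub> (k::int)) = (h x s) [^]\<^bsub>presented_group S R\<^esub> k"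
  using group_hom.hom_int_pow[of "presented_group S R" "presented_group S R"] rep_x_hom group_pres[of S R]
  by (simp add: group_hom_def group_hom_axioms_def)

lemma rep_x_npow: "x \<in> carrier (FVB n) \<Longrightarrow> s \<in> carrier (presented_group S R) \<Longrightarrow>
  h x (s [^]\<^bsub>presented_group S R\<^esub> (k::nat)) = (h x s) [^]\<^bsub>presented_group S R\<^esub> k"
  using group_hom.hom_nat_pow[of "presented_group S R" "presented_group S R"] rep_x_hom group_pres[of S R]
  by (simp add: group_hom_def group_hom_axioms_def)

lemma rep_fix:
  assumes t: "t \<in> carrier (presented_group S R)"
    and fixg: "\<And>g. g \<in> fvb_gens n \<Longrightarrow> h (pgen (fvb_rels n) g) t = t"
    and x: "x \<in> carrier (FVB n)"
  shows "h x t = t"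
proof (rule fvb_induct[OF x, where P="\<lambda>x. h x t = t"])
  show "h \<one>\<^bsub>FVB n\<^esub> t = t" using rep_one[OF group_pres is_rep_hom[OF rep]] t by simp
next
  fix g y assume a: "g \<in> fvb_gens n" "y \<in> carrier (FVB n)" "h y t = t"
  show "h (pgen (fvb_rels n) g \<otimes>\<^bsub>FVB n\<^esub> y) t = t"
    using rep_apply_mult[OF is_rep_hom[OF rep] a(1,2) t] a(3) fixg[OF a(1)] by simp
qed

end

lemma evw_K_rel2:
  assumes G: "group G" and f: "f \<in> UNIV \<rightarrow> carrier G"
    and c: "\<And>j. 1 \<le> j \<Longrightarrow> j \<le> n \<Longrightarrow> f (Yg j) \<otimes>\<^bsub>G\<^esub> f Zg = f Zg \<otimes>\<^bsub>G\<^esub> f (Yg j)"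
    and r: "r \<in> K_rels n"
  shows "evw G f r = \<one>\<^bsub>G\<^esub>"
proof -
  obtain j where r: "r = rel_eq [(Yg j, True), (Zg, True)] [(Zg, True), (Yg j, True)]" "1 \<le> j" "j \<le> n"
    using r by (auto simp: K_rels_def)
  have cc: "f (Yg j) \<in> carrier G" "f Zg \<in> carrier G" using f by auto
  show ?thesis unfolding r(1)
    by (rule evw_rel_eq[OF G f]) (use r c cc G in \<open>simp add: monoid.r_one[OF group.is_monoid]\<close>)
qed

lemma good2_K:
  assumes "\<And>a. a \<in> gens2n1 n \<Longrightarrow> \<phi> a \<in> carrier (presented_group S' R')"
    "\<And>j. 1 \<le> j \<Longrightarrow> j \<le> n \<Longrightarrow> \<phi> (Yg j) \<otimes>\<^bsub>presented_group S' R'\<^esub> \<phi> Zg = \<phi> Zg \<otimes>\<^bsub>presented_group S' R'\<^esub> \<phi> (Yg j)"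
  shows "good2 (gens2n1 n) (K_rels n) S' R' \<phi>"
proof -
  have f: "(\<lambda>a. if a \<in> gens2n1 n then \<phi> a else \<one>\<^bsub>presented_group S' R'\<^esub>) \<in> UNIV \<rightarrow> carrier (presented_group S' R')"
    using assms(1) pg_closed(5) by auto
  have "\<forall>r\<in>K_rels n. evw (presented_group S' R') (\<lambda>a. if a \<in> gens2n1 n then \<phi> a else \<one>\<^bsub>presented_group S' R'\<^esub>) r
     = \<one>\<^bsub>presented_group S' R'\<^esub>"
    using evw_K_rel2[OF group_pres f, of n] assms(2) by simp
  then show ?thesis unfolding good2_def using assms(1) by auto
qed

lemma kernel_sub:
  assumes h1: "h1 \<in> hom (FVB n) (AutR (presented_group S1 R1))"
    and h2: "h2 \<in> hom (FVB n) (AutR (presented_group S2 R2))"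
    and s: "s \<in> hom (presented_group S2 R2) (presented_group S1 R1)"
    and gen: "\<And>g a. g \<in> fvb_gens n \<Longrightarrow> a \<in> S2 \<Longrightarrow>
                s (h2 (pgen (fvb_rels n) g) (pgen R2 a)) = h1 (pgen (fvb_rels n) g) (s (pgen R2 a))"
    and det: "\<And>x. x \<in> carrier (FVB n) \<Longrightarrow> (\<And>a. a \<in> S2 \<Longrightarrow> h1 x (s (pgen R2 a)) = s (pgen R2 a)) \<Longrightarrow>
                  (\<And>a. a \<in> S1 \<Longrightarrow> h1 x (pgen R1 a) = pgen R1 a)"
  shows "kernel (FVB n) (AutR (presented_group S2 R2)) h2 \<subseteq> kernel (FVB n) (AutR (presented_group S1 R1)) h1"
proof
  fix x assume xk: "x \<in> kernel (FVB n) (AutR (presented_group S2 R2)) h2"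
  then have x: "x \<in> carrier (FVB n)" by (simp add: kernel_def)
  have fx: "\<And>a. a \<in> S2 \<Longrightarrow> h2 x (pgen R2 a) = pgen R2 a" using kernel_iff[OF h2 x] xk by blast
  have "\<And>a. a \<in> S2 \<Longrightarrow> h1 x (s (pgen R2 a)) = s (pgen R2 a)"
    using intertwine[OF h1 h2 s gen x] fx pgen_carrier by fastforce
  then show "x \<in> kernel (FVB n) (AutR (presented_group S1 R1)) h1"
    using kernel_iff[OF h1 x] det[OF x] by blast
qed


lemma fvb_gens_simps[simp]: "Sig i \<in> fvb_gens n \<longleftrightarrow> 1 \<le> i \<and> i < n" "Rho i \<in> fvb_gens n \<longleftrightarrow> 1 \<le> i \<and> i < n"
  by (auto simp: fvb_gens_def)

lemma (in group) comm_nat_pow: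
  assumes a: "a \<in> carrier G" and b: "b \<in> carrier G" and c: "a \<otimes> b = b \<otimes> a"
  shows "a [^] (k::nat) \<otimes> b = b \<otimes> a [^] k"
proof (induction k)
  case 0 then show ?case using b by simp
next
  case (Suc k)
  have ak: "a [^] k \<in> carrier G" using a by simp
  have "a [^] Suc k \<otimes> b = (a [^] k \<otimes> a) \<otimes> b" by (simp only: nat_pow_Suc)
  also have "\<dots> = a [^] k \<otimes> (a \<otimes> b)" by (rule m_assoc[OF ak a b])
  also have "\<dots> = a [^] k \<otimes> (b \<otimes> a)" by (simp only: c)
  also have "\<dots> = (a [^] k \<otimes> b) \<otimes> a" by (rule m_assoc[OF ak b a, symmetric])
  also have "\<dots> = (b \<otimes> a [^] k) \<otimes> a" by (simp only: Suc)
  also have "\<dots> = b \<otimes> (a [^] k \<otimes> a)" by (rule m_assoc[OF b ak a])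
  also have "\<dots> = b \<otimes> a [^] Suc k" by (simp only: nat_pow_Suc)
  finally show ?case .
qed

lemma (in group) comm_int_pow:
  assumes a: "a \<in> carrier G" and b: "b \<in> carrier G" and c: "a \<otimes> b = b \<otimes> a"
  shows "a [^] (k::int) \<otimes> b = b \<otimes> a [^] k"
proof (cases "k < 0")
  case True
  have e: "a [^] k = inv (a [^] nat (- k))" using int_pow_def2[of G a k] True by (simp only: True if_True)
  show ?thesis unfolding e by (rule comm_invl[OF nat_pow_closed[OF a] b comm_nat_pow[OF a b c]])
next
  case False
  have e: "a [^] k = a [^] nat k" using int_pow_def2[of G a k] False by (simp only: False if_False)
  show ?thesis unfolding e by (rule comm_nat_pow[OF a b c])
qed

lemma (in group) comm_assoc:
  assumes "a \<in> carrier G" "b \<in> carrier G" "w \<in> carrier G" "a \<otimes> b = b \<otimes> a"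
  shows "a \<otimes> (b \<otimes> w) = b \<otimes> (a \<otimes> w)"
proof -
  have "a \<otimes> (b \<otimes> w) = (a \<otimes> b) \<otimes> w" by (rule m_assoc[OF assms(1-3), symmetric])
  also have "\<dots> = (b \<otimes> a) \<otimes> w" by (simp only: assms(4))
  also have "\<dots> = b \<otimes> (a \<otimes> w)" by (rule m_assoc[OF assms(2,1,3)])
  finally show ?thesis .
qed

context
  fixes n j :: nat and k :: int
  assumes j: "1 \<le> j" "j \<le> n"
begin

lemma K_comm_pow:
  "pgen (K_rels n) Zg [^]\<^bsub>Kgrp n\<^esub> k \<otimes>\<^bsub>Kgrp n\<^esub> pgen (K_rels n) (Yg j) = pgen (K_rels n) (Yg j) \<otimes>\<^bsub>Kgrp n\<^esub> pgen (K_rels n) Zg [^]\<^bsub>Kgrp n\<^esub> k"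
  "pgen (K_rels n) Zg [^]\<^bsub>Kgrp n\<^esub> k \<otimes>\<^bsub>Kgrp n\<^esub> inv\<^bsub>Kgrp n\<^esub> pgen (K_rels n) (Yg j) = inv\<^bsub>Kgrp n\<^esub> pgen (K_rels n) (Yg j) \<otimes>\<^bsub>Kgrp n\<^esub> pgen (K_rels n) Zg [^]\<^bsub>Kgrp n\<^esub> k"
  "w \<in> carrier (Kgrp n) \<Longrightarrow> pgen (K_rels n) Zg [^]\<^bsub>Kgrp n\<^esub> k \<otimes>\<^bsub>Kgrp n\<^esub> (pgen (K_rels n) (Yg j) \<otimes>\<^bsub>Kgrp n\<^esub> w) = pgen (K_rels n) (Yg j) \<otimes>\<^bsub>Kgrp n\<^esub> (pgen (K_rels n) Zg [^]\<^bsub>Kgrp n\<^esub> k \<otimes>\<^bsub>Kgrp n\<^esub> w)"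
  "w \<in> carrier (Kgrp n) \<Longrightarrow> pgen (K_rels n) Zg [^]\<^bsub>Kgrp n\<^esub> k \<otimes>\<^bsub>Kgrp n\<^esub> (inv\<^bsub>Kgrp n\<^esub> pgen (K_rels n) (Yg j) \<otimes>\<^bsub>Kgrp n\<^esub> w) = inv\<^bsub>Kgrp n\<^esub> pgen (K_rels n) (Yg j) \<otimes>\<^bsub>Kgrp n\<^esub> (pgen (K_rels n) Zg [^]\<^bsub>Kgrp n\<^esub> k \<otimes>\<^bsub>Kgrp n\<^esub> w)"
proof -
  interpret G: group "Kgrp n" by (rule group_pres)
  have y: "pgen (K_rels n) (Yg j) \<in> carrier (Kgrp n)" using j by (simp add: pgen_carrier)
  have z: "pgen (K_rels n) Zg \<in> carrier (Kgrp n)" by (simp add: pgen_carrier)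
  have c1: "pgen (K_rels n) Zg [^]\<^bsub>Kgrp n\<^esub> k \<otimes>\<^bsub>Kgrp n\<^esub> pgen (K_rels n) (Yg j) = pgen (K_rels n) (Yg j) \<otimes>\<^bsub>Kgrp n\<^esub> pgen (K_rels n) Zg [^]\<^bsub>Kgrp n\<^esub> k"
    by (rule G.comm_int_pow[OF z y K_comm(1)[OF j]])
  have c2: "pgen (K_rels n) Zg [^]\<^bsub>Kgrp n\<^esub> k \<otimes>\<^bsub>Kgrp n\<^esub> inv\<^bsub>Kgrp n\<^esub> pgen (K_rels n) (Yg j) = inv\<^bsub>Kgrp n\<^esub> pgen (K_rels n) (Yg j) \<otimes>\<^bsub>Kgrp n\<^esub> pgen (K_rels n) Zg [^]\<^bsub>Kgrp n\<^esub> k"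
    by (rule G.comm_int_pow[OF z G.inv_closed[OF y] K_comm(3)[OF j]])
  show "pgen (K_rels n) Zg [^]\<^bsub>Kgrp n\<^esub> k \<otimes>\<^bsub>Kgrp n\<^esub> pgen (K_rels n) (Yg j) = pgen (K_rels n) (Yg j) \<otimes>\<^bsub>Kgrp n\<^esub> pgen (K_rels n) Zg [^]\<^bsub>Kgrp n\<^esub> k"
    by (rule c1)
  show "pgen (K_rels n) Zg [^]\<^bsub>Kgrp n\<^esub> k \<otimes>\<^bsub>Kgrp n\<^esub> inv\<^bsub>Kgrp n\<^esub> pgen (K_rels n) (Yg j) = inv\<^bsub>Kgrp n\<^esub> pgen (K_rels n) (Yg j) \<otimes>\<^bsub>Kgrp n\<^esub> pgen (K_rels n) Zg [^]\<^bsub>Kgrp n\<^esub> k"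
    by (rule c2)
  assume w: "w \<in> carrier (Kgrp n)"
  show "pgen (K_rels n) Zg [^]\<^bsub>Kgrp n\<^esub> k \<otimes>\<^bsub>Kgrp n\<^esub> (pgen (K_rels n) (Yg j) \<otimes>\<^bsub>Kgrp n\<^esub> w) = pgen (K_rels n) (Yg j) \<otimes>\<^bsub>Kgrp n\<^esub> (pgen (K_rels n) Zg [^]\<^bsub>Kgrp n\<^esub> k \<otimes>\<^bsub>Kgrp n\<^esub> w)"
    by (rule G.comm_assoc[OF _ y w c1]) (simp add: z)
  show "pgen (K_rels n) Zg [^]\<^bsub>Kgrp n\<^esub> k \<otimes>\<^bsub>Kgrp n\<^esub> (inv\<^bsub>Kgrp n\<^esub> pgen (K_rels n) (Yg j) \<otimes>\<^bsub>Kgrp n\<^esub> w) = inv\<^bsub>Kgrp n\<^esub> pgen (K_rels n) (Yg j) \<otimes>\<^bsub>Kgrp n\<^esub> (pgen (K_rels n) Zg [^]\<^bsub>Kgrp n\<^esub> k \<otimes>\<^bsub>Kgrp n\<^esub> w)"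
    by (rule G.comm_assoc[OF _ _ w c2]) (simp_all add: z y)
qed

end

lemma (in group) zpow_simps:
  assumes "z \<in> carrier G" "w \<in> carrier G"
  shows "z \<otimes> (z [^] (k::int) \<otimes> w) = z [^] (k + 1) \<otimes> w"
    "inv z \<otimes> (z [^] (k::int) \<otimes> w) = z [^] (k - 1) \<otimes> w"
    "z [^] (k::int) \<otimes> (z \<otimes> w) = z [^] (k + 1) \<otimes> w"
    "z [^] (k::int) \<otimes> (inv z \<otimes> w) = z [^] (k - 1) \<otimes> w"
proof -
  have z1: "z = z [^] (1::int)" using assms by simp
  have z2: "inv z = z [^] (-1::int)" using assms by (simp add: int_pow_neg)
  have e: "\<And>a b. z [^] (a::int) \<otimes> (z [^] b \<otimes> w) = z [^] (a + b) \<otimes> w"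
    using assms by (simp add: int_pow_mult m_assoc[symmetric])
  show "z \<otimes> (z [^] k \<otimes> w) = z [^] (k + 1) \<otimes> w" using e[of 1 k] by (simp add: z1[symmetric] add.commute)
  show "inv z \<otimes> (z [^] k \<otimes> w) = z [^] (k - 1) \<otimes> w" using e[of "-1" k] by (simp add: z2[symmetric])
  show "z [^] k \<otimes> (z \<otimes> w) = z [^] (k + 1) \<otimes> w" using e[of k 1] by (simp add: z1[symmetric])
  show "z [^] k \<otimes> (inv z \<otimes> w) = z [^] (k - 1) \<otimes> w" using e[of k "-1"] by (simp add: z2[symmetric])
qed

lemma (in group) zpow_simps2:
  assumes "z \<in> carrier G"
  shows "z \<otimes> z [^] (k::int) = z [^] (k + 1)"
    "inv z \<otimes> z [^] (k::int) = z [^] (k - 1)"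
    "z [^] (k::int) \<otimes> z = z [^] (k + 1)"
    "z [^] (k::int) \<otimes> inv z = z [^] (k - 1)"
  using zpow_simps[OF assms one_closed, of k] assms by simp_all

definition q2 :: "nat \<Rightarrow> fgen word set \<Rightarrow> fgen word set" where
  "q2 n = pmap (gens2n1 n) {} (gens2n n) {} (\<lambda>a. if a = Zg then \<one>\<^bsub>F2n n\<^esub> else pgen {} a)"

definition s2 :: "nat \<Rightarrow> fgen word set \<Rightarrow> fgen word set" where
  "s2 n = pmap (gens2n n) {} (gens2n1 n) {} (\<lambda>a. case a of Yg j \<Rightarrow> conjg (F2n1 n) (pgen {} (Yg j)) (pgen {} Zg)
                                            | _ \<Rightarrow> pgen {} a)"

lemma q2_good: "good2 (gens2n1 n) {} (gens2n n) {} (\<lambda>a. if a = Zg then \<one>\<^bsub>F2n n\<^esub> else pgen {} a)"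
  by (rule good2_free) (auto elim!: gens2n1_cases simp: pgen_carrier pg_closed)

lemma s2_good: "good2 (gens2n n) {} (gens2n1 n) {} (\<lambda>a. case a of Yg j \<Rightarrow> conjg (F2n1 n) (pgen {} (Yg j)) (pgen {} Zg)
                                            | _ \<Rightarrow> pgen {} a)"
  by (rule good2_free) (auto elim!: gens2n_cases simp: pgen_carrier pg_closed conjg_def)

lemma theta2_kernel:
  assumes r2: "is_rep n (gens2n1 n) {} (theta2_sig n) (theta2_rho n) h2"
    and r: "is_rep n (gens2n n) {} (theta_sig n) (theta_rho n) h"
  shows "kernel (FVB n) (AutR (F2n1 n)) h2 = kernel (FVB n) (AutR (F2n n)) h"
proof
  show "kernel (FVB n) (AutR (F2n1 n)) h2 \<subseteq> kernel (FVB n) (AutR (F2n n)) h"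
  proof (rule kernel_sub[OF is_rep_hom[OF r] is_rep_hom[OF r2] pmap_hom[OF q2_good]])
    fix g a assume g: "g \<in> fvb_gens n" and a: "a \<in> gens2n1 n"
    show "pmap (gens2n1 n) {} (gens2n n) {} (\<lambda>a. if a = Zg then \<one>\<^bsub>F2n n\<^esub> else pgen {} a)
            (h2 (pgen (fvb_rels n) g) (pgen {} a)) =
          h (pgen (fvb_rels n) g) (pmap (gens2n1 n) {} (gens2n n) {} (\<lambda>a. if a = Zg then \<one>\<^bsub>F2n n\<^esub> else pgen {} a) (pgen {} a))"
      using g a
      by (auto elim!: fvb_gens_cases gens2n1_cases
          simp: rep_S[OF r] rep_R[OF r] rep_mult[OF r] rep_inv[OF r] rep_one'[OF r]
           rep_S[OF r2] rep_R[OF r2] rep_mult[OF r2] rep_inv[OF r2] rep_one'[OF r2]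
           pmap_simps[OF q2_good] pgen_carrier pg_closed gsimps
           theta_sig_def theta_rho_def theta2_sig_def theta2_rho_def swap_xy_def Let_def conjg_def)
  next
    fix x a
    assume x: "x \<in> carrier (FVB n)"
      and h: "\<And>a. a \<in> gens2n1 n \<Longrightarrow> h x (pmap (gens2n1 n) {} (gens2n n) {} (\<lambda>a. if a = Zg then \<one>\<^bsub>F2n n\<^esub> else pgen {} a) (pgen {} a)) =
        pmap (gens2n1 n) {} (gens2n n) {} (\<lambda>a. if a = Zg then \<one>\<^bsub>F2n n\<^esub> else pgen {} a) (pgen {} a)"
      and a: "a \<in> gens2n n"
    show "h x (pgen {} a) = pgen {} a"
      using h[of a] a by (auto elim!: gens2n_cases simp: pmap_gen[OF q2_good])
  qed
next
  show "kernel (FVB n) (AutR (F2n n)) h \<subseteq> kernel (FVB n) (AutR (F2n1 n)) h2"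
  proof (rule kernel_sub[OF is_rep_hom[OF r2] is_rep_hom[OF r] pmap_hom[OF s2_good]])
    fix g a assume g: "g \<in> fvb_gens n" and a: "a \<in> gens2n n"
    show "pmap (gens2n n) {} (gens2n1 n) {} (\<lambda>a. case a of Yg j \<Rightarrow> conjg (F2n1 n) (pgen {} (Yg j)) (pgen {} Zg)
                                            | _ \<Rightarrow> pgen {} a)
            (h (pgen (fvb_rels n) g) (pgen {} a)) =
          h2 (pgen (fvb_rels n) g) (pmap (gens2n n) {} (gens2n1 n) {} (\<lambda>a. case a of Yg j \<Rightarrow> conjg (F2n1 n) (pgen {} (Yg j)) (pgen {} Zg)
                                            | _ \<Rightarrow> pgen {} a) (pgen {} a))"
      using g a
      by (auto elim!: fvb_gens_cases gens2n_cases
          simp: rep_S[OF r] rep_R[OF r] rep_mult[OF r] rep_inv[OF r] rep_one'[OF r]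
           rep_S[OF r2] rep_R[OF r2] rep_mult[OF r2] rep_inv[OF r2] rep_one'[OF r2]
           pmap_simps[OF s2_good] pgen_carrier pg_closed gsimps
           theta_sig_def theta_rho_def theta2_sig_def theta2_rho_def swap_xy_def Let_def conjg_def)
  next
    fix x a
    assume x: "x \<in> carrier (FVB n)"
      and h: "\<And>a. a \<in> gens2n n \<Longrightarrow> h2 x (pmap (gens2n n) {} (gens2n1 n) {} (\<lambda>a. case a of Yg j \<Rightarrow> conjg (F2n1 n) (pgen {} (Yg j)) (pgen {} Zg)
                                            | _ \<Rightarrow> pgen {} a) (pgen {} a)) =
        pmap (gens2n n) {} (gens2n1 n) {} (\<lambda>a. case a of Yg j \<Rightarrow> conjg (F2n1 n) (pgen {} (Yg j)) (pgen {} Zg)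
                                            | _ \<Rightarrow> pgen {} a) (pgen {} a)"
      and a: "a \<in> gens2n1 n"
    interpret G: group "F2n1 n" by (rule group_pres)
    have z: "h2 x (pgen {} Zg) = pgen {} Zg"
      by (rule rep_fix[OF r2 _ _ x]) (auto elim!: fvb_gens_cases simp: pgen_carrier rep_S[OF r2] rep_R[OF r2]
          theta2_sig_def theta2_rho_def swap_xy_def Let_def)
    show "h2 x (pgen {} a) = pgen {} a"
      using a
    proof (cases rule: gens2n1_cases[consumes 1])
      case (1 j) then show ?thesis using h[of a] by (simp add: pmap_gen[OF s2_good])
    next
      case (2 j)
      have yc: "pgen {} (Yg j) \<in> carrier (F2n1 n)" "h2 x (pgen {} (Yg j)) \<in> carrier (F2n1 n)"
        using 2 by (auto simp: pgen_carrier rep_x_closed[OF r2 x])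
      have zc: "pgen {} Zg \<in> carrier (F2n1 n)" by (simp add: pgen_carrier)
      have "h2 x (conjg (F2n1 n) (pgen {} (Yg j)) (pgen {} Zg)) = conjg (F2n1 n) (pgen {} (Yg j)) (pgen {} Zg)"
        using h[of "Yg j"] 2 by (simp add: pmap_gen[OF s2_good])
      then have "inv\<^bsub>F2n1 n\<^esub> pgen {} Zg \<otimes>\<^bsub>F2n1 n\<^esub> h2 x (pgen {} (Yg j)) \<otimes>\<^bsub>F2n1 n\<^esub> pgen {} Zg =
                 inv\<^bsub>F2n1 n\<^esub> pgen {} Zg \<otimes>\<^bsub>F2n1 n\<^esub> pgen {} (Yg j) \<otimes>\<^bsub>F2n1 n\<^esub> pgen {} Zg"
        using yc zc z by (simp add: conjg_def rep_x_mult[OF r2 x] rep_x_inv[OF r2 x])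
      then show ?thesis using yc zc 2 by (simp add: G.m_assoc)
    next
      case 3 then show ?thesis using z by simp
    qed
  qed
qed


definition q3 :: "nat \<Rightarrow> fgen word set \<Rightarrow> fgen word set" where
  "q3 n = pmap (gens2n1 n) (K_rels n) (gens2n n) {} (\<lambda>a. if a = Zg then \<one>\<^bsub>F2n n\<^esub> else pgen {} a)"

definition s3f :: "nat \<Rightarrow> fgen \<Rightarrow> fgen word set" where
  "s3f n a = (case a of Xg j \<Rightarrow> pgen (K_rels n) (Xg j) \<otimes>\<^bsub>Kgrp n\<^esub> pgen (K_rels n) Zg [^]\<^bsub>Kgrp n\<^esub> (int j)
                     | Yg j \<Rightarrow> pgen (K_rels n) (Yg j) \<otimes>\<^bsub>Kgrp n\<^esub> inv\<^bsub>Kgrp n\<^esub> pgen (K_rels n) Zg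
                     | Zg \<Rightarrow> \<one>\<^bsub>Kgrp n\<^esub>)"

lemma q3_good: "good2 (gens2n1 n) (K_rels n) (gens2n n) {} (\<lambda>a. if a = Zg then \<one>\<^bsub>F2n n\<^esub> else pgen {} a)"
  by (rule good2_K) (auto elim!: gens2n1_cases simp: pgen_carrier pg_closed gsimps)

lemma s3_good: "good2 (gens2n n) {} (gens2n1 n) (K_rels n) (s3f n)"
  by (rule good2_free) (auto elim!: gens2n_cases simp: pgen_carrier pg_closed s3f_def)

lemmas gsimps2 = monoid.m_assoc[OF group.is_monoid[OF group_pres]] group.l_inv[OF group_pres] group.r_inv[OF group_pres]
  group.cancel_l1[OF group_pres] group.cancel_l2[OF group_pres] group.inv_inv[OF group_pres]
  group.inv_mult_group[OF group_pres] monoid.inv_one[OF group.is_monoid[OF group_pres]]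
  monoid.l_one[OF group.is_monoid[OF group_pres]] monoid.r_one[OF group.is_monoid[OF group_pres]]
  int_pow_assoc[OF group_pres] group.int_pow_mult[OF group_pres, symmetric] int_pow_0

lemmas Kzsimps = group.zpow_simps[OF group_pres] group.zpow_simps2[OF group_pres] K_comm_pow Ksimps

lemma theta3_kernel:
  assumes r3: "is_rep n (gens2n1 n) (K_rels n) (theta3_sig n) (theta3_rho n) h3"
    and r: "is_rep n (gens2n n) {} (theta_sig n) (theta_rho n) h"
  shows "kernel (FVB n) (AutR (Kgrp n)) h3 = kernel (FVB n) (AutR (F2n n)) h"
proof
  show "kernel (FVB n) (AutR (Kgrp n)) h3 \<subseteq> kernel (FVB n) (AutR (F2n n)) h"
  proof (rule kernel_sub[OF is_rep_hom[OF r] is_rep_hom[OF r3] pmap_hom[OF q3_good]])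
    fix g a assume g: "g \<in> fvb_gens n" and a: "a \<in> gens2n1 n"
    show "pmap (gens2n1 n) (K_rels n) (gens2n n) {} (\<lambda>a. if a = Zg then \<one>\<^bsub>F2n n\<^esub> else pgen {} a)
            (h3 (pgen (fvb_rels n) g) (pgen (K_rels n) a)) =
          h (pgen (fvb_rels n) g) (pmap (gens2n1 n) (K_rels n) (gens2n n) {} (\<lambda>a. if a = Zg then \<one>\<^bsub>F2n n\<^esub> else pgen {} a) (pgen (K_rels n) a))"
      using g a
      by (auto elim!: fvb_gens_cases gens2n1_cases
          simp: rep_S[OF r] rep_R[OF r] rep_mult[OF r] rep_inv[OF r] rep_one'[OF r]
           rep_S[OF r3] rep_R[OF r3] rep_mult[OF r3] rep_inv[OF r3] rep_one'[OF r3]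
           pmap_simps[OF q3_good] pgen_carrier pg_closed gsimps
           theta_sig_def theta_rho_def theta3_sig_def theta3_rho_def swap_xy_def Let_def)
  next
    fix x a
    assume x: "x \<in> carrier (FVB n)"
      and h: "\<And>a. a \<in> gens2n1 n \<Longrightarrow> h x (pmap (gens2n1 n) (K_rels n) (gens2n n) {} (\<lambda>a. if a = Zg then \<one>\<^bsub>F2n n\<^esub> else pgen {} a) (pgen (K_rels n) a)) =
        pmap (gens2n1 n) (K_rels n) (gens2n n) {} (\<lambda>a. if a = Zg then \<one>\<^bsub>F2n n\<^esub> else pgen {} a) (pgen (K_rels n) a)"
      and a: "a \<in> gens2n n"
    show "h x (pgen {} a) = pgen {} a"
      using h[of a] a by (auto elim!: gens2n_cases simp: pmap_gen[OF q3_good])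
  qed
next
  show "kernel (FVB n) (AutR (F2n n)) h \<subseteq> kernel (FVB n) (AutR (Kgrp n)) h3"
  proof (rule kernel_sub[OF is_rep_hom[OF r3] is_rep_hom[OF r] pmap_hom[OF s3_good]])
    fix g a assume g: "g \<in> fvb_gens n" and a: "a \<in> gens2n n"
    show "pmap (gens2n n) {} (gens2n1 n) (K_rels n) (s3f n) (h (pgen (fvb_rels n) g) (pgen {} a)) =
          h3 (pgen (fvb_rels n) g) (pmap (gens2n n) {} (gens2n1 n) (K_rels n) (s3f n) (pgen {} a))"
      using g a
      by (auto elim!: fvb_gens_cases gens2n_cases
          simp: rep_S[OF r] rep_R[OF r] rep_mult[OF r] rep_inv[OF r] rep_one'[OF r]
           rep_S[OF r3] rep_R[OF r3] rep_mult[OF r3] rep_inv[OF r3] rep_one'[OF r3] rep_pow[OF r3]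
           pmap_simps[OF s3_good] pgen_carrier pg_closed gsimps2 Kzsimps add.commute s3f_def
           theta_sig_def theta_rho_def theta3_sig_def theta3_rho_def swap_xy_def Let_def)
  next
    fix x a
    assume x: "x \<in> carrier (FVB n)"
      and h: "\<And>a. a \<in> gens2n n \<Longrightarrow> h3 x (pmap (gens2n n) {} (gens2n1 n) (K_rels n) (s3f n) (pgen {} a)) =
        pmap (gens2n n) {} (gens2n1 n) (K_rels n) (s3f n) (pgen {} a)"
      and a: "a \<in> gens2n1 n"
    interpret G: group "Kgrp n" by (rule group_pres)
    have zc: "pgen (K_rels n) Zg \<in> carrier (Kgrp n)" by (simp add: pgen_carrier)
    have z: "h3 x (pgen (K_rels n) Zg) = pgen (K_rels n) Zg"
      by (rule rep_fix[OF r3 zc _ x]) (auto elim!: fvb_gens_cases simp: rep_S[OF r3] rep_R[OF r3]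
          theta3_sig_def theta3_rho_def swap_xy_def Let_def)
    show "h3 x (pgen (K_rels n) a) = pgen (K_rels n) a"
      using a
    proof (cases rule: gens2n1_cases[consumes 1])
      case (1 j)
      have xc: "pgen (K_rels n) (Xg j) \<in> carrier (Kgrp n)" "h3 x (pgen (K_rels n) (Xg j)) \<in> carrier (Kgrp n)"
        using 1 by (auto simp: pgen_carrier rep_x_closed[OF r3 x])
      have "h3 x (pgen (K_rels n) (Xg j) \<otimes>\<^bsub>Kgrp n\<^esub> pgen (K_rels n) Zg [^]\<^bsub>Kgrp n\<^esub> (int j)) =
            pgen (K_rels n) (Xg j) \<otimes>\<^bsub>Kgrp n\<^esub> pgen (K_rels n) Zg [^]\<^bsub>Kgrp n\<^esub> (int j)"
        using h[of "Xg j"] 1 by (simp add: pmap_gen[OF s3_good] s3f_def)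
      then have "h3 x (pgen (K_rels n) (Xg j)) \<otimes>\<^bsub>Kgrp n\<^esub> pgen (K_rels n) Zg [^]\<^bsub>Kgrp n\<^esub> (int j) =
            pgen (K_rels n) (Xg j) \<otimes>\<^bsub>Kgrp n\<^esub> pgen (K_rels n) Zg [^]\<^bsub>Kgrp n\<^esub> (int j)"
        using xc zc z by (simp add: rep_x_mult[OF r3 x] rep_x_pow[OF r3 x])
      then show ?thesis using xc zc 1 by simp
    next
      case (2 j)
      have yc: "pgen (K_rels n) (Yg j) \<in> carrier (Kgrp n)" "h3 x (pgen (K_rels n) (Yg j)) \<in> carrier (Kgrp n)"
        using 2 by (auto simp: pgen_carrier rep_x_closed[OF r3 x])
      have "h3 x (pgen (K_rels n) (Yg j) \<otimes>\<^bsub>Kgrp n\<^esub> inv\<^bsub>Kgrp n\<^esub> pgen (K_rels n) Zg) =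
            pgen (K_rels n) (Yg j) \<otimes>\<^bsub>Kgrp n\<^esub> inv\<^bsub>Kgrp n\<^esub> pgen (K_rels n) Zg"
        using h[of "Yg j"] 2 by (simp add: pmap_gen[OF s3_good] s3f_def)
      then have "h3 x (pgen (K_rels n) (Yg j)) \<otimes>\<^bsub>Kgrp n\<^esub> inv\<^bsub>Kgrp n\<^esub> pgen (K_rels n) Zg =
            pgen (K_rels n) (Yg j) \<otimes>\<^bsub>Kgrp n\<^esub> inv\<^bsub>Kgrp n\<^esub> pgen (K_rels n) Zg"
        using yc zc z by (simp add: rep_x_mult[OF r3 x] rep_x_inv[OF r3 x])
      then show ?thesis using yc zc 2 by simp
    next
      case 3 then show ?thesis using z by simp
    qed
  qed
qed


section \<open>Integer weights on free groups\<close>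

definition wt :: "('a \<Rightarrow> int) \<Rightarrow> 'a word set \<Rightarrow> int" where
  "wt f = lift integer_group {} f"

lemma wt_hom: "wt f \<in> hom (presented_group S {}) integer_group"
  unfolding wt_def by (rule lift_hom) auto

lemma wt_gen: "wt f (pgen {} a) = f a"
  unfolding wt_def by (rule lift_pgen) auto

lemma wt_mult: "x \<in> carrier (presented_group S {}) \<Longrightarrow> y \<in> carrier (presented_group S {}) \<Longrightarrow>
   wt f (x \<otimes>\<^bsub>presented_group S {}\<^esub> y) = wt f x + wt f y"
  using hom_mult[OF wt_hom] by (simp add: integer_group_def)

lemma wt_inv: "x \<in> carrier (presented_group S {}) \<Longrightarrow> wt f (inv\<^bsub>presented_group S {}\<^esub> x) = - wt f x"
  using group_hom.hom_inv[of "presented_group S {}" integer_group "wt f" x] wt_hom[of f S] group_pres[of S "{}"]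
  by (simp add: group_hom_def group_hom_axioms_def)

lemma wt_one: "wt f \<one>\<^bsub>presented_group S {}\<^esub> = 0"
  using group_hom.hom_one[of "presented_group S {}" integer_group "wt f"] wt_hom[of f S] group_pres[of S "{}"]
  by (simp add: group_hom_def group_hom_axioms_def)

lemma wt_pow: "x \<in> carrier (presented_group S {}) \<Longrightarrow> wt f (x [^]\<^bsub>presented_group S {}\<^esub> (k::int)) = k * wt f x"
  using group_hom.hom_int_pow[of "presented_group S {}" integer_group "wt f" x k] wt_hom[of f S] group_pres[of S "{}"]
  by (simp add: group_hom_def group_hom_axioms_def)

lemmas wt_simps = wt_gen wt_mult wt_inv wt_one wt_pow


definition Ysub :: "nat \<Rightarrow> fgen word set set" where
  "Ysub n = generate (F2n n) {pgen {} (Yg j) | j. 1 \<le> j \<and> j \<le> n}"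

definition iota :: "nat \<Rightarrow> fgen word set \<Rightarrow> fgen word set" where
  "iota n = pmap (gens2n n) {} (gens2n1 n) (K_rels n) (pgen (K_rels n))"

definition ey :: "fgen word set \<Rightarrow> int" where
  "ey = wt (\<lambda>a. case a of Yg _ \<Rightarrow> 1 | _ \<Rightarrow> 0)"

lemma iota_good: "good2 (gens2n n) {} (gens2n1 n) (K_rels n) (pgen (K_rels n))"
  by (rule good2_free) (auto elim!: gens2n_cases simp: pgen_carrier)

lemma Ysub_carrier: "U \<in> Ysub n \<Longrightarrow> U \<in> carrier (F2n n)"
  unfolding Ysub_def by (rule group.generate_in_carrier[OF group_pres]) (auto simp: pgen_carrier)

lemma Ysub_one: "\<one>\<^bsub>F2n n\<^esub> \<in> Ysub n" unfolding Ysub_def by (rule generate.one)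
lemma Ysub_gen: "1 \<le> j \<Longrightarrow> j \<le> n \<Longrightarrow> pgen {} (Yg j) \<in> Ysub n" unfolding Ysub_def by (rule generate.incl) auto
lemma Ysub_inv: "1 \<le> j \<Longrightarrow> j \<le> n \<Longrightarrow> inv\<^bsub>F2n n\<^esub> pgen {} (Yg j) \<in> Ysub n" unfolding Ysub_def by (rule generate.inv) auto
lemma Ysub_mult: "U \<in> Ysub n \<Longrightarrow> V \<in> Ysub n \<Longrightarrow> U \<otimes>\<^bsub>F2n n\<^esub> V \<in> Ysub n" unfolding Ysub_def by (rule generate.eng)

lemma Ysub_induct[consumes 1, case_names one incl inv eng]:
  assumes "U \<in> Ysub n" "P \<one>\<^bsub>F2n n\<^esub>"
    "\<And>j. 1 \<le> j \<Longrightarrow> j \<le> n \<Longrightarrow> P (pgen {} (Yg j))"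
    "\<And>j. 1 \<le> j \<Longrightarrow> j \<le> n \<Longrightarrow> P (inv\<^bsub>F2n n\<^esub> pgen {} (Yg j))"
    "\<And>U V. U \<in> Ysub n \<Longrightarrow> V \<in> Ysub n \<Longrightarrow> P U \<Longrightarrow> P V \<Longrightarrow> P (U \<otimes>\<^bsub>F2n n\<^esub> V)"
  shows "P U"
  using assms(1) unfolding Ysub_def
proof (induction rule: generate.induct)
  case one then show ?case using assms(2) by simp
next
  case (incl h) then show ?case using assms(3) by auto
next
  case (inv h) then show ?case using assms(4) by auto
next
  case (eng h1 h2) then show ?case using assms(5) unfolding Ysub_def by auto
qed

lemma iota_comm:
  assumes U: "U \<in> Ysub n"
  shows "iota n U \<otimes>\<^bsub>Kgrp n\<^esub> pgen (K_rels n) Zg = pgen (K_rels n) Zg \<otimes>\<^bsub>Kgrp n\<^esub> iota n U"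
  using U
proof (induction rule: Ysub_induct)
  case one
  then show ?case by (simp add: iota_def pmap_one[OF iota_good] pgen_carrier monoid.l_one[OF group.is_monoid[OF group_pres]] monoid.r_one[OF group.is_monoid[OF group_pres]])
next
  case (incl j)
  then show ?case by (simp add: iota_def pmap_gen[OF iota_good] K_comm(1))
next
  case (inv j)
  then show ?case by (simp add: iota_def pmap_inv[OF iota_good] pmap_gen[OF iota_good] pgen_carrier K_comm(3))
next
  case (eng U V)
  interpret G: group "Kgrp n" by (rule group_pres)
  have c: "iota n U \<in> carrier (Kgrp n)" "iota n V \<in> carrier (Kgrp n)" "pgen (K_rels n) Zg \<in> carrier (Kgrp n)"
    using eng Ysub_carrier pmap_closed[OF iota_good] by (auto simp: iota_def pgen_carrier)
  have "iota n (U \<otimes>\<^bsub>F2n n\<^esub> V) = iota n U \<otimes>\<^bsub>Kgrp n\<^esub> iota n V"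
    using eng Ysub_carrier by (simp add: iota_def pmap_mult[OF iota_good])
  then have "iota n (U \<otimes>\<^bsub>F2n n\<^esub> V) \<otimes>\<^bsub>Kgrp n\<^esub> pgen (K_rels n) Zg =
      iota n U \<otimes>\<^bsub>Kgrp n\<^esub> (iota n V \<otimes>\<^bsub>Kgrp n\<^esub> pgen (K_rels n) Zg)" using c by (simp add: G.m_assoc)
  also have "\<dots> = (iota n U \<otimes>\<^bsub>Kgrp n\<^esub> pgen (K_rels n) Zg) \<otimes>\<^bsub>Kgrp n\<^esub> iota n V"
    using c eng(4) by (simp add: G.m_assoc)
  also have "\<dots> = (pgen (K_rels n) Zg \<otimes>\<^bsub>Kgrp n\<^esub> iota n U) \<otimes>\<^bsub>Kgrp n\<^esub> iota n V"
    using eng(3) by (simp only:)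
  also have "\<dots> = pgen (K_rels n) Zg \<otimes>\<^bsub>Kgrp n\<^esub> (iota n U \<otimes>\<^bsub>Kgrp n\<^esub> iota n V)"
    by (rule G.m_assoc[OF c(3,1,2)])
  finally show ?case using \<open>iota n (U \<otimes>\<^bsub>F2n n\<^esub> V) = iota n U \<otimes>\<^bsub>Kgrp n\<^esub> iota n V\<close> by simp
qed

lemma iota_comm_pow:
  assumes U: "U \<in> Ysub n"
  shows "pgen (K_rels n) Zg [^]\<^bsub>Kgrp n\<^esub> (k::int) \<otimes>\<^bsub>Kgrp n\<^esub> iota n U = iota n U \<otimes>\<^bsub>Kgrp n\<^esub> pgen (K_rels n) Zg [^]\<^bsub>Kgrp n\<^esub> k"
proof -
  interpret G: group "Kgrp n" by (rule group_pres)
  have c: "iota n U \<in> carrier (Kgrp n)" "pgen (K_rels n) Zg \<in> carrier (Kgrp n)"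
    using U Ysub_carrier pmap_closed[OF iota_good] by (auto simp: iota_def pgen_carrier)
  show ?thesis by (rule G.comm_int_pow[OF c(2,1) iota_comm[OF U, symmetric]])
qed

lemma Ysub_map:
  assumes f: "f \<in> hom (F2n n) (F2n n)" and f': "f' \<in> hom (Kgrp n) (Kgrp n)"
    and gy: "\<And>j. 1 \<le> j \<Longrightarrow> j \<le> n \<Longrightarrow> \<exists>j'. 1 \<le> j' \<and> j' \<le> n \<and> f (pgen {} (Yg j)) = pgen {} (Yg j') \<and>
                 f' (pgen (K_rels n) (Yg j)) = pgen (K_rels n) (Yg j')"
    and U: "U \<in> Ysub n"
  shows "f U \<in> Ysub n \<and> f' (iota n U) = iota n (f U) \<and> ey (f U) = ey U"
  using U
proof (induction rule: Ysub_induct)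
  interpret F: group_hom "F2n n" "F2n n" f using f group_pres by (simp add: group_hom_def group_hom_axioms_def)
  interpret K: group_hom "Kgrp n" "Kgrp n" f' using f' group_pres by (simp add: group_hom_def group_hom_axioms_def)
  {
    case one
    then show ?case by (simp add: Ysub_one iota_def pmap_one[OF iota_good])
  next
    case (incl j)
    then obtain j' where j': "1 \<le> j'" "j' \<le> n" "f (pgen {} (Yg j)) = pgen {} (Yg j')"
       "f' (pgen (K_rels n) (Yg j)) = pgen (K_rels n) (Yg j')" using gy by blast
    then show ?case using incl by (simp add: Ysub_gen iota_def pmap_gen[OF iota_good] ey_def wt_gen)
  next
    case (inv j)
    then obtain j' where j': "1 \<le> j'" "j' \<le> n" "f (pgen {} (Yg j)) = pgen {} (Yg j')"
       "f' (pgen (K_rels n) (Yg j)) = pgen (K_rels n) (Yg j')" using gy by blast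
    then show ?case using inv
      by (simp add: Ysub_inv iota_def pmap_gen[OF iota_good] pmap_inv[OF iota_good] ey_def wt_gen wt_inv pgen_carrier)
  next
    case (eng U V)
    have c: "U \<in> carrier (F2n n)" "V \<in> carrier (F2n n)" "f U \<in> carrier (F2n n)" "f V \<in> carrier (F2n n)"
      using eng Ysub_carrier by auto
    have ci: "iota n U \<in> carrier (Kgrp n)" "iota n V \<in> carrier (Kgrp n)"
      using c pmap_closed[OF iota_good] by (auto simp: iota_def)
    show ?case using eng c ci
      by (simp add: Ysub_mult iota_def[symmetric] ey_def wt_mult pmap_mult[OF iota_good, folded iota_def])
  }
qed

lemma Ysub_cnt: "U \<in> Ysub n \<Longrightarrow> wt (\<lambda>a. if a = Xg i then 1 else 0) U = 0"
proof (induction rule: Ysub_induct)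
  case one then show ?case by (simp add: wt_one)
next
  case (incl j) then show ?case by (simp add: wt_gen)
next
  case (inv j) then show ?case by (simp add: wt_gen wt_inv pgen_carrier)
next
  case (eng U V) then show ?case using Ysub_carrier by (simp add: wt_mult)
qed

lemma (in group) conj_step:
  assumes xx: "xx \<in> carrier G" and u: "u \<in> carrier G" and w: "w \<in> carrier G" and z: "z \<in> carrier G"
    and c: "z [^] (d::int) \<otimes> u = u \<otimes> z [^] d"
  shows "conjg G (conjg G xx (z [^] (k::int)) \<otimes> u) (z [^] d) \<otimes> w = conjg G xx (z [^] (k + d)) \<otimes> (u \<otimes> w)"
proof -
  have e1: "inv (z [^] d) = z [^] (- d)" "inv (z [^] k) = z [^] (- k)" "inv (z [^] (k + d)) = z [^] (- (k + d))"
    by (rule int_pow_neg[OF z, symmetric])+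
  have e2: "u \<otimes> (z [^] d \<otimes> w) = z [^] d \<otimes> (u \<otimes> w)"
    using c u z w by (simp add: m_assoc[symmetric])
  have e3: "\<And>a b v. v \<in> carrier G \<Longrightarrow> z [^] (a::int) \<otimes> (z [^] b \<otimes> v) = z [^] (a + b) \<otimes> v"
    using z by (simp add: int_pow_mult m_assoc[symmetric])
  have "conjg G (conjg G xx (z [^] k) \<otimes> u) (z [^] d) \<otimes> w =
        z [^] (- d) \<otimes> (z [^] (- k) \<otimes> (xx \<otimes> (z [^] k \<otimes> (u \<otimes> (z [^] d \<otimes> w)))))"
    unfolding conjg_def e1 using xx u w z by (simp add: m_assoc)
  also have "\<dots> = z [^] (- d + - k) \<otimes> (xx \<otimes> (z [^] (k + d) \<otimes> (u \<otimes> w)))"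
    using xx u w z by (simp add: e2 e3)
  also have "\<dots> = conjg G xx (z [^] (k + d)) \<otimes> (u \<otimes> w)"
    unfolding conjg_def e1 using xx u w z by (simp add: m_assoc add.commute)
  finally show ?thesis .
qed


context
  fixes n h h4
  assumes r: "is_rep n (gens2n n) {} (theta_sig n) (theta_rho n) h"
    and r4: "is_rep n (gens2n1 n) (K_rels n) (theta4_sig n) (theta4_rho n) h4"
begin

lemma GY:
  assumes g: "g \<in> fvb_gens n" and j: "1 \<le> j" "j \<le> n"
  shows "\<exists>j'. 1 \<le> j' \<and> j' \<le> n \<and> h (pgen (fvb_rels n) g) (pgen {} (Yg j)) = pgen {} (Yg j') \<and>
          h4 (pgen (fvb_rels n) g) (pgen (K_rels n) (Yg j)) = pgen (K_rels n) (Yg j')"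
  using g
proof (cases rule: fvb_gens_cases[consumes 1])
  case (1 i)
  then show ?thesis using j
    by (auto simp: rep_S[OF r] rep_S[OF r4] theta_sig_def theta4_sig_def theta3_sig_def Let_def)
next
  case (2 i)
  show ?thesis
  proof (rule exI[of _ "if j = i then i + 1 else if j = i + 1 then i else j"])
    show "1 \<le> (if j = i then i + 1 else if j = i + 1 then i else j) \<and>
      (if j = i then i + 1 else if j = i + 1 then i else j) \<le> n \<and>
      h (pgen (fvb_rels n) g) (pgen {} (Yg j)) = pgen {} (Yg (if j = i then i + 1 else if j = i + 1 then i else j)) \<and>
      h4 (pgen (fvb_rels n) g) (pgen (K_rels n) (Yg j)) = pgen (K_rels n) (Yg (if j = i then i + 1 else if j = i + 1 then i else j))"
      using 2 j by (auto simp: rep_R[OF r] rep_R[OF r4] theta_rho_def theta4_rho_def swap_xy_def Let_def)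
  qed
qed

lemma GX:
  assumes g: "g \<in> fvb_gens n" and i: "1 \<le> i" "i \<le> n"
  shows "\<exists>j V. 1 \<le> j \<and> j \<le> n \<and> V \<in> Ysub n \<and>
     h (pgen (fvb_rels n) g) (pgen {} (Xg i)) = pgen {} (Xg j) \<otimes>\<^bsub>F2n n\<^esub> V \<and>
     h4 (pgen (fvb_rels n) g) (pgen (K_rels n) (Xg i)) =
       conjg (Kgrp n) (pgen (K_rels n) (Xg j)) (pgen (K_rels n) Zg [^]\<^bsub>Kgrp n\<^esub> (int j - int i - ey V))
       \<otimes>\<^bsub>Kgrp n\<^esub> iota n V"
  using g
proof (cases rule: fvb_gens_cases[consumes 1])
  case (1 l)
  note simps = rep_S[OF r] rep_S[OF r4] theta_sig_def theta4_sig_def theta3_sig_def Let_def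
    conjg_def iota_def pmap_simps[OF iota_good] pgen_carrier pg_closed ey_def wt_simps
    monoid.l_one[OF group.is_monoid[OF group_pres]] monoid.r_one[OF group.is_monoid[OF group_pres]]
    monoid.inv_one[OF group.is_monoid[OF group_pres]]
  consider "i = l" | "i = l + 1" | "i \<noteq> l" "i \<noteq> l + 1" by blast
  then show ?thesis
  proof cases
    case 1
    show ?thesis
      by (rule exI[of _ "l + 1"], rule exI[of _ "pgen {} (Yg (l+1))"])
         (use 1 \<open>1 \<le> l\<close> \<open>l < n\<close> \<open>g = Sig l\<close> in \<open>auto simp: simps Ysub_gen\<close>)
  next
    case 2
    show ?thesis
      by (rule exI[of _ "l"], rule exI[of _ "inv\<^bsub>F2n n\<^esub> pgen {} (Yg (l+1))"])
         (use 2 \<open>1 \<le> l\<close> \<open>l < n\<close> \<open>g = Sig l\<close> in \<open>auto simp: simps Ysub_inv\<close>)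
  next
    case 3
    show ?thesis
      by (rule exI[of _ "i"], rule exI[of _ "\<one>\<^bsub>F2n n\<^esub>"])
         (use 3 i \<open>1 \<le> l\<close> \<open>l < n\<close> \<open>g = Sig l\<close> in \<open>auto simp: simps Ysub_one\<close>)
  qed
next
  case (2 l)
  note simps = rep_R[OF r] rep_R[OF r4] theta_rho_def theta4_rho_def swap_xy_def Let_def
    conjg_def iota_def pmap_simps[OF iota_good] pgen_carrier pg_closed ey_def wt_simps
    monoid.l_one[OF group.is_monoid[OF group_pres]] monoid.r_one[OF group.is_monoid[OF group_pres]]
    monoid.inv_one[OF group.is_monoid[OF group_pres]] group.int_pow_neg[OF group_pres] group.int_pow_1[OF group_pres]
  consider "i = l" | "i = l + 1" | "i \<noteq> l" "i \<noteq> l + 1" by blast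
  then show ?thesis
  proof cases
    case 1
    show ?thesis
      by (rule exI[of _ "l + 1"], rule exI[of _ "\<one>\<^bsub>F2n n\<^esub>"])
         (use 1 \<open>1 \<le> l\<close> \<open>l < n\<close> \<open>g = Rho l\<close> in \<open>auto simp: simps Ysub_one\<close>)
  next
    case 2
    show ?thesis
      by (rule exI[of _ "l"], rule exI[of _ "\<one>\<^bsub>F2n n\<^esub>"])
         (use 2 \<open>1 \<le> l\<close> \<open>l < n\<close> \<open>g = Rho l\<close> in \<open>auto simp: simps Ysub_one\<close>)
  next
    case 3
    show ?thesis
      by (rule exI[of _ "i"], rule exI[of _ "\<one>\<^bsub>F2n n\<^esub>"])
         (use 3 i \<open>1 \<le> l\<close> \<open>l < n\<close> \<open>g = Rho l\<close> in \<open>auto simp: simps Ysub_one\<close>)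
  qed
qed

lemma theta4_invariant:
  assumes x: "x \<in> carrier (FVB n)"
  shows "(\<forall>j. 1 \<le> j \<and> j \<le> n \<longrightarrow> (\<exists>j'. 1 \<le> j' \<and> j' \<le> n \<and> h x (pgen {} (Yg j)) = pgen {} (Yg j') \<and>
              h4 x (pgen (K_rels n) (Yg j)) = pgen (K_rels n) (Yg j'))) \<and>
         h4 x (pgen (K_rels n) Zg) = pgen (K_rels n) Zg \<and>
         (\<forall>i. 1 \<le> i \<and> i \<le> n \<longrightarrow> (\<exists>j U. 1 \<le> j \<and> j \<le> n \<and> U \<in> Ysub n \<and>
              h x (pgen {} (Xg i)) = pgen {} (Xg j) \<otimes>\<^bsub>F2n n\<^esub> U \<and>
              h4 x (pgen (K_rels n) (Xg i)) =
                conjg (Kgrp n) (pgen (K_rels n) (Xg j)) (pgen (K_rels n) Zg [^]\<^bsub>Kgrp n\<^esub> (int j - int i - ey U))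
                \<otimes>\<^bsub>Kgrp n\<^esub> iota n U))"
    (is "?P x")
proof (rule fvb_induct[OF x, where P="?P"])
  interpret F: group "F2n n" by (rule group_pres)
  interpret K: group "Kgrp n" by (rule group_pres)
  have h1: "h \<one>\<^bsub>FVB n\<^esub> = (\<lambda>x\<in>carrier (F2n n). x)" by (rule rep_one[OF group_pres is_rep_hom[OF r]])
  have h41: "h4 \<one>\<^bsub>FVB n\<^esub> = (\<lambda>x\<in>carrier (Kgrp n). x)" by (rule rep_one[OF group_pres is_rep_hom[OF r4]])
  show "?P \<one>\<^bsub>FVB n\<^esub>"
  proof (intro conjI allI impI)
    fix j assume j: "1 \<le> j \<and> j \<le> n"
    show "\<exists>j'. 1 \<le> j' \<and> j' \<le> n \<and> h \<one>\<^bsub>FVB n\<^esub> (pgen {} (Yg j)) = pgen {} (Yg j') \<and>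
              h4 \<one>\<^bsub>FVB n\<^esub> (pgen (K_rels n) (Yg j)) = pgen (K_rels n) (Yg j')"
      using j by (auto simp: h1 h41 pgen_carrier)
  next
    show "h4 \<one>\<^bsub>FVB n\<^esub> (pgen (K_rels n) Zg) = pgen (K_rels n) Zg" by (simp add: h41 pgen_carrier)
  next
    fix i assume i: "1 \<le> i \<and> i \<le> n"
    show "\<exists>j U. 1 \<le> j \<and> j \<le> n \<and> U \<in> Ysub n \<and>
              h \<one>\<^bsub>FVB n\<^esub> (pgen {} (Xg i)) = pgen {} (Xg j) \<otimes>\<^bsub>F2n n\<^esub> U \<and>
              h4 \<one>\<^bsub>FVB n\<^esub> (pgen (K_rels n) (Xg i)) =
                conjg (Kgrp n) (pgen (K_rels n) (Xg j)) (pgen (K_rels n) Zg [^]\<^bsub>Kgrp n\<^esub> (int j - int i - ey U))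
                \<otimes>\<^bsub>Kgrp n\<^esub> iota n U"
      by (rule exI[of _ i], rule exI[of _ "\<one>\<^bsub>F2n n\<^esub>"])
         (use i in \<open>simp add: h1 h41 pgen_carrier Ysub_one ey_def wt_one conjg_def iota_def pmap_one[OF iota_good]\<close>)
  qed
next
  fix g y assume g: "g \<in> fvb_gens n" and y: "y \<in> carrier (FVB n)" and IH: "?P y"
  interpret F: group "F2n n" by (rule group_pres)
  interpret K: group "Kgrp n" by (rule group_pres)
  let ?G = "pgen (fvb_rels n) g"
  have ap: "\<And>t. t \<in> carrier (F2n n) \<Longrightarrow> h (?G \<otimes>\<^bsub>FVB n\<^esub> y) t = h y (h ?G t)"
    by (rule rep_apply_mult[OF is_rep_hom[OF r] g y])
  have ap4: "\<And>t. t \<in> carrier (Kgrp n) \<Longrightarrow> h4 (?G \<otimes>\<^bsub>FVB n\<^esub> y) t = h4 y (h4 ?G t)"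
    by (rule rep_apply_mult[OF is_rep_hom[OF r4] g y])
  have zc: "pgen (K_rels n) Zg \<in> carrier (Kgrp n)" by (simp add: pgen_carrier)
  have zg: "h4 ?G (pgen (K_rels n) Zg) = pgen (K_rels n) Zg"
    using g by (auto elim!: fvb_gens_cases simp: rep_S[OF r4] rep_R[OF r4] theta4_sig_def theta3_sig_def
        theta4_rho_def swap_xy_def Let_def)
  have zy: "h4 y (pgen (K_rels n) Zg) = pgen (K_rels n) Zg" using IH by blast
  have Yy: "\<And>j. 1 \<le> j \<Longrightarrow> j \<le> n \<Longrightarrow> \<exists>j'. 1 \<le> j' \<and> j' \<le> n \<and> h y (pgen {} (Yg j)) = pgen {} (Yg j') \<and>
              h4 y (pgen (K_rels n) (Yg j)) = pgen (K_rels n) (Yg j')" using IH by blast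
  show "?P (?G \<otimes>\<^bsub>FVB n\<^esub> y)"
  proof (intro conjI allI impI)
    fix j assume j: "1 \<le> j \<and> j \<le> n"
    obtain j1 where j1: "1 \<le> j1" "j1 \<le> n" "h ?G (pgen {} (Yg j)) = pgen {} (Yg j1)"
      "h4 ?G (pgen (K_rels n) (Yg j)) = pgen (K_rels n) (Yg j1)" using GY[OF g] j by blast
    obtain j' where j': "1 \<le> j'" "j' \<le> n" "h y (pgen {} (Yg j1)) = pgen {} (Yg j')"
      "h4 y (pgen (K_rels n) (Yg j1)) = pgen (K_rels n) (Yg j')" using Yy[OF j1(1,2)] by blast
    show "\<exists>j'. 1 \<le> j' \<and> j' \<le> n \<and> h (?G \<otimes>\<^bsub>FVB n\<^esub> y) (pgen {} (Yg j)) = pgen {} (Yg j') \<and>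
              h4 (?G \<otimes>\<^bsub>FVB n\<^esub> y) (pgen (K_rels n) (Yg j)) = pgen (K_rels n) (Yg j')"
      using j j1 j' by (auto simp: ap ap4 pgen_carrier)
  next
    show "h4 (?G \<otimes>\<^bsub>FVB n\<^esub> y) (pgen (K_rels n) Zg) = pgen (K_rels n) Zg"
      by (simp add: ap4 zc zg zy)
  next
    fix i assume i: "1 \<le> i \<and> i \<le> n"
    obtain j1 V where V: "1 \<le> j1" "j1 \<le> n" "V \<in> Ysub n"
      "h ?G (pgen {} (Xg i)) = pgen {} (Xg j1) \<otimes>\<^bsub>F2n n\<^esub> V"
      "h4 ?G (pgen (K_rels n) (Xg i)) =
         conjg (Kgrp n) (pgen (K_rels n) (Xg j1)) (pgen (K_rels n) Zg [^]\<^bsub>Kgrp n\<^esub> (int j1 - int i - ey V))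
         \<otimes>\<^bsub>Kgrp n\<^esub> iota n V"
      using GX[OF g] i by blast
    obtain j' U where U: "1 \<le> j'" "j' \<le> n" "U \<in> Ysub n"
      "h y (pgen {} (Xg j1)) = pgen {} (Xg j') \<otimes>\<^bsub>F2n n\<^esub> U"
      "h4 y (pgen (K_rels n) (Xg j1)) =
         conjg (Kgrp n) (pgen (K_rels n) (Xg j')) (pgen (K_rels n) Zg [^]\<^bsub>Kgrp n\<^esub> (int j' - int j1 - ey U))
         \<otimes>\<^bsub>Kgrp n\<^esub> iota n U"
      using IH V(1,2) by blast
    have M: "h y V \<in> Ysub n \<and> h4 y (iota n V) = iota n (h y V) \<and> ey (h y V) = ey V"
      by (rule Ysub_map[OF rep_x_hom[OF r y] rep_x_hom[OF r4 y] Yy V(3)])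
    have Vc: "V \<in> carrier (F2n n)" "U \<in> carrier (F2n n)" "h y V \<in> carrier (F2n n)"
      using V(3) U(3) M Ysub_carrier by auto
    have iVc: "iota n V \<in> carrier (Kgrp n)" "iota n U \<in> carrier (Kgrp n)" "iota n (h y V) \<in> carrier (Kgrp n)"
      using Vc pmap_closed[OF iota_good] by (auto simp: iota_def)
    have xc: "pgen {} (Xg j1) \<in> carrier (F2n n)" "pgen {} (Xg j') \<in> carrier (F2n n)"
      "pgen (K_rels n) (Xg j1) \<in> carrier (Kgrp n)" "pgen (K_rels n) (Xg j') \<in> carrier (Kgrp n)"
      using V U by (auto simp: pgen_carrier)
    let ?U' = "U \<otimes>\<^bsub>F2n n\<^esub> h y V"
    have U'Y: "?U' \<in> Ysub n" using U(3) M by (simp add: Ysub_mult)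
    have eU': "ey ?U' = ey U + ey V" using Vc M by (simp add: ey_def wt_mult)
    have iU': "iota n ?U' = iota n U \<otimes>\<^bsub>Kgrp n\<^esub> iota n (h y V)"
      using Vc by (simp add: iota_def pmap_mult[OF iota_good])
    have hx: "h (?G \<otimes>\<^bsub>FVB n\<^esub> y) (pgen {} (Xg i)) = pgen {} (Xg j') \<otimes>\<^bsub>F2n n\<^esub> ?U'"
      using i V U Vc xc by (simp add: ap pgen_carrier rep_x_mult[OF r y] F.m_assoc)
    have "h4 (?G \<otimes>\<^bsub>FVB n\<^esub> y) (pgen (K_rels n) (Xg i)) =
       conjg (Kgrp n) (h4 y (pgen (K_rels n) (Xg j1))) (pgen (K_rels n) Zg [^]\<^bsub>Kgrp n\<^esub> (int j1 - int i - ey V))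
         \<otimes>\<^bsub>Kgrp n\<^esub> iota n (h y V)"
      using i V xc zc iVc M zy
      by (simp add: ap4 pgen_carrier conjg_def rep_x_mult[OF r4 y] rep_x_inv[OF r4 y] rep_x_pow[OF r4 y])
    also have "\<dots> = conjg (Kgrp n) (pgen (K_rels n) (Xg j')) (pgen (K_rels n) Zg [^]\<^bsub>Kgrp n\<^esub>
                 ((int j' - int j1 - ey U) + (int j1 - int i - ey V))) \<otimes>\<^bsub>Kgrp n\<^esub> (iota n U \<otimes>\<^bsub>Kgrp n\<^esub> iota n (h y V))"
      unfolding U(5)
      by (rule K.conj_step[OF xc(4) iVc(2) iVc(3) zc iota_comm_pow[OF U(3)]])
    also have "\<dots> = conjg (Kgrp n) (pgen (K_rels n) (Xg j')) (pgen (K_rels n) Zg [^]\<^bsub>Kgrp n\<^esub>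
                 (int j' - int i - ey ?U')) \<otimes>\<^bsub>Kgrp n\<^esub> iota n ?U'"
      by (simp add: eU' iU' algebra_simps)
    finally show "\<exists>j U. 1 \<le> j \<and> j \<le> n \<and> U \<in> Ysub n \<and>
              h (?G \<otimes>\<^bsub>FVB n\<^esub> y) (pgen {} (Xg i)) = pgen {} (Xg j) \<otimes>\<^bsub>F2n n\<^esub> U \<and>
              h4 (?G \<otimes>\<^bsub>FVB n\<^esub> y) (pgen (K_rels n) (Xg i)) =
                conjg (Kgrp n) (pgen (K_rels n) (Xg j)) (pgen (K_rels n) Zg [^]\<^bsub>Kgrp n\<^esub> (int j - int i - ey U))
                \<otimes>\<^bsub>Kgrp n\<^esub> iota n U"
      using hx U(1,2) U'Y by blast
  qed
qed

end


lemma theta4_kernel: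
  assumes r4: "is_rep n (gens2n1 n) (K_rels n) (theta4_sig n) (theta4_rho n) h4"
    and r: "is_rep n (gens2n n) {} (theta_sig n) (theta_rho n) h"
  shows "kernel (FVB n) (AutR (Kgrp n)) h4 = kernel (FVB n) (AutR (F2n n)) h"
proof
  show "kernel (FVB n) (AutR (Kgrp n)) h4 \<subseteq> kernel (FVB n) (AutR (F2n n)) h"
  proof (rule kernel_sub[OF is_rep_hom[OF r] is_rep_hom[OF r4] pmap_hom[OF q3_good]])
    fix g a assume g: "g \<in> fvb_gens n" and a: "a \<in> gens2n1 n"
    show "pmap (gens2n1 n) (K_rels n) (gens2n n) {} (\<lambda>a. if a = Zg then \<one>\<^bsub>F2n n\<^esub> else pgen {} a)
            (h4 (pgen (fvb_rels n) g) (pgen (K_rels n) a)) =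
          h (pgen (fvb_rels n) g) (pmap (gens2n1 n) (K_rels n) (gens2n n) {} (\<lambda>a. if a = Zg then \<one>\<^bsub>F2n n\<^esub> else pgen {} a) (pgen (K_rels n) a))"
      using g a
      by (auto elim!: fvb_gens_cases gens2n1_cases
          simp: rep_S[OF r] rep_R[OF r] rep_mult[OF r] rep_inv[OF r] rep_one'[OF r]
           rep_S[OF r4] rep_R[OF r4] rep_mult[OF r4] rep_inv[OF r4] rep_one'[OF r4]
           pmap_simps[OF q3_good] pgen_carrier pg_closed gsimps2 conjg_def
           theta_sig_def theta_rho_def theta4_sig_def theta3_sig_def theta4_rho_def swap_xy_def Let_def)
  next
    fix x a
    assume x: "x \<in> carrier (FVB n)"
      and h: "\<And>a. a \<in> gens2n1 n \<Longrightarrow> h x (pmap (gens2n1 n) (K_rels n) (gens2n n) {} (\<lambda>a. if a = Zg then \<one>\<^bsub>F2n n\<^esub> else pgen {} a) (pgen (K_rels n) a)) =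
        pmap (gens2n1 n) (K_rels n) (gens2n n) {} (\<lambda>a. if a = Zg then \<one>\<^bsub>F2n n\<^esub> else pgen {} a) (pgen (K_rels n) a)"
      and a: "a \<in> gens2n n"
    show "h x (pgen {} a) = pgen {} a"
      using h[of a] a by (auto elim!: gens2n_cases simp: pmap_gen[OF q3_good])
  qed
next
  show "kernel (FVB n) (AutR (F2n n)) h \<subseteq> kernel (FVB n) (AutR (Kgrp n)) h4"
  proof
    fix x assume xk: "x \<in> kernel (FVB n) (AutR (F2n n)) h"
    then have x: "x \<in> carrier (FVB n)" by (simp add: kernel_def)
    have fx: "\<And>a. a \<in> gens2n n \<Longrightarrow> h x (pgen {} a) = pgen {} a"
      using kernel_iff[OF is_rep_hom[OF r] x] xk by blast
    note I = theta4_invariant[OF r r4 x]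
    have IY: "\<And>j. 1 \<le> j \<Longrightarrow> j \<le> n \<Longrightarrow> (\<exists>j'. 1 \<le> j' \<and> j' \<le> n \<and> h x (pgen {} (Yg j)) = pgen {} (Yg j') \<and>
              h4 x (pgen (K_rels n) (Yg j)) = pgen (K_rels n) (Yg j'))"
      using conjunct1[OF I] by blast
    have IZ: "h4 x (pgen (K_rels n) Zg) = pgen (K_rels n) Zg" by (rule conjunct1[OF conjunct2[OF I]])
    have IX: "\<And>i. 1 \<le> i \<Longrightarrow> i \<le> n \<Longrightarrow> (\<exists>j U. 1 \<le> j \<and> j \<le> n \<and> U \<in> Ysub n \<and>
              h x (pgen {} (Xg i)) = pgen {} (Xg j) \<otimes>\<^bsub>F2n n\<^esub> U \<and>
              h4 x (pgen (K_rels n) (Xg i)) =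
                conjg (Kgrp n) (pgen (K_rels n) (Xg j)) (pgen (K_rels n) Zg [^]\<^bsub>Kgrp n\<^esub> (int j - int i - ey U))
                \<otimes>\<^bsub>Kgrp n\<^esub> iota n U)"
      using conjunct2[OF conjunct2[OF I]] by blast
    interpret F: group "F2n n" by (rule group_pres)
    have "\<forall>a\<in>gens2n1 n. h4 x (pgen (K_rels n) a) = pgen (K_rels n) a"
    proof
      fix a assume a: "a \<in> gens2n1 n"
      then show "h4 x (pgen (K_rels n) a) = pgen (K_rels n) a"
      proof (cases rule: gens2n1_cases[consumes 1])
        case (1 i)
        obtain j U where U: "1 \<le> j" "j \<le> n" "U \<in> Ysub n"
          "h x (pgen {} (Xg i)) = pgen {} (Xg j) \<otimes>\<^bsub>F2n n\<^esub> U"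
          "h4 x (pgen (K_rels n) (Xg i)) =
             conjg (Kgrp n) (pgen (K_rels n) (Xg j)) (pgen (K_rels n) Zg [^]\<^bsub>Kgrp n\<^esub> (int j - int i - ey U))
             \<otimes>\<^bsub>Kgrp n\<^esub> iota n U"
          using IX[OF 1(2,3)] by blast
        have Uc: "U \<in> carrier (F2n n)" using U(3) Ysub_carrier by auto
        have e: "pgen {} (Xg i) = pgen {} (Xg j) \<otimes>\<^bsub>F2n n\<^esub> U" using U(4) fx[of "Xg i"] 1 by simp
        have "wt (\<lambda>a. if a = Xg i then 1 else 0) (pgen {} (Xg i)) =
              wt (\<lambda>a. if a = Xg i then 1 else 0) (pgen {} (Xg j) \<otimes>\<^bsub>F2n n\<^esub> U)" using e by simp
        then have ji: "j = i" using Uc U(1,2) Ysub_cnt[OF U(3), of i]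
          by (simp add: wt_mult wt_gen pgen_carrier split: if_splits)
        have U1: "U = \<one>\<^bsub>F2n n\<^esub>" using e ji Uc 1 by (simp add: pgen_carrier)
        have xc: "pgen (K_rels n) (Xg i) \<in> carrier (Kgrp n)" using 1 by (simp add: pgen_carrier)
        have io: "iota n \<one>\<^bsub>F2n n\<^esub> = \<one>\<^bsub>Kgrp n\<^esub>" by (simp add: iota_def pmap_one[OF iota_good])
        have ey0: "ey \<one>\<^bsub>F2n n\<^esub> = 0" by (simp add: ey_def wt_one)
        have s1: "h4 x (pgen (K_rels n) (Xg i)) = conjg (Kgrp n) (pgen (K_rels n) (Xg i)) (pgen (K_rels n) Zg [^]\<^bsub>Kgrp n\<^esub> (0::int))
             \<otimes>\<^bsub>Kgrp n\<^esub> \<one>\<^bsub>Kgrp n\<^esub>" using U(5) by (simp only: ji U1 io ey0 diff_self diff_zero)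
        have s2: "conjg (Kgrp n) (pgen (K_rels n) (Xg i)) (pgen (K_rels n) Zg [^]\<^bsub>Kgrp n\<^esub> (0::int))
             \<otimes>\<^bsub>Kgrp n\<^esub> \<one>\<^bsub>Kgrp n\<^esub> = pgen (K_rels n) (Xg i)"
          unfolding conjg_def int_pow_0
          using monoid.l_one[OF group.is_monoid[OF group_pres[of "gens2n1 n" "K_rels n"]]]
              monoid.r_one[OF group.is_monoid[OF group_pres[of "gens2n1 n" "K_rels n"]]]
              monoid.inv_one[OF group.is_monoid[OF group_pres[of "gens2n1 n" "K_rels n"]]]
              monoid.one_closed[OF group.is_monoid[OF group_pres[of "gens2n1 n" "K_rels n"]]] xc
          by metis
        have s3: "h4 x (pgen (K_rels n) (Xg i)) = pgen (K_rels n) (Xg i)" using s1 s2 by (simp only:)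
        show ?thesis using s3 1(1) by (simp only:)
      next
        case (2 j)
        obtain j' where j': "1 \<le> j'" "j' \<le> n" "h x (pgen {} (Yg j)) = pgen {} (Yg j')"
          "h4 x (pgen (K_rels n) (Yg j)) = pgen (K_rels n) (Yg j')" using IY[OF 2(2,3)] by blast
        have fy: "h x (pgen {} (Yg j)) = pgen {} (Yg j)" using fx[of "Yg j"] 2 by simp
        have e: "pgen {} (Yg j') = pgen {} (Yg j)" using j'(3)[symmetric] fy by (rule HOL.trans)
        have "wt (\<lambda>a. if a = Yg j then 1 else 0) (pgen {} (Yg j')) = wt (\<lambda>a. if a = Yg j then 1 else 0) (pgen {} (Yg j))"
          by (rule arg_cong[OF e])
        then have jj: "j' = j" by (simp add: wt_gen split: if_splits)
        have "h4 x (pgen (K_rels n) (Yg j)) = pgen (K_rels n) (Yg j)" using j'(4) unfolding jj .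
        then show ?thesis unfolding 2(1) .
      next
        case 3
        show ?thesis unfolding 3 by (rule IZ)
      qed
    qed
    then show "x \<in> kernel (FVB n) (AutR (Kgrp n)) h4"
      using kernel_iff[OF is_rep_hom[OF r4] x] by blast
  qed
qed


section \<open>Free reduction\<close>

definition canc :: "('a \<times> bool) \<Rightarrow> ('a \<times> bool) \<Rightarrow> bool" where
  "canc x y \<longleftrightarrow> fst x = fst y \<and> snd x \<noteq> snd y"

fun push :: "('a \<times> bool) \<Rightarrow> 'a word \<Rightarrow> 'a word" where
  "push x [] = [x]"
| "push x (y # w) = (if canc x y then w else x # y # w)"

definition red :: "'a word \<Rightarrow> 'a word" where
  "red w = foldr push w []"

fun reduced :: "'a word \<Rightarrow> bool" where
  "reduced [] = True"
| "reduced [x] = True"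
| "reduced (x # y # w) = (\<not> canc x y \<and> reduced (y # w))"

lemma reduced_tl: "reduced (x # w) \<Longrightarrow> reduced w"
  by (cases w) auto

lemma reduced_push: "reduced w \<Longrightarrow> reduced (push x w)"
proof (cases w)
  case Nil then show ?thesis by simp
next
  case (Cons y w')
  assume r: "reduced w"
  then show ?thesis using Cons by (auto intro: reduced_tl)
qed

lemma red_Nil[simp]: "red [] = []" by (simp add: red_def)
lemma red_Cons: "red (x # w) = push x (red w)" by (simp add: red_def)
lemma red_append: "red (u @ v) = foldr push u (red v)" by (simp add: red_def)

lemma reduced_red: "reduced (red w)"
  by (induction w) (auto simp: red_Cons reduced_push)

lemma red_reduced: "reduced w \<Longrightarrow> red w = w"
proof (induction w)
  case Nil then show ?case by simp
next
  case (Cons x w)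
  have "red w = w" using Cons reduced_tl by blast
  then show ?case using Cons.prems by (cases w) (auto simp: red_Cons)
qed

lemma canc_flip: "canc (a, b) (a, \<not> b)" by (simp add: canc_def)

lemma push_push: "reduced r \<Longrightarrow> push (a, b) (push (a, \<not> b) r) = r"
proof (cases r)
  case Nil then show ?thesis by (simp add: canc_def)
next
  case (Cons y r')
  assume rr: "reduced r"
  show ?thesis
  proof (cases "canc (a, \<not> b) y")
    case True
    then have y: "y = (a, b)" by (cases y) (auto simp: canc_def)
    show ?thesis
    proof (cases r')
      case Nil then show ?thesis using Cons True y by (simp add: canc_def)
    next
      case (Cons y' r'')
      have "\<not> canc (a, b) y'" using rr \<open>r = y # r'\<close> Cons y by simp
      then show ?thesis using \<open>r = y # r'\<close> True Cons y by simp
    qed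
  next
    case False
    have "push (a, \<not> b) r = (a, \<not> b) # r" using Cons False by simp
    then show ?thesis by (simp add: canc_flip)
  qed
qed

lemma pres_rel_red: "pres_rel {} u v \<Longrightarrow> red u = red v"
proof (induction rule: pres_rel.induct)
  case (cancel u a b v)
  have "red (u @ [(a, b), (a, \<not> b)] @ v) = foldr push u (push (a, b) (push (a, \<not> b) (red v)))"
    by (simp add: red_append red_Cons)
  also have "\<dots> = foldr push u (red v)" by (simp add: push_push reduced_red)
  also have "\<dots> = red (u @ v)" by (simp add: red_append)
  finally show ?case .
qed auto

lemma pres_rel_push: "pres_rel {} (x # r) (push x r)"
proof (cases r)
  case Nil then show ?thesis by (simp add: pres_rel.refl)
next
  case (Cons y r')
  show ?thesis
  proof (cases "canc x y")
    case True
    then have y: "y = (fst x, \<not> snd x)" by (cases x, cases y) (auto simp: canc_def)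
    have "pres_rel {} ([] @ [(fst x, snd x), (fst x, \<not> snd x)] @ r') ([] @ r')" by (rule pres_rel.cancel)
    then show ?thesis using Cons True y by simp
  next
    case False then show ?thesis using Cons by (simp add: pres_rel.refl)
  qed
qed

lemma pres_rel_to_red: "pres_rel {} w (red w)"
proof (induction w)
  case Nil then show ?case by (simp add: pres_rel.refl)
next
  case (Cons x w)
  have "pres_rel {} ([x] @ w @ []) ([x] @ red w @ [])" by (rule pres_rel_ctxt[OF Cons])
  then have "pres_rel {} (x # w) (x # red w)" by simp
  then show ?case using pres_rel_push[of x "red w"] by (auto simp: red_Cons intro: pres_rel.trans)
qed

lemma set_push: "set (push x r) \<subseteq> insert x (set r)"
  by (cases r) auto

lemma set_red: "set (red w) \<subseteq> set w"
  by (induction w) (use set_push in \<open>fastforce simp: red_Cons\<close>)+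

lemma class_one_red: "pres_class {} w = pres_class {} [] \<Longrightarrow> red w = []"
  using pres_rel_red[of w "[]"] by (simp add: pres_class_eq)

lemma reduced_rep:
  assumes "k \<ge> 1"
  shows "reduced (replicate k c @ r) \<longleftrightarrow> reduced r \<and> (r \<noteq> [] \<longrightarrow> \<not> canc c (hd r))"
  using assms
proof (induction k)
  case 0 then show ?case by simp
next
  case (Suc k)
  show ?case
  proof (cases k)
    case 0 then show ?thesis by (cases r) auto
  next
    case (Suc k')
    have "\<not> canc c c" by (simp add: canc_def)
    then show ?thesis using Suc.IH Suc by simp
  qed
qed


definition isY :: "fgen \<Rightarrow> bool" where "isY a = (case a of Yg _ \<Rightarrow> True | _ \<Rightarrow> False)"
definition kk :: "int \<Rightarrow> fgen \<Rightarrow> nat" where "kk m a = (if isY a then nat \<bar>m\<bar> else 1)"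
definition ff :: "int \<Rightarrow> fgen \<times> bool \<Rightarrow> fgen \<times> bool" where
  "ff m x = (fst x, if isY (fst x) \<and> m < 0 then \<not> snd x else snd x)"
definition sl :: "int \<Rightarrow> fgen \<times> bool \<Rightarrow> fgen word" where "sl m x = replicate (kk m (fst x)) (ff m x)"
definition subst :: "int \<Rightarrow> fgen word \<Rightarrow> fgen word" where "subst m w = concat (map (sl m) w)"

lemma subst_Nil[simp]: "subst m [] = []" by (simp add: subst_def)
lemma subst_Cons: "subst m (x # w) = sl m x @ subst m w" by (simp add: subst_def)

lemma kk_pos: "m \<noteq> 0 \<Longrightarrow> kk m a \<ge> 1" by (simp add: kk_def Suc_le_eq)

lemma canc_ff: "canc (ff m x) (ff m y) \<longleftrightarrow> canc x y"
  by (cases x, cases y) (auto simp: canc_def ff_def)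

lemma subst_hd: "m \<noteq> 0 \<Longrightarrow> w \<noteq> [] \<Longrightarrow> subst m w \<noteq> [] \<and> hd (subst m w) = ff m (hd w)"
proof -
  assume m: "m \<noteq> 0" and w: "w \<noteq> []"
  then obtain x w' where "w = x # w'" by (cases w) auto
  moreover obtain k where "kk m (fst x) = Suc k" using kk_pos[OF m, of "fst x"] by (cases "kk m (fst x)") auto
  ultimately show ?thesis by (simp add: subst_Cons sl_def)
qed

lemma subst_reduced: "m \<noteq> 0 \<Longrightarrow> reduced w \<Longrightarrow> reduced (subst m w)"
proof (induction w)
  case Nil then show ?case by simp
next
  case (Cons x w)
  have rw: "reduced (subst m w)" using Cons reduced_tl by blast
  have "subst m w \<noteq> [] \<longrightarrow> \<not> canc (ff m x) (hd (subst m w))"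
  proof
    assume "subst m w \<noteq> []"
    then have "w \<noteq> []" by auto
    then obtain y w' where w: "w = y # w'" by (cases w) auto
    have "\<not> canc x y" using Cons.prems(2) w by simp
    then show "\<not> canc (ff m x) (hd (subst m w))" using subst_hd[OF Cons.prems(1)] w by (simp add: canc_ff)
  qed
  then show ?case unfolding subst_Cons sl_def
    by (subst reduced_rep[OF kk_pos[OF Cons.prems(1)]]) (use rw in blast)
qed

lemma subst_set: "set w \<subseteq> S \<times> UNIV \<Longrightarrow> set (subst m w) \<subseteq> S \<times> UNIV"
  by (induction w) (auto simp: subst_Cons sl_def ff_def)

definition phim :: "nat \<Rightarrow> int \<Rightarrow> fgen \<Rightarrow> fgen word set" where
  "phim n m a = (case a of Yg j \<Rightarrow> pgen {} (Yg j) [^]\<^bsub>F2n n\<^esub> m | _ \<Rightarrow> pgen {} a)"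

definition psi :: "nat \<Rightarrow> int \<Rightarrow> fgen word set \<Rightarrow> fgen word set" where
  "psi n m = pmap (gens2n n) {} (gens2n n) {} (phim n m)"

lemma psi_good: "good2 (gens2n n) {} (gens2n n) {} (phim n m)"
  by (rule good2_free) (auto elim!: gens2n_cases simp: phim_def pgen_carrier pg_closed)

lemma class_rep: "a \<in> gens2n n \<Longrightarrow> pres_class {} (replicate k (a, True)) = pgen {} a [^]\<^bsub>F2n n\<^esub> k"
proof (induction k)
  case 0 then show ?case by (simp add: pg_one)
next
  case (Suc k)
  have "pres_class {} (replicate (Suc k) (a, True)) = pgen {} a \<otimes>\<^bsub>F2n n\<^esub> pres_class {} (replicate k (a, True))"
    by (simp add: class_Cons_True)
  also have "\<dots> = pgen {} a \<otimes>\<^bsub>F2n n\<^esub> pgen {} a [^]\<^bsub>F2n n\<^esub> k" using Suc by simp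
  also have "\<dots> = pgen {} a [^]\<^bsub>F2n n\<^esub> Suc k"
    using monoid.nat_pow_Suc2[OF group.is_monoid[OF group_pres] pgen_carrier[OF Suc.prems]] by simp
  finally show ?case .
qed

lemma inv_word_rep: "inv_word (replicate k (a, c)) = replicate k (a, \<not> c)"
  by (simp add: inv_word_def)

lemma rep_set: "a \<in> S \<Longrightarrow> set (replicate k (a, c)) \<subseteq> S \<times> UNIV" by auto

lemma sl_class:
  assumes a: "a \<in> gens2n n"
  shows "pres_class {} (sl m (a, True)) = phim n m a"
    "sl m (a, False) = inv_word (sl m (a, True))"
proof -
  show "sl m (a, False) = inv_word (sl m (a, True))" by (simp add: sl_def ff_def inv_word_rep)
  show "pres_class {} (sl m (a, True)) = phim n m a"
  proof (cases "isY a")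
    case False
    then have "sl m (a, True) = [(a, True)]" by (simp add: sl_def kk_def ff_def)
    moreover have "phim n m a = pgen {} a" using False by (cases a) (auto simp: phim_def isY_def)
    ultimately show ?thesis by (simp add: pgen_def)
  next
    case True
    then obtain j where j: "a = Yg j" by (cases a) (auto simp: isY_def)
    show ?thesis
    proof (cases "m < 0")
      case True
      have "sl m (a, True) = inv_word (replicate (nat (- m)) (a, True))"
        using True \<open>isY a\<close> by (simp add: sl_def kk_def ff_def inv_word_rep)
      moreover have "pres_class {} (inv_word (replicate (nat (- m)) (a, True))) =
          inv\<^bsub>F2n n\<^esub> (pres_class {} (replicate (nat (- m)) (a, True)))"
        by (rule pg_inv[OF rep_set[OF a], symmetric])
      ultimately have "pres_class {} (sl m (a, True)) = inv\<^bsub>F2n n\<^esub> (pgen {} a [^]\<^bsub>F2n n\<^esub> nat (- m))"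
        using class_rep[OF a] by simp
      also have "\<dots> = pgen {} a [^]\<^bsub>F2n n\<^esub> m"
        using int_pow_def2[of "F2n n" "pgen {} a" m] True by (simp only: True if_True)
      finally show ?thesis using j by (simp add: phim_def)
    next
      case False
      have "sl m (a, True) = replicate (nat m) (a, True)"
        using False \<open>isY a\<close> by (simp add: sl_def kk_def ff_def)
      then have "pres_class {} (sl m (a, True)) = pgen {} a [^]\<^bsub>F2n n\<^esub> nat m"
        using class_rep[OF a] by simp
      also have "\<dots> = pgen {} a [^]\<^bsub>F2n n\<^esub> m"
        using int_pow_def2[of "F2n n" "pgen {} a" m] False by (simp only: False if_False)
      finally show ?thesis using j by (simp add: phim_def)
    qed
  qed
qed

lemma psi_class: "set w \<subseteq> gens2n n \<times> UNIV \<Longrightarrow> psi n m (pres_class {} w) = pres_class {} (subst m w)"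
proof (induction w)
  case Nil
  have "pres_class {} [] = \<one>\<^bsub>F2n n\<^esub>" by (simp add: pg_one)
  then show ?case by (simp add: psi_def pmap_one[OF psi_good])
next
  case (Cons x w)
  obtain a b where x: "x = (a, b)" by (cases x)
  have a: "a \<in> gens2n n" using Cons.prems x by auto
  have w: "set w \<subseteq> gens2n n \<times> UNIV" using Cons.prems by auto
  have wc: "pres_class {} w \<in> carrier (F2n n)" using w by (rule class_in_carrier)
  have slc: "set (sl m (a, True)) \<subseteq> gens2n n \<times> UNIV" using a by (auto simp: sl_def ff_def)
  show ?case
  proof (cases b)
    case True
    have "psi n m (pres_class {} (x # w)) = phim n m a \<otimes>\<^bsub>F2n n\<^esub> pres_class {} (subst m w)"
      using True x a wc Cons.IH[OF w]
      by (simp add: class_Cons_True[where S="gens2n n"] psi_def pmap_mult[OF psi_good] pmap_gen[OF psi_good] pgen_carrier)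
    also have "\<dots> = pres_class {} (subst m (x # w))"
      using True x by (simp add: sl_class(1)[OF a, symmetric] pg_mult subst_Cons)
    finally show ?thesis .
  next
    case False
    have "psi n m (pres_class {} (x # w)) = inv\<^bsub>F2n n\<^esub> (phim n m a) \<otimes>\<^bsub>F2n n\<^esub> pres_class {} (subst m w)"
      using False x a wc Cons.IH[OF w]
      by (simp add: class_Cons_False[where S="gens2n n"] psi_def pmap_mult[OF psi_good] pmap_inv[OF psi_good]
          pmap_gen[OF psi_good] pgen_carrier pg_closed)
    also have "\<dots> = pres_class {} (subst m (x # w))"
    proof -
      have "inv\<^bsub>F2n n\<^esub> (phim n m a) = pres_class {} (inv_word (sl m (a, True)))"
        using pg_inv[OF slc, of "{}"] sl_class(1)[OF a] by simp
      then show ?thesis using False x by (simp add: sl_class(2)[OF a] pg_mult subst_Cons)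
    qed
    finally show ?thesis .
  qed
qed

lemma psi_trivial:
  assumes m: "m \<noteq> 0" and x: "x \<in> carrier (F2n n)" and p: "psi n m x = \<one>\<^bsub>F2n n\<^esub>"
  shows "x = \<one>\<^bsub>F2n n\<^esub>"
proof -
  obtain w where w: "x = pres_class {} w" "set w \<subseteq> gens2n n \<times> UNIV" using x by (auto simp: pg_carrier)
  let ?w = "red w"
  have xw: "x = pres_class {} ?w" using w pres_rel_to_red[of w] by (simp add: pres_class_eq)
  have sw: "set ?w \<subseteq> gens2n n \<times> UNIV" using w(2) set_red[of w] by auto
  have "pres_class {} (subst m ?w) = pres_class {} []" using p xw psi_class[OF sw] by (simp add: pg_one)
  then have "red (subst m ?w) = []" by (rule class_one_red)
  moreover have "reduced (subst m ?w)" by (rule subst_reduced[OF m reduced_red])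
  ultimately have "subst m ?w = []" using red_reduced by metis
  then have "?w = []" using subst_hd[OF m] by auto
  then show ?thesis using xw by (simp add: pg_one)
qed

lemma psi_inj:
  assumes m: "m \<noteq> 0" and x: "x \<in> carrier (F2n n)" and y: "y \<in> carrier (F2n n)" and e: "psi n m x = psi n m y"
  shows "x = y"
proof -
  interpret G: group "F2n n" by (rule group_pres)
  have h: "psi n m \<in> hom (F2n n) (F2n n)" unfolding psi_def by (rule pmap_hom[OF psi_good])
  have "psi n m (x \<otimes>\<^bsub>F2n n\<^esub> inv\<^bsub>F2n n\<^esub> y) = \<one>\<^bsub>F2n n\<^esub>"
    using x y e by (simp add: psi_def pmap_mult[OF psi_good] pmap_inv[OF psi_good] pmap_closed[OF psi_good])
  then have "x \<otimes>\<^bsub>F2n n\<^esub> inv\<^bsub>F2n n\<^esub> y = \<one>\<^bsub>F2n n\<^esub>" using psi_trivial[OF m] x y by simp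
  then have "inv\<^bsub>F2n n\<^esub> (inv\<^bsub>F2n n\<^esub> y) = x" by (rule G.inv_equality[OF _ G.inv_closed[OF y] x])
  then show ?thesis using y by simp
qed


lemma theta1_yperm:
  assumes r1: "is_rep n (gens2n n) {} (theta1_sig n m) (theta1_rho n m) h1"
    and x: "x \<in> carrier (FVB n)"
  shows "\<forall>j. 1 \<le> j \<and> j \<le> n \<longrightarrow> (\<exists>j'. 1 \<le> j' \<and> j' \<le> n \<and> h1 x (pgen {} (Yg j)) = pgen {} (Yg j'))"
proof (rule fvb_induct[OF x])
  show "\<forall>j. 1 \<le> j \<and> j \<le> n \<longrightarrow> (\<exists>j'. 1 \<le> j' \<and> j' \<le> n \<and> h1 \<one>\<^bsub>FVB n\<^esub> (pgen {} (Yg j)) = pgen {} (Yg j'))"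
    using rep_one[OF group_pres is_rep_hom[OF r1]] by (auto simp: pgen_carrier)
next
  fix g y assume g: "g \<in> fvb_gens n" and y: "y \<in> carrier (FVB n)"
    and IH: "\<forall>j. 1 \<le> j \<and> j \<le> n \<longrightarrow> (\<exists>j'. 1 \<le> j' \<and> j' \<le> n \<and> h1 y (pgen {} (Yg j)) = pgen {} (Yg j'))"
  show "\<forall>j. 1 \<le> j \<and> j \<le> n \<longrightarrow> (\<exists>j'. 1 \<le> j' \<and> j' \<le> n \<and>
          h1 (pgen (fvb_rels n) g \<otimes>\<^bsub>FVB n\<^esub> y) (pgen {} (Yg j)) = pgen {} (Yg j'))"
  proof (intro allI impI)
    fix j assume j: "1 \<le> j \<and> j \<le> n"
    have "\<exists>j1. 1 \<le> j1 \<and> j1 \<le> n \<and> h1 (pgen (fvb_rels n) g) (pgen {} (Yg j)) = pgen {} (Yg j1)"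
      using g
    proof (cases rule: fvb_gens_cases[consumes 1])
      case (1 i)
      then show ?thesis using j by (auto simp: rep_S[OF r1] theta1_sig_def Let_def)
    next
      case (2 i)
      show ?thesis
        by (rule exI[of _ "if j = i then i + 1 else if j = i + 1 then i else j"])
           (use 2 j in \<open>auto simp: rep_R[OF r1] theta1_rho_def swap_xy_def\<close>)
    qed
    then obtain j1 where j1: "1 \<le> j1" "j1 \<le> n" "h1 (pgen (fvb_rels n) g) (pgen {} (Yg j)) = pgen {} (Yg j1)" by blast
    obtain j' where j': "1 \<le> j'" "j' \<le> n" "h1 y (pgen {} (Yg j1)) = pgen {} (Yg j')" using IH j1 by blast
    show "\<exists>j'. 1 \<le> j' \<and> j' \<le> n \<and> h1 (pgen (fvb_rels n) g \<otimes>\<^bsub>FVB n\<^esub> y) (pgen {} (Yg j)) = pgen {} (Yg j')"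
      using rep_apply_mult[OF is_rep_hom[OF r1] g y, of "pgen {} (Yg j)"] j j1 j' by (auto simp: pgen_carrier)
  qed
qed

lemma theta1_kernel:
  assumes m: "m \<noteq> 0"
    and r1: "is_rep n (gens2n n) {} (theta1_sig n m) (theta1_rho n m) h1"
    and r: "is_rep n (gens2n n) {} (theta_sig n) (theta_rho n) h"
  shows "kernel (FVB n) (AutR (F2n n)) h1 = kernel (FVB n) (AutR (F2n n)) h"
proof -
  have gen: "\<And>g a. g \<in> fvb_gens n \<Longrightarrow> a \<in> gens2n n \<Longrightarrow>
     psi n m (h (pgen (fvb_rels n) g) (pgen {} a)) = h1 (pgen (fvb_rels n) g) (psi n m (pgen {} a))"
    unfolding psi_def
    by (auto elim!: fvb_gens_cases gens2n_cases
          simp: rep_S[OF r] rep_R[OF r] rep_mult[OF r] rep_inv[OF r] rep_one'[OF r]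
           rep_S[OF r1] rep_R[OF r1] rep_mult[OF r1] rep_inv[OF r1] rep_one'[OF r1] rep_pow[OF r1]
           pmap_simps[OF psi_good] pgen_carrier pg_closed gsimps phim_def
           theta_sig_def theta_rho_def theta1_sig_def theta1_rho_def swap_xy_def Let_def)
  have ps: "psi n m \<in> hom (F2n n) (F2n n)" unfolding psi_def by (rule pmap_hom[OF psi_good])
  show ?thesis
  proof
    show "kernel (FVB n) (AutR (F2n n)) h1 \<subseteq> kernel (FVB n) (AutR (F2n n)) h"
    proof
      fix x assume xk: "x \<in> kernel (FVB n) (AutR (F2n n)) h1"
      then have x: "x \<in> carrier (FVB n)" by (simp add: kernel_def)
      have h1x: "h1 x = (\<lambda>t\<in>carrier (F2n n). t)" using xk by (simp add: kernel_def AutR_one)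
      have "\<forall>a\<in>gens2n n. h x (pgen {} a) = pgen {} a"
      proof
        fix a assume a: "a \<in> gens2n n"
        have c: "pgen {} a \<in> carrier (F2n n)" "h x (pgen {} a) \<in> carrier (F2n n)"
          using a rep_x_closed[OF r x] by (auto simp: pgen_carrier)
        have "psi n m (h x (pgen {} a)) = h1 x (psi n m (pgen {} a))"
          using intertwine[OF is_rep_hom[OF r1] is_rep_hom[OF r] ps gen x] c(1) by blast
        also have "\<dots> = psi n m (pgen {} a)" using h1x c(1) ps by (simp add: hom_in_carrier)
        finally show "h x (pgen {} a) = pgen {} a" using psi_inj[OF m c(2) c(1)] by blast
      qed
      then show "x \<in> kernel (FVB n) (AutR (F2n n)) h" using kernel_iff[OF is_rep_hom[OF r] x] by blast
    qed
  next
    show "kernel (FVB n) (AutR (F2n n)) h \<subseteq> kernel (FVB n) (AutR (F2n n)) h1"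
    proof (rule kernel_sub[OF is_rep_hom[OF r1] is_rep_hom[OF r] ps gen])
      fix x a
      assume x: "x \<in> carrier (FVB n)"
        and hh: "\<And>a. a \<in> gens2n n \<Longrightarrow> h1 x (psi n m (pgen {} a)) = psi n m (pgen {} a)"
        and a: "a \<in> gens2n n"
      show "h1 x (pgen {} a) = pgen {} a"
        using a
      proof (cases rule: gens2n_cases[consumes 1])
        case (1 j)
        then show ?thesis using hh[of a] by (simp add: psi_def pmap_gen[OF psi_good] phim_def)
      next
        case (2 j)
        have yc: "pgen {} (Yg j) \<in> carrier (F2n n)" using 2 by (simp add: pgen_carrier)
        obtain j' where j': "1 \<le> j'" "j' \<le> n" "h1 x (pgen {} (Yg j)) = pgen {} (Yg j')"
          using theta1_yperm[OF r1 x] 2 by blast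
        have "h1 x (pgen {} (Yg j) [^]\<^bsub>F2n n\<^esub> m) = pgen {} (Yg j) [^]\<^bsub>F2n n\<^esub> m"
          using hh[of a] 2 by (simp add: psi_def pmap_gen[OF psi_good] phim_def)
        then have e: "pgen {} (Yg j') [^]\<^bsub>F2n n\<^esub> m = pgen {} (Yg j) [^]\<^bsub>F2n n\<^esub> m"
          using j' yc by (simp add: rep_x_pow[OF r1 x])
        have "wt (\<lambda>b. if b = Yg j then 1 else 0) (pgen {} (Yg j') [^]\<^bsub>F2n n\<^esub> m) =
              wt (\<lambda>b. if b = Yg j then 1 else 0) (pgen {} (Yg j) [^]\<^bsub>F2n n\<^esub> m)"
          by (rule arg_cong[OF e])
        then have "j' = j" using m j' 2 by (simp add: wt_pow wt_gen pgen_carrier split: if_splits)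
        then show ?thesis using j' 2 by simp
      qed
    qed
  qed
qed


theorem theorem6:
  fixes n :: nat
  shows
    \<comment> \<open>(1) existence of the representations\<close>
    "(\<forall>m::int. \<exists>h. is_rep n (gens2n n) {} (theta1_sig n m) (theta1_rho n m) h)
   \<and> (\<exists>h. is_rep n (gens2n1 n) {} (theta2_sig n) (theta2_rho n) h)
   \<and> (\<exists>h. is_rep n (gens2n1 n) (K_rels n) (theta3_sig n) (theta3_rho n) h)
   \<and> (\<exists>h. is_rep n (gens2n1 n) (K_rels n) (theta4_sig n) (theta4_rho n) h)
    \<comment> \<open>(2) equality of kernels\<close>
   \<and> (\<forall>m::int. \<forall>h1 h. m \<noteq> 0 \<longrightarrow>
        is_rep n (gens2n n) {} (theta1_sig n m) (theta1_rho n m) h1 \<longrightarrow>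
        is_rep n (gens2n n) {} (theta_sig n) (theta_rho n) h \<longrightarrow>
        kernel (FVB n) (AutR (F2n n)) h1 = kernel (FVB n) (AutR (F2n n)) h)
   \<and> (\<forall>h2 h. is_rep n (gens2n1 n) {} (theta2_sig n) (theta2_rho n) h2 \<longrightarrow>
        is_rep n (gens2n n) {} (theta_sig n) (theta_rho n) h \<longrightarrow>
        kernel (FVB n) (AutR (F2n1 n)) h2 = kernel (FVB n) (AutR (F2n n)) h)
   \<and> (\<forall>h3 h. is_rep n (gens2n1 n) (K_rels n) (theta3_sig n) (theta3_rho n) h3 \<longrightarrow>
        is_rep n (gens2n n) {} (theta_sig n) (theta_rho n) h \<longrightarrow>
        kernel (FVB n) (AutR (Kgrp n)) h3 = kernel (FVB n) (AutR (F2n n)) h)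
   \<and> (\<forall>h4 h. is_rep n (gens2n1 n) (K_rels n) (theta4_sig n) (theta4_rho n) h4 \<longrightarrow>
        is_rep n (gens2n n) {} (theta_sig n) (theta_rho n) h \<longrightarrow>
        kernel (FVB n) (AutR (Kgrp n)) h4 = kernel (FVB n) (AutR (F2n n)) h)"
  proof (intro conjI allI impI)
  fix m :: int
  show "\<exists>h. is_rep n (gens2n n) {} (theta1_sig n m) (theta1_rho n m) h" by (rule exists_theta1)
next
  show "\<exists>h. is_rep n (gens2n1 n) {} (theta2_sig n) (theta2_rho n) h" by (rule exists_theta2)
next
  show "\<exists>h. is_rep n (gens2n1 n) (K_rels n) (theta3_sig n) (theta3_rho n) h" by (rule exists_theta3)
next
  show "\<exists>h. is_rep n (gens2n1 n) (K_rels n) (theta4_sig n) (theta4_rho n) h" by (rule exists_theta4)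
next
  fix m :: int and h1 h
  assume "m \<noteq> 0" "is_rep n (gens2n n) {} (theta1_sig n m) (theta1_rho n m) h1"
    "is_rep n (gens2n n) {} (theta_sig n) (theta_rho n) h"
  then show "kernel (FVB n) (AutR (F2n n)) h1 = kernel (FVB n) (AutR (F2n n)) h" by (rule theta1_kernel)
next
  fix h2 h
  assume "is_rep n (gens2n1 n) {} (theta2_sig n) (theta2_rho n) h2"
    "is_rep n (gens2n n) {} (theta_sig n) (theta_rho n) h"
  then show "kernel (FVB n) (AutR (F2n1 n)) h2 = kernel (FVB n) (AutR (F2n n)) h" by (rule theta2_kernel)
next
  fix h3 h
  assume "is_rep n (gens2n1 n) (K_rels n) (theta3_sig n) (theta3_rho n) h3"
    "is_rep n (gens2n n) {} (theta_sig n) (theta_rho n) h"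
  then show "kernel (FVB n) (AutR (Kgrp n)) h3 = kernel (FVB n) (AutR (F2n n)) h" by (rule theta3_kernel)
next
  fix h4 h
  assume "is_rep n (gens2n1 n) (K_rels n) (theta4_sig n) (theta4_rho n) h4"
    "is_rep n (gens2n n) {} (theta_sig n) (theta_rho n) h"
  then show "kernel (FVB n) (AutR (Kgrp n)) h4 = kernel (FVB n) (AutR (F2n n)) h" by (rule theta4_kernel)
qed

end
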